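(* Consider any concurrent run of the Block-STM algorithm (described in the context) on a block of $n$ transactions. Assume that every thread keeps taking steps until it joins, and that $\mathtt{VM.execute}$ is wait-free (every invocation completes within finitely many steps of the invoking thread). Then all threads eventually join (return from $\mathtt{run}$).
   Context: Model: threads perform atomic operations that appear to take place in a single global order; locks protect per-transaction status and dependency sets. Problem. A block is a sequence of transactions $tx_0,\dots,tx_{n-1}$ ($n=\mathtt{BLOCK.size()}$), each a deterministic program reading and writing memory locations. Shared state. MVMemory: a map $\mathit{data}$ from $(\text{location},\text{txn index})$ to (incarnation number, value) or a marker ESTIMATE; arrays $\mathit{last\_written\_locations}[j]$, $\mathit{last\_read\_set}[j]$, accessed atomically. A version is $(j,i)$. Scheduler: atomic counters $\mathit{execution\_idx}=0$, $\mathit{validation\_idx}=0$, $\mathit{decrease\_cnt}=0$, $\mathit{num\_active\_tasks}=0$, flag $\mathit{done\_marker}=$false; lock-protected $\mathit{txn\_status}[j]=(\text{incarnation},\text{status})$, initially $(0,\mathtt{READY\_TO\_EXECUTE})$, status $\in\{\mathtt{READY\_TO\_EXECUTE},\mathtt{EXECUTING},\mathtt{EXECUTED},\mathtt{ABORTING}\}$; lock-protected dependency sets $\mathit{txn\_dependency}[j]$, initially empty. MVMemory operations. $\mathtt{read}(p,j)$: largest $k<j$ with an entry $(p,k)$; none: NOT_FOUND; ESTIMATE: READ_ERROR with blocking index $k$; else OK with version and value. $\mathtt{record}((j,i),R,W)$: write $\mathit{data}[(p,j)]:=(i,v)$ for $(p,v)\in W$, remove entries $(p,j)$ of previously written but not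 rewritten locations, update $\mathit{last\_written\_locations}[j]$ and $\mathit{last\_read\_set}[j]:=R$, return whether a new location was written. $\mathtt{convert\_writes\_to\_estimates}(j)$ sets all entries $(p,j)$, $p\in\mathit{last\_written\_locations}[j]$, to ESTIMATE. $\mathtt{validate\_read\_set}(j)$ returns true iff re-reading each recorded location with $\mathtt{read}(p,j)$ gives the same recorded version (NOT_FOUND for $\bot$) and no READ_ERROR. VM.execute($j$) runs $tx_j$ locally, reading own writes, else $\mathtt{read}(p,j)$ (NOT_FOUND: read initial storage, record $(p,\bot)$; OK: record version; READ_ERROR: stop, return blocking index); never writes shared memory. Scheduler. $\mathtt{decrease\_execution\_idx}(t)$/$\mathtt{decrease\_validation\_idx}(t)$: index $:=\min(\text{index},t)$, then increment $\mathit{decrease\_cnt}$. $\mathtt{try\_incarnate}(k)$: if $k<n$ and, under lock, $tx_k$'s status is $\mathtt{READY\_TO\_EXECUTE}$ (incarnation $i$), set $\mathtt{EXECUTING}$, return $(k,i)$; else decrement $\mathit{num\_active\_tasks}$, return none. $\mathtt{next\_task}$: if $\mathit{validation\_idx}<\mathit{execution\_idx}$: if $\mathit{validation\_idx}\ge n$ call check_done, return none; else increment $\mathit{num\_active\_tasks}$, fetch-and-increment $\mathit{validation\_idx}$ obtaining $k$; if $k<n$ and $tx_k$'s status is $\mathtt{EXECUTED}$ (incarnation $i$) return validation task $(k,i)$, else decrement $\mathit{num\_active\_tasks}$. Otherwise: if $\mathit{execution\_idx}\ge n$ call check_done, return none; else increment $\mathit{num\_active\_tasks}$, fetch-and-increment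 $\mathit{execution\_idx}$ obtaining $k$, return $\mathtt{try\_incarnate}(k)$. $\mathtt{check\_done}$: read $c:=\mathit{decrease\_cnt}$, then if $\min(\mathit{execution\_idx},\mathit{validation\_idx})\ge n$, then $\mathit{num\_active\_tasks}=0$, then $\mathit{decrease\_cnt}=c$, set $\mathit{done\_marker}:=$true. Execution task $(k,i)$: run VM.execute($k$). On READ_ERROR with blocking $b$: acquire lock of $\mathit{txn\_dependency}[b]$ and then (while holding it) the status lock of $tx_b$; if $tx_b$'s status is $\mathtt{EXECUTED}$ retry execution; else set $tx_k$'s status $\mathtt{ABORTING}$, add $k$ to $\mathit{txn\_dependency}[b]$, release, decrement $\mathit{num\_active\_tasks}$. Otherwise $w:=\mathtt{record}(\dots)$; set status $\mathtt{EXECUTED}$; swap out $\mathit{txn\_dependency}[k]$, set each dependent $d$ to $(\text{incarnation}+1,\mathtt{READY\_TO\_EXECUTE})$ and if any, $\mathtt{decrease\_execution\_idx}$(min dependent); if $\mathit{validation\_idx}>k$: if $w$, $\mathtt{decrease\_validation\_idx}(k)$, else return validation task $(k,i)$ keeping $\mathit{num\_active\_tasks}$; if no task returned, decrement $\mathit{num\_active\_tasks}$. Validation task $(k,i)$: if $\mathtt{validate\_read\_set}(k)$ fails and under lock $\mathit{txn\_status}[k]=(i,\mathtt{EXECUTED})$, set $\mathtt{ABORTING}$ (aborted). If aborted: convert writes of $k$ to ESTIMATE; $\mathit{txn\_status}[k]:=(i+1,\mathtt{READY\_TO\_EXECUTE})$; $\mathtt{decrease\_validation\_idx}(k+1)$;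 if $\mathit{execution\_idx}>k$ and $\mathtt{try\_incarnate}(k)$ returns a version, return that execution task keeping $\mathit{num\_active\_tasks}$. Otherwise decrement $\mathit{num\_active\_tasks}$. $\mathtt{run}$: while $\mathit{done\_marker}$ is false, perform the task in hand (an execution task may yield a validation task and vice versa) or obtain one via next_task. A thread joins when it returns from $\mathtt{run}$. *)

theory Defs
  imports Main
begin

text \<open>Transactions are deterministic programs, given as a step function on a local
  program state 's: each instruction is a read of a location (continuation depends on
  the value read), a write, or termination.\<close>

datatype ('l, 'v, 's) instr = IRead 'l "'v \<Rightarrow> 's" | IWrite 'l 'v 's | IDone

text \<open>Wait-freedom of VM.execute for a program state: every execution path, whatever
  values the reads return, reaches termination after finitely many instructions.\<close>

inductive wait_free :: "('s \<Rightarrow> ('l, 'v, 's) instr) \<Rightarrow> 's \<Rightarrow> bool" for vstep where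
  wf_done: "vstep s = IDone \<Longrightarrow> wait_free vstep s"
| wf_write: "vstep s = IWrite l v s' \<Longrightarrow> wait_free vstep s' \<Longrightarrow> wait_free vstep s"
| wf_read: "vstep s = IRead l f \<Longrightarrow> (\<forall>v. wait_free vstep (f v)) \<Longrightarrow> wait_free vstep s"

datatype st = READY_TO_EXECUTE | EXECUTING | EXECUTED | ABORTING

datatype 'v entry = EVal nat 'v | ESTIMATE

type_synonym version = "nat \<times> nat"
type_synonym 'l rset = "('l \<times> version option) list"

datatype 'v rres = NOT_FOUND | OK version 'v | READ_ERROR nat

datatype task = ExecTask nat nat | ValTask nat nat

record ('l, 'v) shared =
  data :: "'l \<Rightarrow> nat \<Rightarrow> 'v entry option"
  last_written :: "nat \<Rightarrow> 'l list"
  last_read_set :: "nat \<Rightarrow> 'l rset"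
  execution_idx :: nat
  validation_idx :: nat
  decrease_cnt :: nat
  num_active_tasks :: nat
  done_marker :: bool
  txn_status :: "nat \<Rightarrow> nat \<times> st"
  txn_dependency :: "nat \<Rightarrow> nat set"

definition init_shared :: "('l, 'v) shared" where
  "init_shared = \<lparr> data = (\<lambda>_ _. None), last_written = (\<lambda>_. []),
     last_read_set = (\<lambda>_. []), execution_idx = 0, validation_idx = 0, decrease_cnt = 0,
     num_active_tasks = 0, done_marker = False,
     txn_status = (\<lambda>_. (0, READY_TO_EXECUTE)), txn_dependency = (\<lambda>_. {}) \<rparr>"

definition mv_read :: "('l, 'v) shared \<Rightarrow> 'l \<Rightarrow> nat \<Rightarrow> 'v rres" where
  "mv_read \<sigma> p j =
     (let K = {k. k < j \<and> data \<sigma> p k \<noteq> None} in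
      if K = {} then NOT_FOUND
      else (let k = Max K in
            case the (data \<sigma> p k) of ESTIMATE \<Rightarrow> READ_ERROR k | EVal i v \<Rightarrow> OK (k, i) v))"

definition read_ok :: "('l, 'v) shared \<Rightarrow> nat \<Rightarrow> 'l \<times> version option \<Rightarrow> bool" where
  "read_ok \<sigma> j e = (case mv_read \<sigma> (fst e) j of
      NOT_FOUND \<Rightarrow> snd e = None
    | OK ver _ \<Rightarrow> snd e = Some ver
    | READ_ERROR _ \<Rightarrow> False)"

text \<open>Every
  transition performed by a thread is one atomic operation on shared memory (or a purely
  local step); lock-protected critical sections are single atomic steps.\<close>

datatype ('l, 'v, 's) pc =
    PLoop "task option"  \<comment> \<open>top of the run loop, task in hand\<close>
  | PJoined
  | PDec
  \<comment> \<open>next_task\<close>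
  | PNT0 | PNT1 nat
  | PVB0 | PVB1 | PVB2 | PVB3 nat
  | PEB0 | PEB1 | PEB2 | PTI nat
  \<comment> \<open>check_done\<close>
  | PCD0 | PCD1 nat | PCD2 nat nat | PCD3 nat | PCD4 nat | PCD5
  \<comment> \<open>execution task: VM.execute (VM state, write buffer, written locations, read set)\<close>
  | PExec nat nat 's "'l \<Rightarrow> 'v option" "'l list" "'l rset"
  | PDep nat nat nat
  \<comment> \<open>record\<close>
  | PRW nat nat "('l \<times> 'v) list" "'l rset" "'l list" "('l \<times> 'v) list"
  | PRD nat nat "('l \<times> 'v) list" "'l rset" "'l list" "'l list"
  | PRL nat nat "('l \<times> 'v) list" "'l rset" "'l list"
  | PRR nat nat "'l rset" bool
  \<comment> \<open>finish execution\<close>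
  | PF0 nat nat bool | PF1 nat nat bool | PF2 nat nat bool "nat list" "nat list"
  | PF3 nat nat bool nat | PF4 nat nat bool | PF5 nat nat bool | PF6 nat | PF7
  \<comment> \<open>validation task\<close>
  | PV0 nat nat | PV1 nat nat "'l rset" | PVA nat nat
  | PC0 nat nat | PC1 nat nat "'l list" | PS nat nat
  | PDV nat | PDV2 nat | PVE nat | PVT nat

definition upd_status :: "nat \<Rightarrow> nat \<times> st \<Rightarrow> ('l, 'v) shared \<Rightarrow> ('l, 'v) shared" where
  "upd_status k x \<sigma> = \<sigma>\<lparr>txn_status := (txn_status \<sigma>)(k := x)\<rparr>"

definition upd_data :: "'l \<Rightarrow> nat \<Rightarrow> 'v entry option \<Rightarrow> ('l, 'v) shared \<Rightarrow> ('l, 'v) shared" where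
  "upd_data p k x \<sigma> = \<sigma>\<lparr>data := (data \<sigma>)(p := (data \<sigma> p)(k := x))\<rparr>"

text \<open>One atomic step of a thread.  Parameters: block size n, VM step function vstep,
  initial VM state txn j of transaction j, initial storage init.\<close>

fun tstep :: "nat \<Rightarrow> ('s \<Rightarrow> ('l, 'v, 's) instr) \<Rightarrow> (nat \<Rightarrow> 's) \<Rightarrow> ('l \<Rightarrow> 'v)
      \<Rightarrow> ('l, 'v) shared \<Rightarrow> ('l, 'v, 's) pc \<Rightarrow> ('l, 'v) shared \<times> ('l, 'v, 's) pc" where
  "tstep n vstep txn init \<sigma> PJoined = (\<sigma>, PJoined)"
| "tstep n vstep txn init \<sigma> (PLoop t) =
     (if done_marker \<sigma> then (\<sigma>, PJoined)
      else (case t of None \<Rightarrow> (\<sigma>, PNT0)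
              | Some (ExecTask k i) \<Rightarrow> (\<sigma>, PExec k i (txn k) Map.empty [] [])
              | Some (ValTask k i) \<Rightarrow> (\<sigma>, PV0 k i)))"
| "tstep n vstep txn init \<sigma> PDec =
     (\<sigma>\<lparr>num_active_tasks := num_active_tasks \<sigma> - 1\<rparr>, PLoop None)"
| "tstep n vstep txn init \<sigma> PNT0 = (\<sigma>, PNT1 (validation_idx \<sigma>))"
| "tstep n vstep txn init \<sigma> (PNT1 a) =
     (\<sigma>, if a < execution_idx \<sigma> then PVB0 else PEB0)"
| "tstep n vstep txn init \<sigma> PVB0 = (\<sigma>, if validation_idx \<sigma> \<ge> n then PCD0 else PVB1)"
| "tstep n vstep txn init \<sigma> PVB1 =
     (\<sigma>\<lparr>num_active_tasks := num_active_tasks \<sigma> + 1\<rparr>, PVB2)"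
| "tstep n vstep txn init \<sigma> PVB2 =
     (\<sigma>\<lparr>validation_idx := validation_idx \<sigma> + 1\<rparr>, PVB3 (validation_idx \<sigma>))"
| "tstep n vstep txn init \<sigma> (PVB3 k) =
     (if k < n \<and> snd (txn_status \<sigma> k) = EXECUTED
      then (\<sigma>, PLoop (Some (ValTask k (fst (txn_status \<sigma> k)))))
      else (\<sigma>, PDec))"
| "tstep n vstep txn init \<sigma> PEB0 = (\<sigma>, if execution_idx \<sigma> \<ge> n then PCD0 else PEB1)"
| "tstep n vstep txn init \<sigma> PEB1 =
     (\<sigma>\<lparr>num_active_tasks := num_active_tasks \<sigma> + 1\<rparr>, PEB2)"
| "tstep n vstep txn init \<sigma> PEB2 =
     (\<sigma>\<lparr>execution_idx := execution_idx \<sigma> + 1\<rparr>, PTI (execution_idx \<sigma>))"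
| "tstep n vstep txn init \<sigma> (PTI k) =
     (if k < n \<and> snd (txn_status \<sigma> k) = READY_TO_EXECUTE
      then (upd_status k (fst (txn_status \<sigma> k), EXECUTING) \<sigma>,
            PLoop (Some (ExecTask k (fst (txn_status \<sigma> k)))))
      else (\<sigma>, PDec))"
| "tstep n vstep txn init \<sigma> PCD0 = (\<sigma>, PCD1 (decrease_cnt \<sigma>))"
| "tstep n vstep txn init \<sigma> (PCD1 c) = (\<sigma>, PCD2 c (execution_idx \<sigma>))"
| "tstep n vstep txn init \<sigma> (PCD2 c e) =
     (\<sigma>, if min e (validation_idx \<sigma>) \<ge> n then PCD3 c else PLoop None)"
| "tstep n vstep txn init \<sigma> (PCD3 c) =
     (\<sigma>, if num_active_tasks \<sigma> = 0 then PCD4 c else PLoop None)"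
| "tstep n vstep txn init \<sigma> (PCD4 c) =
     (\<sigma>, if decrease_cnt \<sigma> = c then PCD5 else PLoop None)"
| "tstep n vstep txn init \<sigma> PCD5 = (\<sigma>\<lparr>done_marker := True\<rparr>, PLoop None)"
| "tstep n vstep txn init \<sigma> (PExec k i s wb wl rs) =
     (case vstep s of
        IDone \<Rightarrow> (let W = map (\<lambda>l. (l, the (wb l))) wl in
                  (\<sigma>, PRW k i W rs (last_written \<sigma> k) W))
      | IWrite l v s' \<Rightarrow>
          (\<sigma>, PExec k i s' (wb(l \<mapsto> v)) (if l \<in> set wl then wl else wl @ [l]) rs)
      | IRead l f \<Rightarrow>
          (case wb l of
             Some v \<Rightarrow> (\<sigma>, PExec k i (f v) wb wl rs)
           | None \<Rightarrow> (case mv_read \<sigma> l k of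
                NOT_FOUND \<Rightarrow> (\<sigma>, PExec k i (f (init l)) wb wl (rs @ [(l, None)]))
              | OK ver v \<Rightarrow> (\<sigma>, PExec k i (f v) wb wl (rs @ [(l, Some ver)]))
              | READ_ERROR b \<Rightarrow> (\<sigma>, PDep k i b))))"
| "tstep n vstep txn init \<sigma> (PDep k i b) =
     (if snd (txn_status \<sigma> b) = EXECUTED
      then (\<sigma>, PExec k i (txn k) Map.empty [] [])
      else ((upd_status k (fst (txn_status \<sigma> k), ABORTING) \<sigma>)
              \<lparr>txn_dependency := (txn_dependency \<sigma>)(b := insert k (txn_dependency \<sigma> b))\<rparr>,
            PDec))"
| "tstep n vstep txn init \<sigma> (PRW k i W rs prev todo) =
     (case todo of
        [] \<Rightarrow> (\<sigma>, PRD k i W rs prev (filter (\<lambda>p. p \<notin> fst ` set W) prev))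
      | (p, v) # t \<Rightarrow> (upd_data p k (Some (EVal i v)) \<sigma>, PRW k i W rs prev t))"
| "tstep n vstep txn init \<sigma> (PRD k i W rs prev todo) =
     (case todo of
        [] \<Rightarrow> (\<sigma>, PRL k i W rs prev)
      | p # t \<Rightarrow> (upd_data p k None \<sigma>, PRD k i W rs prev t))"
| "tstep n vstep txn init \<sigma> (PRL k i W rs prev) =
     (\<sigma>\<lparr>last_written := (last_written \<sigma>)(k := map fst W)\<rparr>,
      PRR k i rs (\<exists>p \<in> fst ` set W. p \<notin> set prev))"
| "tstep n vstep txn init \<sigma> (PRR k i rs w) =
     (\<sigma>\<lparr>last_read_set := (last_read_set \<sigma>)(k := rs)\<rparr>, PF0 k i w)"
| "tstep n vstep txn init \<sigma> (PF0 k i w) = (upd_status k (i, EXECUTED) \<sigma>, PF1 k i w)"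
| "tstep n vstep txn init \<sigma> (PF1 k i w) =
     (let D = sorted_list_of_set (txn_dependency \<sigma> k) in
      (\<sigma>\<lparr>txn_dependency := (txn_dependency \<sigma>)(k := {})\<rparr>, PF2 k i w D D))"
| "tstep n vstep txn init \<sigma> (PF2 k i w L Ds) =
     (case L of
        [] \<Rightarrow> (\<sigma>, if Ds = [] then PF5 k i w else PF3 k i w (hd Ds))
      | d # t \<Rightarrow> (upd_status d (fst (txn_status \<sigma> d) + 1, READY_TO_EXECUTE) \<sigma>, PF2 k i w t Ds))"
| "tstep n vstep txn init \<sigma> (PF3 k i w m) =
     (\<sigma>\<lparr>execution_idx := min (execution_idx \<sigma>) m\<rparr>, PF4 k i w)"
| "tstep n vstep txn init \<sigma> (PF4 k i w) =
     (\<sigma>\<lparr>decrease_cnt := decrease_cnt \<sigma> + 1\<rparr>, PF5 k i w)"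
| "tstep n vstep txn init \<sigma> (PF5 k i w) =
     (\<sigma>, if validation_idx \<sigma> > k then (if w then PF6 k else PLoop (Some (ValTask k i)))
         else PDec)"
| "tstep n vstep txn init \<sigma> (PF6 k) =
     (\<sigma>\<lparr>validation_idx := min (validation_idx \<sigma>) k\<rparr>, PF7)"
| "tstep n vstep txn init \<sigma> PF7 = (\<sigma>\<lparr>decrease_cnt := decrease_cnt \<sigma> + 1\<rparr>, PDec)"
| "tstep n vstep txn init \<sigma> (PV0 k i) = (\<sigma>, PV1 k i (last_read_set \<sigma> k))"
| "tstep n vstep txn init \<sigma> (PV1 k i RS) =
     (case RS of
        [] \<Rightarrow> (\<sigma>, PDec)
      | e # t \<Rightarrow> (\<sigma>, if read_ok \<sigma> k e then PV1 k i t else PVA k i))"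
| "tstep n vstep txn init \<sigma> (PVA k i) =
     (if txn_status \<sigma> k = (i, EXECUTED)
      then (upd_status k (i, ABORTING) \<sigma>, PC0 k i)
      else (\<sigma>, PDec))"
| "tstep n vstep txn init \<sigma> (PC0 k i) = (\<sigma>, PC1 k i (last_written \<sigma> k))"
| "tstep n vstep txn init \<sigma> (PC1 k i L) =
     (case L of
        [] \<Rightarrow> (\<sigma>, PS k i)
      | p # t \<Rightarrow> (upd_data p k (Some ESTIMATE) \<sigma>, PC1 k i t))"
| "tstep n vstep txn init \<sigma> (PS k i) =
     (upd_status k (i + 1, READY_TO_EXECUTE) \<sigma>, PDV k)"
| "tstep n vstep txn init \<sigma> (PDV k) =
     (\<sigma>\<lparr>validation_idx := min (validation_idx \<sigma>) (k + 1)\<rparr>, PDV2 k)"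
| "tstep n vstep txn init \<sigma> (PDV2 k) =
     (\<sigma>\<lparr>decrease_cnt := decrease_cnt \<sigma> + 1\<rparr>, PVE k)"
| "tstep n vstep txn init \<sigma> (PVE k) = (\<sigma>, if execution_idx \<sigma> > k then PVT k else PDec)"
| "tstep n vstep txn init \<sigma> (PVT k) =
     (if k < n \<and> snd (txn_status \<sigma> k) = READY_TO_EXECUTE
      then (upd_status k (fst (txn_status \<sigma> k), EXECUTING) \<sigma>,
            PLoop (Some (ExecTask k (fst (txn_status \<sigma> k)))))
      else (\<sigma>, PDec))"

type_synonym ('l, 'v, 's) gstate = "('l, 'v) shared \<times> (nat \<Rightarrow> ('l, 'v, 's) pc)"

definition gstep :: "nat \<Rightarrow> ('s \<Rightarrow> ('l, 'v, 's) instr) \<Rightarrow> (nat \<Rightarrow> 's) \<Rightarrow> ('l \<Rightarrow> 'v)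
      \<Rightarrow> nat \<Rightarrow> ('l, 'v, 's) gstate \<Rightarrow> ('l, 'v, 's) gstate" where
  "gstep n vstep txn init t g =
     (let (\<sigma>', p') = tstep n vstep txn init (fst g) (snd g t) in (\<sigma>', (snd g)(t := p')))"

definition init_gstate :: "('l, 'v, 's) gstate" where
  "init_gstate = (init_shared, (\<lambda>_. PLoop None))"

text \<open>A run with m threads (ids 0..<m): an infinite sequence of global states where in
  step s thread sched s performs one atomic step (a joined thread just stutters).\<close>

definition is_run :: "nat \<Rightarrow> ('s \<Rightarrow> ('l, 'v, 's) instr) \<Rightarrow> (nat \<Rightarrow> 's) \<Rightarrow> ('l \<Rightarrow> 'v)
      \<Rightarrow> nat \<Rightarrow> (nat \<Rightarrow> ('l, 'v, 's) gstate) \<Rightarrow> (nat \<Rightarrow> nat) \<Rightarrow> bool" where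
  "is_run n vstep txn init m \<rho> sched \<longleftrightarrow>
     \<rho> 0 = init_gstate \<and>
     (\<forall>s. sched s < m \<and> \<rho> (Suc s) = gstep n vstep txn init (sched s) (\<rho> s))"

definition joined :: "('l, 'v, 's) gstate \<Rightarrow> nat \<Rightarrow> bool" where
  "joined g t \<longleftrightarrow> snd g t = PJoined"

definition fair :: "nat \<Rightarrow> (nat \<Rightarrow> ('l, 'v, 's) gstate) \<Rightarrow> (nat \<Rightarrow> nat) \<Rightarrow> bool" where
  "fair m \<rho> sched \<longleftrightarrow>
     (\<forall>t < m. \<forall>s. \<not> joined (\<rho> s) t \<longrightarrow> (\<exists>s' \<ge> s. sched s' = t))"

end

theory Submission
  imports Defs
begin

fun exk :: "('l, 'v, 's) pc \<Rightarrow> (nat \<times> nat) option" where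
  "exk (PLoop (Some (ExecTask k i))) = Some (k, i)"
| "exk (PExec k i _ _ _ _) = Some (k, i)"
| "exk (PDep k i _) = Some (k, i)"
| "exk (PRW k i _ _ _ _) = Some (k, i)"
| "exk (PRD k i _ _ _ _) = Some (k, i)"
| "exk (PRL k i _ _ _) = Some (k, i)"
| "exk (PRR k i _ _) = Some (k, i)"
| "exk (PF0 k i _) = Some (k, i)"
| "exk _ = None"

fun vab :: "('l, 'v, 's) pc \<Rightarrow> (nat \<times> nat) option" where
  "vab (PC0 k i) = Some (k, i)"
| "vab (PC1 k i _) = Some (k, i)"
| "vab (PS k i) = Some (k, i)"
| "vab _ = None"

fun vph :: "('l, 'v, 's) pc \<Rightarrow> (nat \<times> nat) option" where
  "vph (PLoop (Some (ValTask k i))) = Some (k, i)"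
| "vph (PV0 k i) = Some (k, i)"
| "vph (PV1 k i _) = Some (k, i)"
| "vph (PVA k i) = Some (k, i)"
| "vph _ = None"

fun pfk :: "('l, 'v, 's) pc \<Rightarrow> (nat \<times> nat) option" where
  "pfk (PF1 k i _) = Some (k, i)"
| "pfk (PF2 k i _ _ _) = Some (k, i)"
| "pfk (PF3 k i _ _) = Some (k, i)"
| "pfk (PF4 k i _) = Some (k, i)"
| "pfk (PF5 k i _) = Some (k, i)"
| "pfk _ = None"

fun lown :: "('l, 'v, 's) pc \<Rightarrow> nat set" where
  "lown (PF2 _ _ _ L _) = set L"
| "lown _ = {}"

fun rck :: "('l, 'v, 's) pc \<Rightarrow> nat option" where
  "rck (PRW k _ _ _ _ _) = Some k"
| "rck (PRD k _ _ _ _ _) = Some k"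
| "rck (PRL k _ _ _ _) = Some k"
| "rck _ = None"

fun holds :: "('l, 'v, 's) pc \<Rightarrow> bool" where
  "holds (PLoop None) = False"
| "holds PJoined = False"
| "holds PNT0 = False"
| "holds (PNT1 _) = False"
| "holds PVB0 = False"
| "holds PVB1 = False"
| "holds PEB0 = False"
| "holds PEB1 = False"
| "holds PCD0 = False"
| "holds (PCD1 _) = False"
| "holds (PCD2 _ _) = False"
| "holds (PCD3 _) = False"
| "holds (PCD4 _) = False"
| "holds PCD5 = False"
| "holds _ = True"

fun rk :: "st \<Rightarrow> nat" where
  "rk READY_TO_EXECUTE = 0" | "rk EXECUTING = 1" | "rk EXECUTED = 2" | "rk ABORTING = 3"

definition code :: "nat \<times> st \<Rightarrow> nat" where
  "code x = 4 * fst x + rk (snd x)"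

fun phi :: "st \<Rightarrow> nat" where
  "phi READY_TO_EXECUTE = 0" | "phi ABORTING = 1" | "phi EXECUTED = 2" | "phi EXECUTING = 3"

definition legal :: "nat \<times> st \<Rightarrow> nat \<times> st \<Rightarrow> bool" where
  "legal x y \<longleftrightarrow>
     (snd x = READY_TO_EXECUTE \<and> y = (fst x, EXECUTING))
   \<or> (snd x = EXECUTING \<and> (y = (fst x, EXECUTED) \<or> y = (fst x, ABORTING)))
   \<or> (snd x = EXECUTED \<and> y = (fst x, ABORTING))
   \<or> (snd x = ABORTING \<and> y = (fst x + 1, READY_TO_EXECUTE))"

datatype tok = TDep nat | TL nat | TV nat

fun owns :: "('l, 'v) shared \<Rightarrow> (nat \<Rightarrow> ('l, 'v, 's) pc) \<Rightarrow> nat \<Rightarrow> tok \<Rightarrow> bool" where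
  "owns \<sigma> pcs k (TDep b) = (k \<in> txn_dependency \<sigma> b)"
| "owns \<sigma> pcs k (TL t) = (k \<in> lown (pcs t))"
| "owns \<sigma> pcs k (TV t) = (\<exists>i. vab (pcs t) = Some (k, i))"

definition st_of :: "('l, 'v) shared \<Rightarrow> nat \<Rightarrow> nat \<times> st" where
  "st_of \<sigma> k = txn_status \<sigma> k"

type_synonym ('l, 'v, 's) pcs = "nat \<Rightarrow> ('l, 'v, 's) pc"

definition "i_free m (pcs :: ('l, 'v, 's) pcs) \<longleftrightarrow> (\<forall>t. m \<le> t \<longrightarrow> pcs t = PLoop None)"
definition "i_join (\<sigma> :: ('l, 'v) shared) (pcs :: ('l, 'v, 's) pcs) \<longleftrightarrow> (\<forall>t. pcs t = PJoined \<longrightarrow> done_marker \<sigma>)"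
definition "i_ex n (\<sigma> :: ('l, 'v) shared) (pcs :: ('l, 'v, 's) pcs) \<longleftrightarrow>
   (\<forall>t k i. exk (pcs t) = Some (k, i) \<longrightarrow> txn_status \<sigma> k = (i, EXECUTING) \<and> k < n)"
definition "i_exu (pcs :: ('l, 'v, 's) pcs) \<longleftrightarrow>
   (\<forall>t t' k i i'. exk (pcs t) = Some (k, i) \<longrightarrow> exk (pcs t') = Some (k, i') \<longrightarrow> t = t')"
definition "i_wf vstep (pcs :: ('l, 'v, 's) pcs) \<longleftrightarrow>
   (\<forall>t k i st wb wl rs. pcs t = PExec k i st wb wl rs \<longrightarrow> wait_free vstep st)"
definition "i_dep (pcs :: ('l, 'v, 's) pcs) \<longleftrightarrow> (\<forall>t k i b. pcs t = PDep k i b \<longrightarrow> b < k)"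
definition "i_est (\<sigma> :: ('l, 'v) shared) \<longleftrightarrow>
   (\<forall>p k. data \<sigma> p k = Some ESTIMATE \<longrightarrow> snd (txn_status \<sigma> k) \<noteq> EXECUTED)"
definition "i_vab n (\<sigma> :: ('l, 'v) shared) (pcs :: ('l, 'v, 's) pcs) \<longleftrightarrow>
   (\<forall>t k i. vab (pcs t) = Some (k, i) \<longrightarrow> txn_status \<sigma> k = (i, ABORTING) \<and> k < n)"
definition "i_vph n (\<sigma> :: ('l, 'v) shared) (pcs :: ('l, 'v, 's) pcs) \<longleftrightarrow>
   (\<forall>t k i. vph (pcs t) = Some (k, i) \<longrightarrow> k < n \<and> code (i, EXECUTED) \<le> code (txn_status \<sigma> k))"
definition "i_pfk n (\<sigma> :: ('l, 'v) shared) (pcs :: ('l, 'v, 's) pcs) \<longleftrightarrow>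
   (\<forall>t k i. pfk (pcs t) = Some (k, i) \<longrightarrow> k < n \<and> code (i, EXECUTED) \<le> code (txn_status \<sigma> k))"
definition "i_depset n (\<sigma> :: ('l, 'v) shared) \<longleftrightarrow>
   (\<forall>b k. k \<in> txn_dependency \<sigma> b \<longrightarrow> b < k \<and> k < n \<and> snd (txn_status \<sigma> k) = ABORTING)
   \<and> (\<forall>b. finite (txn_dependency \<sigma> b))"
definition "i_pf2 n (\<sigma> :: ('l, 'v) shared) (pcs :: ('l, 'v, 's) pcs) \<longleftrightarrow>
   (\<forall>t b i w L Ds. pcs t = PF2 b i w L Ds \<longrightarrow> distinct L \<and> sorted Ds \<and> set L \<subseteq> set Ds
        \<and> (\<forall>d \<in> set L. d < n \<and> snd (txn_status \<sigma> d) = ABORTING))"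
definition "i_own (\<sigma> :: ('l, 'v) shared) (pcs :: ('l, 'v, 's) pcs) \<longleftrightarrow>
   (\<forall>k x y. owns \<sigma> pcs k x \<longrightarrow> owns \<sigma> pcs k y \<longrightarrow> x = y)"
definition "i_hi n (\<sigma> :: ('l, 'v) shared) \<longleftrightarrow> (\<forall>k. n \<le> k \<longrightarrow> txn_status \<sigma> k = (0, READY_TO_EXECUTE))"
definition "i_rw (\<sigma> :: ('l, 'v) shared) (pcs :: ('l, 'v, 's) pcs) \<longleftrightarrow>
   (\<forall>t k i W rs prev todo. pcs t = PRW k i W rs prev todo \<longrightarrow>
        prev = last_written \<sigma> k \<and> (\<exists>pre. W = pre @ todo)
        \<and> (\<forall>p. data \<sigma> p k \<noteq> None \<longrightarrow> p \<in> set prev \<or> p \<in> fst ` set W)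
        \<and> (\<forall>p. data \<sigma> p k = Some ESTIMATE \<longrightarrow> p \<notin> fst ` set W \<or> p \<in> fst ` set todo))"
definition "i_rd (\<sigma> :: ('l, 'v) shared) (pcs :: ('l, 'v, 's) pcs) \<longleftrightarrow>
   (\<forall>t k i W rs prev todo. pcs t = PRD k i W rs prev todo \<longrightarrow>
        (\<forall>p. data \<sigma> p k \<noteq> None \<longrightarrow> p \<in> fst ` set W \<or> p \<in> set todo)
        \<and> (\<forall>p. data \<sigma> p k = Some ESTIMATE \<longrightarrow> p \<in> set todo))"
definition "i_rl (\<sigma> :: ('l, 'v) shared) (pcs :: ('l, 'v, 's) pcs) \<longleftrightarrow>
   (\<forall>t k i W rs prev. pcs t = PRL k i W rs prev \<longrightarrow>
        (\<forall>p. data \<sigma> p k \<noteq> None \<longrightarrow> p \<in> fst ` set W) \<and> (\<forall>p. data \<sigma> p k \<noteq> Some ESTIMATE))"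
definition "i_rr (\<sigma> :: ('l, 'v) shared) (pcs :: ('l, 'v, 's) pcs) \<longleftrightarrow>
   (\<forall>t k i rs w. pcs t = PRR k i rs w \<longrightarrow> (\<forall>p. data \<sigma> p k \<noteq> Some ESTIMATE))"
definition "i_f0 (\<sigma> :: ('l, 'v) shared) (pcs :: ('l, 'v, 's) pcs) \<longleftrightarrow>
   (\<forall>t k i w. pcs t = PF0 k i w \<longrightarrow> (\<forall>p. data \<sigma> p k \<noteq> Some ESTIMATE))"
definition "i_loc (\<sigma> :: ('l, 'v) shared) (pcs :: ('l, 'v, 's) pcs) \<longleftrightarrow>
   (\<forall>k. (\<forall>t. rck (pcs t) \<noteq> Some k) \<longrightarrow> (\<forall>p. data \<sigma> p k \<noteq> None \<longrightarrow> p \<in> set (last_written \<sigma> k)))"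
definition "i_pc1 (\<sigma> :: ('l, 'v) shared) (pcs :: ('l, 'v, 's) pcs) \<longleftrightarrow>
   (\<forall>t k i L. pcs t = PC1 k i L \<longrightarrow> set L \<subseteq> set (last_written \<sigma> k))"

definition invA :: "nat \<Rightarrow> nat \<Rightarrow> ('s \<Rightarrow> ('l, 'v, 's) instr) \<Rightarrow> ('l, 'v) shared
    \<Rightarrow> (nat \<Rightarrow> ('l, 'v, 's) pc) \<Rightarrow> bool" where
  "invA n m vstep \<sigma> pcs \<longleftrightarrow> i_free m pcs \<and> i_join \<sigma> pcs \<and> i_ex n \<sigma> pcs \<and> i_exu pcs
    \<and> i_wf vstep pcs \<and> i_dep pcs \<and> i_est \<sigma> \<and> i_vab n \<sigma> pcs \<and> i_vph n \<sigma> pcs \<and> i_pfk n \<sigma> pcs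
    \<and> i_depset n \<sigma> \<and> i_pf2 n \<sigma> pcs \<and> i_own \<sigma> pcs \<and> i_hi n \<sigma> \<and> i_rw \<sigma> pcs \<and> i_rd \<sigma> pcs
    \<and> i_rl \<sigma> pcs \<and> i_rr \<sigma> pcs \<and> i_f0 \<sigma> pcs \<and> i_loc \<sigma> pcs \<and> i_pc1 \<sigma> pcs"

definition invB :: "nat \<Rightarrow> nat \<Rightarrow> ('l, 'v) shared \<Rightarrow> (nat \<Rightarrow> ('l, 'v, 's) pc) \<Rightarrow> bool" where
  "invB n m \<sigma> pcs \<longleftrightarrow>
    (\<forall>k i. k < n \<longrightarrow> txn_status \<sigma> k = (i, EXECUTING) \<longrightarrow> (\<exists>t. exk (pcs t) = Some (k, i)))
  \<and> (\<forall>k. k < n \<longrightarrow> snd (txn_status \<sigma> k) = ABORTING \<longrightarrow> (\<exists>x. owns \<sigma> pcs k x))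
  \<and> (\<forall>b k. k \<in> txn_dependency \<sigma> b \<longrightarrow> snd (txn_status \<sigma> b) = EXECUTED \<longrightarrow>
        (\<exists>t i w. pcs t = PF1 b i w))
  \<and> (\<forall>k. k < n \<longrightarrow> snd (txn_status \<sigma> k) = READY_TO_EXECUTE \<longrightarrow>
        execution_idx \<sigma> \<le> k \<or>
        (\<exists>t. pcs t = PTI k \<or> pcs t = PVT k \<or> pcs t = PVE k \<or> pcs t = PDV k \<or> pcs t = PDV2 k
           \<or> (\<exists>b i w L Ds. pcs t = PF2 b i w L Ds \<and> Ds \<noteq> [] \<and> hd Ds \<le> k)
           \<or> (\<exists>b i w m'. pcs t = PF3 b i w m' \<and> m' \<le> k)))
  \<and> num_active_tasks \<sigma> = card {t. t < m \<and> holds (pcs t)}"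

definition inv :: "nat \<Rightarrow> nat \<Rightarrow> ('s \<Rightarrow> ('l, 'v, 's) instr) \<Rightarrow> ('l, 'v) shared
    \<Rightarrow> (nat \<Rightarrow> ('l, 'v, 's) pc) \<Rightarrow> bool" where
  "inv n m vstep \<sigma> pcs \<longleftrightarrow> invA n m vstep \<sigma> pcs \<and> (\<not> done_marker \<sigma> \<longrightarrow> invB n m \<sigma> pcs)"

lemma inv_init: "inv n m vstep init_shared (\<lambda>_. PLoop None)"
  unfolding inv_def invA_def invB_def init_shared_def
    i_free_def i_join_def i_ex_def i_exu_def i_wf_def i_dep_def i_est_def i_vab_def i_vph_def
    i_pfk_def i_depset_def i_pf2_def i_own_def i_hi_def i_rw_def i_rd_def i_rl_def i_rr_def
    i_f0_def i_loc_def i_pc1_def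
  by (auto elim: owns.elims)


lemma legal_code: "legal x y \<Longrightarrow> code x < code y"
  by (cases x; cases y; auto simp: legal_def code_def)

lemma legal_phi: "legal x y \<Longrightarrow> snd x \<noteq> READY_TO_EXECUTE \<Longrightarrow> phi (snd y) < phi (snd x)"
  by (cases x; cases y; auto simp: legal_def)

lemma mv_read_eq:
  fixes \<sigma>0 :: "('l, 'v) shared" and p :: 'l and j :: nat
  defines "K \<equiv> {k. k < j \<and> data \<sigma>0 p k \<noteq> None}"
  assumes ne: "K \<noteq> {}"
  shows "mv_read \<sigma>0 p j = (case the (data \<sigma>0 p (Max K)) of ESTIMATE \<Rightarrow> READ_ERROR (Max K)
                 | EVal i v \<Rightarrow> OK (Max K, i) v) \<and> Max K \<in> K"
proof -
  have fin: "finite K" unfolding K_def by (rule finite_subset[of _ "{..<j}"]) auto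
  have "Max K \<in> K" using fin ne by (rule Max_in)
  moreover have "mv_read \<sigma>0 p j = (case the (data \<sigma>0 p (Max K)) of ESTIMATE \<Rightarrow> READ_ERROR (Max K)
                 | EVal i v \<Rightarrow> OK (Max K, i) v)"
    unfolding mv_read_def Let_def K_def[symmetric] using ne by simp
  ultimately show ?thesis by simp
qed

lemma mv_read_none:
  "{k. k < j \<and> data \<sigma>0 p k \<noteq> None} = {} \<Longrightarrow> mv_read \<sigma>0 p j = NOT_FOUND"
  unfolding mv_read_def Let_def by simp

lemma mv_read_err: "mv_read \<sigma>0 p j = READ_ERROR b \<Longrightarrow> b < j \<and> data \<sigma>0 p b = Some ESTIMATE"
proof -
  assume h: "mv_read \<sigma>0 p j = READ_ERROR b"
  define K where "K = {k. k < j \<and> data \<sigma>0 p k \<noteq> None}"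
  have ne: "K \<noteq> {}"
  proof
    assume "K = {}"
    hence "mv_read \<sigma>0 p j = NOT_FOUND" by (intro mv_read_none) (simp add: K_def)
    with h show False by simp
  qed
  from mv_read_eq[of j \<sigma>0 p, folded K_def, OF ne] h
  show ?thesis unfolding K_def
    by (cases "the (data \<sigma>0 p (Max {k. k < j \<and> data \<sigma>0 p k \<noteq> None}))") auto
qed

locale stp =
  fixes n m :: nat and vstep :: "'s \<Rightarrow> ('l, 'v, 's) instr" and txn :: "nat \<Rightarrow> 's"
    and init :: "'l \<Rightarrow> 'v" and \<sigma> :: "('l, 'v) shared" and pcs :: "('l, 'v, 's) pcs"
    and u :: nat and \<sigma>' :: "('l, 'v) shared" and p' :: "('l, 'v, 's) pc"
  assumes A: "invA n m vstep \<sigma> pcs" and u: "u < m"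
    and st: "tstep n vstep txn init \<sigma> (pcs u) = (\<sigma>', p')"
    and wft: "\<forall>j<n. wait_free vstep (txn j)"
begin

lemma ex_u: "exk (pcs t) = Some (k, i) \<Longrightarrow> txn_status \<sigma> k = (i, EXECUTING) \<and> k < n"
  using A unfolding invA_def i_ex_def by blast
lemma vab_u: "vab (pcs t) = Some (k, i) \<Longrightarrow> txn_status \<sigma> k = (i, ABORTING) \<and> k < n"
  using A unfolding invA_def i_vab_def by blast
lemma pf2_u: "pcs t = PF2 b i w L Ds \<Longrightarrow> distinct L \<and> sorted Ds \<and> set L \<subseteq> set Ds
        \<and> (\<forall>d \<in> set L. d < n \<and> snd (txn_status \<sigma> d) = ABORTING)"
  using A unfolding invA_def i_pf2_def by blast

lemma status_legal:
  assumes "txn_status \<sigma>' k \<noteq> txn_status \<sigma> k"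
  shows "legal (txn_status \<sigma> k) (txn_status \<sigma>' k)"
  using st assms ex_u[of u] vab_u[of u] pf2_u[of u]
  by (cases "pcs u") (auto simp: upd_status_def upd_data_def legal_def Let_def
       split: option.splits task.splits list.splits instr.splits rres.splits if_splits prod.splits)

lemma status_mono: "code (txn_status \<sigma> k) \<le> code (txn_status \<sigma>' k)"
  using status_legal[of k] legal_code by fastforce

lemmas SPL = option.splits task.splits list.splits instr.splits rres.splits if_splits prod.splits

lemma exu_u: "exk (pcs t) = Some (k, i) \<Longrightarrow> exk (pcs t') = Some (k, i') \<Longrightarrow> t = t'"
  using A unfolding invA_def i_exu_def by blast

lemma status_other:
  assumes "txn_status \<sigma>' k \<noteq> txn_status \<sigma> k"
  shows "(pcs u = PTI k \<or> pcs u = PVT k) \<and> snd (txn_status \<sigma> k) = READY_TO_EXECUTE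
    \<or> (\<exists>i. exk (pcs u) = Some (k, i))
    \<or> (\<exists>b i w L Ds. pcs u = PF2 b i w (k # L) Ds)
    \<or> (\<exists>i. pcs u = PVA k i \<and> txn_status \<sigma> k = (i, EXECUTED))
    \<or> (\<exists>i. pcs u = PS k i)"
  using st assms
  by (cases "pcs u") (auto simp: upd_status_def upd_data_def Let_def split: SPL)

lemma data_change:
  assumes "data \<sigma>' p k \<noteq> data \<sigma> p k"
  shows "rck (pcs u) = Some k \<or> (\<exists>i L. pcs u = PC1 k i (p # L))"
  using st assms
  by (cases "pcs u") (auto simp: upd_status_def upd_data_def Let_def split: SPL)

lemma lw_change:
  assumes "last_written \<sigma>' k \<noteq> last_written \<sigma> k"
  shows "\<exists>i W rs prev. pcs u = PRL k i W rs prev"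
  using st assms
  by (cases "pcs u") (auto simp: upd_status_def upd_data_def Let_def split: SPL)

lemma lrs_change:
  assumes "last_read_set \<sigma>' k \<noteq> last_read_set \<sigma> k"
  shows "\<exists>i rs w. pcs u = PRR k i rs w"
  using st assms
  by (cases "pcs u") (auto simp: upd_status_def upd_data_def Let_def split: SPL)

lemma dep_change:
  assumes "txn_dependency \<sigma>' b \<noteq> txn_dependency \<sigma> b"
  shows "(\<exists>k i. pcs u = PDep k i b \<and> snd (txn_status \<sigma> b) \<noteq> EXECUTED
            \<and> txn_dependency \<sigma>' b = insert k (txn_dependency \<sigma> b))
    \<or> (\<exists>i w. pcs u = PF1 b i w \<and> txn_dependency \<sigma>' b = {})"
  using st assms
  by (cases "pcs u") (auto simp: upd_status_def upd_data_def Let_def split: SPL)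

lemma done_mono: "done_marker \<sigma> \<Longrightarrow> done_marker \<sigma>'"
  using st by (cases "pcs u") (auto simp: upd_status_def upd_data_def Let_def split: SPL)

lemma status_same_ex:
  assumes "exk (pcs t) = Some (k, i)" "t \<noteq> u"
  shows "txn_status \<sigma>' k = txn_status \<sigma> k"
proof (rule ccontr)
  assume c: "txn_status \<sigma>' k \<noteq> txn_status \<sigma> k"
  have e: "txn_status \<sigma> k = (i, EXECUTING)" using ex_u assms by blast
  from status_other[OF c] show False
  proof (elim disjE exE conjE)
    fix i' assume "exk (pcs u) = Some (k, i')" thus False using exu_u assms by blast
  next
    fix b i' w L Ds assume "pcs u = PF2 b i' w (k # L) Ds" thus False using pf2_u e by fastforce
  next
    fix i' assume "pcs u = PS k i'" thus False using vab_u[of u k i'] e by simp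
  qed (use e in auto)
qed

lemma p_free: "i_free m (pcs(u := p'))"
  using A u unfolding invA_def i_free_def by auto

lemma p_join: "i_join \<sigma>' (pcs(u := p'))"
  using A st done_mono unfolding invA_def i_join_def
  by (cases "pcs u") (auto simp: upd_status_def upd_data_def Let_def split: SPL)

lemma p_ex_self: "exk p' = Some (k, i) \<Longrightarrow> txn_status \<sigma>' k = (i, EXECUTING) \<and> k < n"
  using st ex_u[of u]
  by (cases "pcs u") (auto simp: upd_status_def upd_data_def Let_def split: SPL)

lemma p_ex: "i_ex n \<sigma>' (pcs(u := p'))"
  unfolding i_ex_def
proof (intro allI impI)
  fix t k i assume h: "exk ((pcs(u := p')) t) = Some (k, i)"
  show "txn_status \<sigma>' k = (i, EXECUTING) \<and> k < n"
  proof (cases "t = u")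
    case True thus ?thesis using h p_ex_self by simp
  next
    case False thus ?thesis using h status_same_ex[of t k i] ex_u[of t k i] by simp
  qed
qed

lemma p_exu_self: "exk p' = Some (k, i) \<Longrightarrow> (\<exists>i'. exk (pcs u) = Some (k, i')) \<or> 
   ((pcs u = PTI k \<or> pcs u = PVT k) \<and> snd (txn_status \<sigma> k) = READY_TO_EXECUTE)"
  using st
  by (cases "pcs u") (auto simp: upd_status_def upd_data_def Let_def split: SPL)

lemma p_exu: "i_exu (pcs(u := p'))"
  unfolding i_exu_def
proof (intro allI impI)
  fix t t' k i i'
  assume h1: "exk ((pcs(u := p')) t) = Some (k, i)" and h2: "exk ((pcs(u := p')) t') = Some (k, i')"
  have other: False if "t \<noteq> u" "exk (pcs t) = Some (k, i)" "exk p' = Some (k, i')" for t i i'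
  proof -
    from p_exu_self[OF that(3)] show False
    proof
      assume "\<exists>i'. exk (pcs u) = Some (k, i')" thus False using exu_u that by blast
    next
      assume "(pcs u = PTI k \<or> pcs u = PVT k) \<and> snd (txn_status \<sigma> k) = READY_TO_EXECUTE"
      thus False using ex_u that by fastforce
    qed
  qed
  show "t = t'"
  proof (cases "t = u"; cases "t' = u")
    assume "t = u" "t' \<noteq> u" thus ?thesis using h1 h2 other[of t' i' i] by simp
  next
    assume "t \<noteq> u" "t' = u" thus ?thesis using h1 h2 other[of t i i'] by simp
  next
    assume "t \<noteq> u" "t' \<noteq> u" thus ?thesis using h1 h2 exu_u by simp
  qed simp
qed

lemma p_wf: "i_wf vstep (pcs(u := p'))"
proof -
  have w: "\<And>t k i st wb wl rs. pcs t = PExec k i st wb wl rs \<Longrightarrow> wait_free vstep st"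
    using A unfolding invA_def i_wf_def by blast
  have "p' = PExec k i st0 wb wl rs \<Longrightarrow> wait_free vstep st0" for k i st0 wb wl rs
    using st w[of u] wft ex_u[of u]
    by (cases "pcs u") (auto simp: upd_status_def upd_data_def Let_def
        elim: wait_free.cases split: SPL)
  thus ?thesis using w unfolding i_wf_def by auto
qed

lemma own_u: "owns \<sigma> pcs k x \<Longrightarrow> owns \<sigma> pcs k y \<Longrightarrow> x = y"
  using A unfolding invA_def i_own_def by blast
lemma depset_u: "k \<in> txn_dependency \<sigma> b \<Longrightarrow> b < k \<and> k < n \<and> snd (txn_status \<sigma> k) = ABORTING"
  using A unfolding invA_def i_depset_def by blast
lemma depfin_u: "finite (txn_dependency \<sigma> b)"
  using A unfolding invA_def i_depset_def by blast
lemma vph_u: "vph (pcs t) = Some (k, i) \<Longrightarrow> k < n \<and> code (i, EXECUTED) \<le> code (txn_status \<sigma> k)"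
  using A unfolding invA_def i_vph_def by blast
lemma pfk_u: "pfk (pcs t) = Some (k, i) \<Longrightarrow> k < n \<and> code (i, EXECUTED) \<le> code (txn_status \<sigma> k)"
  using A unfolding invA_def i_pfk_def by blast
lemma dep_u: "pcs t = PDep k i b \<Longrightarrow> b < k"
  using A unfolding invA_def i_dep_def by blast
lemma est_u: "data \<sigma> p k = Some ESTIMATE \<Longrightarrow> snd (txn_status \<sigma> k) \<noteq> EXECUTED"
  using A unfolding invA_def i_est_def by blast
lemma hi_u: "n \<le> k \<Longrightarrow> txn_status \<sigma> k = (0, READY_TO_EXECUTE)"
  using A unfolding invA_def i_hi_def by blast
lemma f0_u: "pcs t = PF0 k i w \<Longrightarrow> data \<sigma> p k \<noteq> Some ESTIMATE"
  using A unfolding invA_def i_f0_def by blast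
lemma rr_u: "pcs t = PRR k i rs w \<Longrightarrow> data \<sigma> p k \<noteq> Some ESTIMATE"
  using A unfolding invA_def i_rr_def by blast
lemma rl_u: "pcs t = PRL k i W rs prev \<Longrightarrow>
        (\<forall>p. data \<sigma> p k \<noteq> None \<longrightarrow> p \<in> fst ` set W) \<and> (\<forall>p. data \<sigma> p k \<noteq> Some ESTIMATE)"
  using A unfolding invA_def i_rl_def by blast
lemma rd_u: "pcs t = PRD k i W rs prev todo \<Longrightarrow>
        (\<forall>p. data \<sigma> p k \<noteq> None \<longrightarrow> p \<in> fst ` set W \<or> p \<in> set todo)
        \<and> (\<forall>p. data \<sigma> p k = Some ESTIMATE \<longrightarrow> p \<in> set todo)"
  using A unfolding invA_def i_rd_def by blast
lemma rw_u: "pcs t = PRW k i W rs prev todo \<Longrightarrow>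
        prev = last_written \<sigma> k \<and> (\<exists>pre. W = pre @ todo)
        \<and> (\<forall>p. data \<sigma> p k \<noteq> None \<longrightarrow> p \<in> set prev \<or> p \<in> fst ` set W)
        \<and> (\<forall>p. data \<sigma> p k = Some ESTIMATE \<longrightarrow> p \<notin> fst ` set W \<or> p \<in> fst ` set todo)"
  using A unfolding invA_def i_rw_def by blast
lemma loc_u: "(\<forall>t. rck (pcs t) \<noteq> Some k) \<Longrightarrow> data \<sigma> p k \<noteq> None \<Longrightarrow> p \<in> set (last_written \<sigma> k)"
  using A unfolding invA_def i_loc_def by blast
lemma pc1_u: "pcs t = PC1 k i L \<Longrightarrow> set L \<subseteq> set (last_written \<sigma> k)"
  using A unfolding invA_def i_pc1_def by blast

lemma own_abort: "owns \<sigma> pcs k x \<Longrightarrow> snd (txn_status \<sigma> k) = ABORTING"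
proof (cases x)
  case (TDep b) thus "owns \<sigma> pcs k x \<Longrightarrow> ?thesis" using depset_u by auto
next
  case (TL t) thus "owns \<sigma> pcs k x \<Longrightarrow> ?thesis"
    by (cases "pcs t") (auto dest: pf2_u)
next
  case (TV t) thus "owns \<sigma> pcs k x \<Longrightarrow> ?thesis" using vab_u by fastforce
qed

lemma status_same_own:
  assumes "owns \<sigma> pcs k x" "x \<noteq> TL u" "x \<noteq> TV u"
  shows "txn_status \<sigma>' k = txn_status \<sigma> k"
proof (rule ccontr)
  assume c: "txn_status \<sigma>' k \<noteq> txn_status \<sigma> k"
  have e: "snd (txn_status \<sigma> k) = ABORTING" using own_abort assms by blast
  from status_other[OF c] show False
  proof (elim disjE exE conjE)
    fix i' assume "exk (pcs u) = Some (k, i')" thus False using ex_u e by fastforce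
  next
    fix b i' w L Ds assume "pcs u = PF2 b i' w (k # L) Ds"
    hence "owns \<sigma> pcs k (TL u)" by simp
    thus False using own_u assms by blast
  next
    fix i' assume "pcs u = PS k i'"
    hence "owns \<sigma> pcs k (TV u)" by simp
    thus False using own_u assms by blast
  qed (use e in auto)
qed

lemma p_dep: "i_dep (pcs(u := p'))"
proof -
  have "p' = PDep k i b \<Longrightarrow> b < k" for k i b
    using st dep_u[of u]
    by (cases "pcs u") (auto simp: upd_status_def upd_data_def Let_def split: SPL dest: mv_read_err)
  thus ?thesis using dep_u unfolding i_dep_def by auto
qed

lemma p_est: "i_est \<sigma>'"
  unfolding i_est_def
proof (intro allI impI notI)
  fix p k assume e: "data \<sigma>' p k = Some ESTIMATE" and x: "snd (txn_status \<sigma>' k) = EXECUTED"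
  show False using st e x est_u f0_u[of u] vab_u[of u]
    by (cases "pcs u") (auto simp: upd_status_def upd_data_def Let_def split: SPL)
qed

lemma p_vab: "i_vab n \<sigma>' (pcs(u := p'))"
proof -
  have self: "vab p' = Some (k, i) \<Longrightarrow> txn_status \<sigma>' k = (i, ABORTING) \<and> k < n" for k i
    using st vab_u[of u] vph_u[of u]
    by (cases "pcs u") (auto simp: upd_status_def upd_data_def Let_def split: SPL)
  have oth: "txn_status \<sigma>' k = (i, ABORTING) \<and> k < n" if "t \<noteq> u" "vab (pcs t) = Some (k, i)" for t k i
  proof -
    have "owns \<sigma> pcs k (TV t)" using that by simp
    hence "txn_status \<sigma>' k = txn_status \<sigma> k" using status_same_own that by blast
    thus ?thesis using vab_u that by simp
  qed
  show ?thesis unfolding i_vab_def using self oth by auto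
qed

lemma p_vph: "i_vph n \<sigma>' (pcs(u := p'))"
proof -
  have self: "vph p' = Some (k, i) \<Longrightarrow> k < n \<and> code (i, EXECUTED) \<le> code (txn_status \<sigma>' k)" for k i
    using st vph_u[of u] pfk_u[of u] status_mono[of k]
    by (cases "pcs u") (auto simp: upd_status_def upd_data_def Let_def code_def split: SPL)
  show ?thesis unfolding i_vph_def
  proof (intro allI impI)
    fix t k i assume h: "vph ((pcs(u := p')) t) = Some (k, i)"
    show "k < n \<and> code (i, EXECUTED) \<le> code (txn_status \<sigma>' k)"
    proof (cases "t = u")
      case True thus ?thesis using h self by simp
    next
      case False thus ?thesis using h vph_u[of t k i] status_mono[of k] by simp
    qed
  qed
qed

lemma p_pfk: "i_pfk n \<sigma>' (pcs(u := p'))"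
proof -
  have self: "pfk p' = Some (k, i) \<Longrightarrow> k < n \<and> code (i, EXECUTED) \<le> code (txn_status \<sigma>' k)" for k i
    using st pfk_u[of u] ex_u[of u] status_mono[of k]
    by (cases "pcs u") (auto simp: upd_status_def upd_data_def Let_def code_def split: SPL)
  show ?thesis unfolding i_pfk_def
  proof (intro allI impI)
    fix t k i assume h: "pfk ((pcs(u := p')) t) = Some (k, i)"
    show "k < n \<and> code (i, EXECUTED) \<le> code (txn_status \<sigma>' k)"
    proof (cases "t = u")
      case True thus ?thesis using h self by simp
    next
      case False thus ?thesis using h pfk_u[of t k i] status_mono[of k] by simp
    qed
  qed
qed

lemma p_hi: "i_hi n \<sigma>'"
  unfolding i_hi_def
proof (intro allI impI)
  fix k assume k: "n \<le> k"
  have "txn_status \<sigma>' k = txn_status \<sigma> k"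
  proof (rule ccontr)
    assume c: "txn_status \<sigma>' k \<noteq> txn_status \<sigma> k"
    from status_other[OF c] show False
    proof (elim disjE exE conjE)
      assume "pcs u = PTI k" thus False using st k c by (auto split: if_splits)
    next
      assume "pcs u = PVT k" thus False using st k c by (auto split: if_splits)
    next
      fix i' assume "exk (pcs u) = Some (k, i')" thus False using ex_u k by fastforce
    next
      fix b i' w L Ds assume "pcs u = PF2 b i' w (k # L) Ds" thus False using pf2_u k by fastforce
    next
      fix i' assume "pcs u = PVA k i'" "txn_status \<sigma> k = (i', EXECUTED)"
      thus False using hi_u k by simp
    next
      fix i' assume "pcs u = PS k i'" thus False using vab_u[of u k i'] k by simp
    qed
  qed
  thus "txn_status \<sigma>' k = (0, READY_TO_EXECUTE)" using hi_u k by simp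
qed

end


context stp
begin

lemma p_depset: "i_depset n \<sigma>'"
  unfolding i_depset_def
proof (rule conjI; intro allI impI)
  fix b
  show "finite (txn_dependency \<sigma>' b)"
  proof (cases "txn_dependency \<sigma>' b = txn_dependency \<sigma> b")
    case True thus ?thesis using depfin_u by simp
  next
    case False thus ?thesis using dep_change[OF False] depfin_u by auto
  qed
next
  fix b k assume k: "k \<in> txn_dependency \<sigma>' b"
  show "b < k \<and> k < n \<and> snd (txn_status \<sigma>' k) = ABORTING"
  proof (cases "k \<in> txn_dependency \<sigma> b")
    case True
    have "txn_status \<sigma>' k = txn_status \<sigma> k"
      using status_same_own[of k "TDep b"] True by simp
    thus ?thesis using depset_u[OF True] by simp
  next
    case False
    hence ch: "txn_dependency \<sigma>' b \<noteq> txn_dependency \<sigma> b" using k by auto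
    from dep_change[OF ch] False k obtain i where pu: "pcs u = PDep k i b"
      and nb: "snd (txn_status \<sigma> b) \<noteq> EXECUTED" by auto
    have "b < k" using dep_u[OF pu] .
    moreover have "k < n" using ex_u[of u k i] pu by simp
    moreover have "snd (txn_status \<sigma>' k) = ABORTING"
      using st pu nb by (auto simp: upd_status_def)
    ultimately show ?thesis by simp
  qed
qed

lemma p_pf2: "i_pf2 n \<sigma>' (pcs(u := p'))"
  unfolding i_pf2_def
proof (intro allI impI)
  fix t b i w L Ds assume h: "(pcs(u := p')) t = PF2 b i w L Ds"
  show "distinct L \<and> sorted Ds \<and> set L \<subseteq> set Ds \<and> (\<forall>d\<in>set L. d < n \<and> snd (txn_status \<sigma>' d) = ABORTING)"
  proof (cases "t = u")
    case False
    hence pt: "pcs t = PF2 b i w L Ds" using h by simp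
    have "\<forall>d\<in>set L. txn_status \<sigma>' d = txn_status \<sigma> d"
    proof
      fix d assume "d \<in> set L"
      hence "owns \<sigma> pcs d (TL t)" using pt by simp
      thus "txn_status \<sigma>' d = txn_status \<sigma> d" using status_same_own False by blast
    qed
    thus ?thesis using pf2_u[OF pt] by simp
  next
    case True
    hence pu': "p' = PF2 b i w L Ds" using h by simp
    show ?thesis
    proof (cases "pcs u")
      case (PF1 b0 i0 w0)
      hence "b0 = b \<and> L = sorted_list_of_set (txn_dependency \<sigma> b) \<and> Ds = L
        \<and> \<sigma>' = \<sigma>\<lparr>txn_dependency := (txn_dependency \<sigma>)(b := {})\<rparr>"
        using st pu' by (auto simp: Let_def)
      thus ?thesis using depfin_u[of b] depset_u[of _ b] by auto
    next
      case (PF2 b0 i0 w0 L0 Ds0)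
      note pf = pf2_u[OF PF2]
      show ?thesis
      proof (cases L0)
        case Nil thus ?thesis using st PF2 pu' by (auto split: if_splits)
      next
        case (Cons d L1)
        hence eq: "L = L1 \<and> Ds = Ds0 \<and> \<sigma>' = upd_status d (fst (txn_status \<sigma> d) + 1, READY_TO_EXECUTE) \<sigma>"
          using st PF2 pu' by auto
        thus ?thesis using pf Cons by (auto simp: upd_status_def)
      qed
    qed (use st pu' in \<open>auto simp: upd_status_def upd_data_def Let_def split: SPL\<close>)
  qed
qed

lemma p_own: "i_own \<sigma>' (pcs(u := p'))"
  unfolding i_own_def
proof (intro allI impI)
  fix k x y
  assume ox: "owns \<sigma>' (pcs(u := p')) k x" and oy: "owns \<sigma>' (pcs(u := p')) k y"
  show "x = y"
  proof (cases "\<exists>k0 i b. pcs u = PDep k0 i b \<and> snd (txn_status \<sigma> b) \<noteq> EXECUTED")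
    case True
    then obtain k0 i b where pu: "pcs u = PDep k0 i b" and nb: "snd (txn_status \<sigma> b) \<noteq> EXECUTED" by blast
    have s': "\<sigma>' = (upd_status k0 (fst (txn_status \<sigma> k0), ABORTING) \<sigma>)
       \<lparr>txn_dependency := (txn_dependency \<sigma>)(b := insert k0 (txn_dependency \<sigma> b))\<rparr>" "p' = PDec"
      using st pu nb by auto
    have ek: "snd (txn_status \<sigma> k0) = EXECUTING" using ex_u[of u k0 i] pu by simp
    have no0: "\<not> owns \<sigma> pcs k0 z" for z using own_abort[of k0 z] ek by auto
    have tr: "owns \<sigma>' (pcs(u := p')) k z \<Longrightarrow> owns \<sigma> pcs k z \<or> (k = k0 \<and> z = TDep b)" for z
      using s' pu by (cases z) (auto simp: upd_status_def split: if_splits)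
    show ?thesis using tr[OF ox] tr[OF oy] no0 own_u by blast
  next
    case nE1: False
    show ?thesis
    proof (cases "\<exists>b i w. pcs u = PF1 b i w")
      case True
      then obtain b i w where pu: "pcs u = PF1 b i w" by blast
      have s': "\<sigma>' = \<sigma>\<lparr>txn_dependency := (txn_dependency \<sigma>)(b := {})\<rparr>"
        "p' = PF2 b i w (sorted_list_of_set (txn_dependency \<sigma> b)) (sorted_list_of_set (txn_dependency \<sigma> b))"
        using st pu by (auto simp: Let_def)
      define f where "f z = (if z = TL u then TDep b else z)" for z
      have tr: "owns \<sigma>' (pcs(u := p')) k z \<Longrightarrow> owns \<sigma> pcs k (f z) \<and> z \<noteq> TDep b" for z
        using s' pu depfin_u[of b] by (cases z) (auto simp: f_def split: if_splits)
      have "f x = f y" using tr[OF ox] tr[OF oy] own_u by blast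
      thus ?thesis using tr[OF ox] tr[OF oy] unfolding f_def by (auto split: if_splits)
    next
      case nE2: False
      show ?thesis
      proof (cases "\<exists>k0 i. pcs u = PVA k0 i \<and> txn_status \<sigma> k0 = (i, EXECUTED)")
        case True
        then obtain k0 i where pu: "pcs u = PVA k0 i" and ex: "txn_status \<sigma> k0 = (i, EXECUTED)" by blast
        have s': "\<sigma>' = upd_status k0 (i, ABORTING) \<sigma>" "p' = PC0 k0 i" using st pu ex by auto
        have no0: "\<not> owns \<sigma> pcs k0 z" for z using own_abort[of k0 z] ex by auto
        have tr: "owns \<sigma>' (pcs(u := p')) k z \<Longrightarrow> owns \<sigma> pcs k z \<or> (k = k0 \<and> z = TV u)" for z
          using s' pu by (cases z) (auto simp: upd_status_def split: if_splits)
        show ?thesis using tr[OF ox] tr[OF oy] no0 own_u by blast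
      next
        case nE3: False
        have dsub: "txn_dependency \<sigma>' b \<subseteq> txn_dependency \<sigma> b" for b
        proof (cases "txn_dependency \<sigma>' b = txn_dependency \<sigma> b")
          case False thus ?thesis using dep_change[OF False] nE1 by auto
        qed simp
        have lsub: "lown p' \<subseteq> lown (pcs u)"
          using st nE2 by (cases "pcs u") (auto simp: upd_status_def upd_data_def Let_def split: SPL)
        have vsub: "vab p' = Some (k1, i1) \<Longrightarrow> vab (pcs u) = Some (k1, i1)" for k1 i1
          using st nE3 by (cases "pcs u") (auto simp: upd_status_def upd_data_def Let_def split: SPL)
        have tr: "owns \<sigma>' (pcs(u := p')) k z \<Longrightarrow> owns \<sigma> pcs k z" for z
          using dsub lsub vsub by (cases z) (auto split: if_splits)
        show ?thesis using tr[OF ox] tr[OF oy] own_u by blast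
      qed
    qed
  qed
qed

lemma rck_exk: "rck p = Some k \<Longrightarrow> \<exists>i. exk p = Some (k, i)"
  by (cases p) auto

lemma frame_exec:
  assumes "exk (pcs t) = Some (k, i)" "t \<noteq> u"
  shows "data \<sigma>' p k = data \<sigma> p k \<and> last_written \<sigma>' k = last_written \<sigma> k"
proof (intro conjI)
  show "data \<sigma>' p k = data \<sigma> p k"
  proof (rule ccontr)
    assume c: "data \<sigma>' p k \<noteq> data \<sigma> p k"
    from data_change[OF c] show False
    proof
      assume "rck (pcs u) = Some k"
      then obtain i' where "exk (pcs u) = Some (k, i')" using rck_exk by blast
      thus False using exu_u assms by blast
    next
      assume "\<exists>i L. pcs u = PC1 k i (p # L)"
      then obtain i' L where "pcs u = PC1 k i' (p # L)" by blast
      hence "txn_status \<sigma> k = (i', ABORTING)" using vab_u[of u k i'] by simp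
      thus False using ex_u assms by simp
    qed
  qed
next
  show "last_written \<sigma>' k = last_written \<sigma> k"
  proof (rule ccontr)
    assume c: "last_written \<sigma>' k \<noteq> last_written \<sigma> k"
    from lw_change[OF c] obtain i' W rs prev where "pcs u = PRL k i' W rs prev" by blast
    hence "exk (pcs u) = Some (k, i')" by simp
    thus False using exu_u assms by blast
  qed
qed

lemma p_rw: "i_rw \<sigma>' (pcs(u := p'))"
  unfolding i_rw_def
proof (intro allI impI)
  fix t k i W rs prev todo assume h: "(pcs(u := p')) t = PRW k i W rs prev todo"
  show "prev = last_written \<sigma>' k \<and> (\<exists>pre. W = pre @ todo) \<and> (\<forall>p. data \<sigma>' p k \<noteq> None \<longrightarrow> p \<in> set prev \<or> p \<in> fst ` set W) \<and>
          (\<forall>p. data \<sigma>' p k = Some ESTIMATE \<longrightarrow> p \<notin> fst ` set W \<or> p \<in> fst ` set todo)"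
  proof (cases "t = u")
    case False
    hence pt: "pcs t = PRW k i W rs prev todo" using h by simp
    have "data \<sigma>' p k = data \<sigma> p k \<and> last_written \<sigma>' k = last_written \<sigma> k" for p
      using frame_exec[of t k i] pt False by simp
    thus ?thesis using rw_u[OF pt] by auto
  next
    case True
    hence pu': "p' = PRW k i W rs prev todo" using h by simp
    show ?thesis
    proof (cases "pcs u")
      case (PExec k0 i0 s0 wb wl rs0)
      hence eq: "k0 = k \<and> \<sigma>' = \<sigma> \<and> prev = last_written \<sigma> k \<and> todo = W"
        using st pu' by (auto simp: Let_def split: SPL)
      have nr: "\<forall>t. rck (pcs t) \<noteq> Some k"
      proof (intro allI notI)
        fix t assume "rck (pcs t) = Some k"
        then obtain i' where e: "exk (pcs t) = Some (k, i')" using rck_exk by blast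
        have "exk (pcs u) = Some (k, i0)" using PExec eq by simp
        hence "t = u" using exu_u e by blast
        thus False using \<open>rck (pcs t) = Some k\<close> PExec by simp
      qed
      show ?thesis using eq loc_u[OF nr] by auto
    next
      case (PRW k0 i0 W0 rs0 prev0 todo0)
      note old = rw_u[OF PRW]
      show ?thesis
      proof (cases todo0)
        case Nil thus ?thesis using st PRW pu' by simp
      next
        case (Cons a todo1)
        obtain p0 v where a: "a = (p0, v)" by (cases a)
        have eq: "k0 = k \<and> i0 = i \<and> W0 = W \<and> rs0 = rs \<and> prev0 = prev \<and> todo = todo1 \<and>
            \<sigma>' = upd_data p0 k (Some (EVal i v)) \<sigma>"
          using st PRW pu' Cons a by auto
        from old obtain pre where pre: "W = pre @ (p0, v) # todo1" using eq Cons a by auto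
        have "W = (pre @ [(p0, v)]) @ todo1" using pre by simp
        moreover have "p0 \<in> fst ` set W" using pre by force
        ultimately show ?thesis using old eq Cons a by (auto simp: upd_data_def)
      qed
    qed (use st pu' in \<open>auto simp: upd_status_def upd_data_def Let_def split: SPL\<close>)
  qed
qed

lemma p_rd: "i_rd \<sigma>' (pcs(u := p'))"
  unfolding i_rd_def
proof (intro allI impI)
  fix t k i W rs prev todo assume h: "(pcs(u := p')) t = PRD k i W rs prev todo"
  show "(\<forall>p. data \<sigma>' p k \<noteq> None \<longrightarrow> p \<in> fst ` set W \<or> p \<in> set todo) \<and>
          (\<forall>p. data \<sigma>' p k = Some ESTIMATE \<longrightarrow> p \<in> set todo)"
  proof (cases "t = u")
    case False
    hence pt: "pcs t = PRD k i W rs prev todo" using h by simp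
    have "data \<sigma>' p k = data \<sigma> p k" for p
      using frame_exec[of t k i] pt False by simp
    thus ?thesis using rd_u[OF pt] by simp
  next
    case True
    hence pu': "p' = PRD k i W rs prev todo" using h by simp
    show ?thesis
    proof (cases "pcs u")
      case (PRW k0 i0 W0 rs0 prev0 todo0)
      note old = rw_u[OF PRW]
      show ?thesis
      proof (cases todo0)
        case Nil
        hence eq: "k0 = k \<and> W0 = W \<and> prev0 = prev \<and> todo = filter (\<lambda>p. p \<notin> fst ` set W) prev \<and> \<sigma>' = \<sigma>"
          using st PRW pu' by auto
        show ?thesis using old eq Nil by auto
      next
        case (Cons a todo1) thus ?thesis using st PRW pu' by (cases a) auto
      qed
    next
      case (PRD k0 i0 W0 rs0 prev0 todo0)
      note old = rd_u[OF PRD]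
      show ?thesis
      proof (cases todo0)
        case Nil thus ?thesis using st PRD pu' by simp
      next
        case (Cons p0 todo1)
        have eq: "k0 = k \<and> W0 = W \<and> todo = todo1 \<and> \<sigma>' = upd_data p0 k None \<sigma>"
          using st PRD pu' Cons by auto
        show ?thesis using old eq Cons by (auto simp: upd_data_def)
      qed
    qed (use st pu' in \<open>auto simp: upd_status_def upd_data_def Let_def split: SPL\<close>)
  qed
qed

lemma p_rl: "i_rl \<sigma>' (pcs(u := p'))"
  unfolding i_rl_def
proof (intro allI impI)
  fix t k i W rs prev assume h: "(pcs(u := p')) t = PRL k i W rs prev"
  show "(\<forall>p. data \<sigma>' p k \<noteq> None \<longrightarrow> p \<in> fst ` set W) \<and> (\<forall>p. data \<sigma>' p k \<noteq> Some ESTIMATE)"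
  proof (cases "t = u")
    case False
    hence pt: "pcs t = PRL k i W rs prev" using h by simp
    have "data \<sigma>' p k = data \<sigma> p k" for p
      using frame_exec[of t k i] pt False by simp
    thus ?thesis using rl_u[OF pt] by simp
  next
    case True
    hence pu': "p' = PRL k i W rs prev" using h by simp
    show ?thesis
    proof (cases "pcs u")
      case (PRD k0 i0 W0 rs0 prev0 todo0)
      note old = rd_u[OF PRD]
      show ?thesis
      proof (cases todo0)
        case Nil
        hence eq: "k0 = k \<and> W0 = W \<and> \<sigma>' = \<sigma>" using st PRD pu' by auto
        show ?thesis using old eq Nil by auto
      next
        case (Cons a todo1) thus ?thesis using st PRD pu' by auto
      qed
    qed (use st pu' in \<open>auto simp: upd_status_def upd_data_def Let_def split: SPL\<close>)
  qed
qed

lemma p_rr: "i_rr \<sigma>' (pcs(u := p'))"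
  unfolding i_rr_def
proof (intro allI impI)
  fix t k i rs w p assume h: "(pcs(u := p')) t = PRR k i rs w"
  show "data \<sigma>' p k \<noteq> Some ESTIMATE"
  proof (cases "t = u")
    case False
    hence pt: "pcs t = PRR k i rs w" using h by simp
    have "data \<sigma>' p k = data \<sigma> p k"
      using frame_exec[of t k i] pt False by simp
    thus ?thesis using rr_u[OF pt] by simp
  next
    case True
    hence pu': "p' = PRR k i rs w" using h by simp
    show ?thesis
    proof (cases "pcs u")
      case (PRL k0 i0 W0 rs0 prev0)
      thus ?thesis using rl_u[OF PRL] st pu' by auto
    qed (use st pu' in \<open>auto simp: upd_status_def upd_data_def Let_def split: SPL\<close>)
  qed
qed

lemma p_f0: "i_f0 \<sigma>' (pcs(u := p'))"
  unfolding i_f0_def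
proof (intro allI impI)
  fix t k i w p assume h: "(pcs(u := p')) t = PF0 k i w"
  show "data \<sigma>' p k \<noteq> Some ESTIMATE"
  proof (cases "t = u")
    case False
    hence pt: "pcs t = PF0 k i w" using h by simp
    have "data \<sigma>' p k = data \<sigma> p k"
      using frame_exec[of t k i] pt False by simp
    thus ?thesis using f0_u[OF pt] by simp
  next
    case True
    hence pu': "p' = PF0 k i w" using h by simp
    show ?thesis
    proof (cases "pcs u")
      case (PRR k0 i0 rs0 w0)
      thus ?thesis using rr_u[OF PRR] st pu' by auto
    qed (use st pu' in \<open>auto simp: upd_status_def upd_data_def Let_def split: SPL\<close>)
  qed
qed

lemma p_loc: "i_loc \<sigma>' (pcs(u := p'))"
  unfolding i_loc_def
proof (intro allI impI)
  fix k p assume nr: "\<forall>t. rck ((pcs(u := p')) t) \<noteq> Some k" and d: "data \<sigma>' p k \<noteq> None"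
  show "p \<in> set (last_written \<sigma>' k)"
  proof (cases "rck (pcs u) = Some k")
    case True
    have nr': "rck p' \<noteq> Some k" using nr[rule_format, of u] by simp
    show ?thesis
    proof (cases "pcs u")
      case (PRL k0 i0 W0 rs0 prev0)
      hence "k0 = k \<and> \<sigma>' = \<sigma>\<lparr>last_written := (last_written \<sigma>)(k := map fst W0)\<rparr>"
        using st True by auto
      thus ?thesis using rl_u[OF PRL] d by auto
    next
      case (PRW k0 i0 W0 rs0 prev0 todo0)
      thus ?thesis using True nr' st by (cases todo0) auto
    next
      case (PRD k0 i0 W0 rs0 prev0 todo0)
      thus ?thesis using True nr' st by (cases todo0) auto
    qed (use True in auto)
  next
    case False
    have nro: "\<forall>t. rck (pcs t) \<noteq> Some k" using nr False by (metis fun_upd_other)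
    have lw: "last_written \<sigma>' k = last_written \<sigma> k"
    proof (rule ccontr)
      assume "last_written \<sigma>' k \<noteq> last_written \<sigma> k"
      from lw_change[OF this] False show False by auto
    qed
    show ?thesis
    proof (cases "data \<sigma>' p k = data \<sigma> p k")
      case True thus ?thesis using loc_u[OF nro] d lw by simp
    next
      case c: False
      from data_change[OF c] False obtain i L where "pcs u = PC1 k i (p # L)" by auto
      thus ?thesis using pc1_u[of u k i "p # L"] lw by simp
    qed
  qed
qed

lemma p_pc1: "i_pc1 \<sigma>' (pcs(u := p'))"
  unfolding i_pc1_def
proof (intro allI impI)
  fix t k i L assume h: "(pcs(u := p')) t = PC1 k i L"
  show "set L \<subseteq> set (last_written \<sigma>' k)"
  proof (cases "t = u")
    case False
    hence pt: "pcs t = PC1 k i L" using h by simp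
    have lw: "last_written \<sigma>' k = last_written \<sigma> k"
    proof (rule ccontr)
      assume "last_written \<sigma>' k \<noteq> last_written \<sigma> k"
      from lw_change[OF this] obtain i' W rs prev where "pcs u = PRL k i' W rs prev" by blast
      hence "txn_status \<sigma> k = (i', EXECUTING)" using ex_u[of u k i'] by simp
      moreover have "txn_status \<sigma> k = (i, ABORTING)" using vab_u[of t k i] pt by simp
      ultimately show False by simp
    qed
    thus ?thesis using pc1_u[OF pt] by simp
  next
    case True
    hence pu': "p' = PC1 k i L" using h by simp
    show ?thesis
    proof (cases "pcs u")
      case (PC1 k0 i0 L0)
      thus ?thesis using pc1_u[OF PC1] st pu' by (cases L0) (auto simp: upd_data_def)
    qed (use st pu' in \<open>auto simp: upd_status_def upd_data_def Let_def split: SPL\<close>)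
  qed
qed

lemma p_invA: "invA n m vstep \<sigma>' (pcs(u := p'))"
  unfolding invA_def
  using p_free p_join p_ex p_exu p_wf p_dep p_est p_vab p_vph p_pfk p_depset p_pf2 p_own p_hi
    p_rw p_rd p_rl p_rr p_f0 p_loc p_pc1 by blast

lemma exec_change:
  assumes "execution_idx \<sigma>' \<noteq> execution_idx \<sigma>"
  shows "(pcs u = PEB2 \<and> execution_idx \<sigma>' = execution_idx \<sigma> + 1 \<and> p' = PTI (execution_idx \<sigma>))
    \<or> (\<exists>b i w m'. pcs u = PF3 b i w m' \<and> execution_idx \<sigma>' = min (execution_idx \<sigma>) m')"
  using st assms
  by (cases "pcs u") (auto simp: upd_status_def upd_data_def Let_def split: SPL)

lemma holds_change:
  "(holds p' = holds (pcs u) \<and> num_active_tasks \<sigma>' = num_active_tasks \<sigma>)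
   \<or> (\<not> holds (pcs u) \<and> holds p' \<and> num_active_tasks \<sigma>' = num_active_tasks \<sigma> + 1)
   \<or> (holds (pcs u) \<and> \<not> holds p' \<and> num_active_tasks \<sigma>' = num_active_tasks \<sigma> - 1)
   \<or> done_marker \<sigma>"
  using st
  by (cases "pcs u") (auto simp: upd_status_def upd_data_def Let_def split: SPL)

lemma card_upd:
  fixes P :: "('l, 'v, 's) pc \<Rightarrow> bool"
  defines "S \<equiv> {t. t < m \<and> P (pcs t)}" and "S' \<equiv> {t. t < m \<and> P ((pcs(u := p')) t)}"
  shows "(P p' = P (pcs u) \<longrightarrow> card S' = card S)
    \<and> (\<not> P (pcs u) \<longrightarrow> P p' \<longrightarrow> card S' = card S + 1)
    \<and> (P (pcs u) \<longrightarrow> \<not> P p' \<longrightarrow> card S' = card S - 1)"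
proof -
  have fS: "finite S" unfolding S_def by simp
  have e1: "P p' = P (pcs u) \<Longrightarrow> S' = S" unfolding S_def S'_def by auto
  have e2: "\<not> P (pcs u) \<Longrightarrow> P p' \<Longrightarrow> S' = insert u S \<and> u \<notin> S" unfolding S_def S'_def using u by auto
  have e3: "P (pcs u) \<Longrightarrow> \<not> P p' \<Longrightarrow> S' = S - {u} \<and> u \<in> S" unfolding S_def S'_def using u by auto
  show ?thesis using e1 e2 e3 fS by (auto simp: card_insert_if)
qed

lemma b1_self: "exk (pcs u) = Some (k, i) \<Longrightarrow> txn_status \<sigma>' k = txn_status \<sigma> k \<Longrightarrow> \<not> done_marker \<sigma>
   \<Longrightarrow> exk p' = Some (k, i)"
  using st ex_u[of u]
  by (cases "pcs u") (auto simp: upd_status_def upd_data_def Let_def split: SPL)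

lemma sorted_hd_le: "sorted Ds \<Longrightarrow> k \<in> set Ds \<Longrightarrow> hd Ds \<le> k"
  by (cases Ds) auto

definition ew :: "nat \<Rightarrow> ('l, 'v, 's) pc \<Rightarrow> bool" where
  "ew k p \<longleftrightarrow> p = PTI k \<or> p = PVT k \<or> p = PVE k \<or> p = PDV k \<or> p = PDV2 k
           \<or> (\<exists>b i w L Ds. p = PF2 b i w L Ds \<and> Ds \<noteq> [] \<and> hd Ds \<le> k)
           \<or> (\<exists>b i w m'. p = PF3 b i w m' \<and> m' \<le> k)"

lemma p_invB:
  assumes B: "invB n m \<sigma> pcs" and nd: "\<not> done_marker \<sigma>"
  shows "invB n m \<sigma>' (pcs(u := p'))"
proof -
  have B1: "\<And>k i. k < n \<Longrightarrow> txn_status \<sigma> k = (i, EXECUTING) \<Longrightarrow> \<exists>t. exk (pcs t) = Some (k, i)"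
   and B2: "\<And>k. k < n \<Longrightarrow> snd (txn_status \<sigma> k) = ABORTING \<Longrightarrow> \<exists>x. owns \<sigma> pcs k x"
   and B3: "\<And>b k. k \<in> txn_dependency \<sigma> b \<Longrightarrow> snd (txn_status \<sigma> b) = EXECUTED \<Longrightarrow> \<exists>t i w. pcs t = PF1 b i w"
   and B4: "\<And>k. k < n \<Longrightarrow> snd (txn_status \<sigma> k) = READY_TO_EXECUTE \<Longrightarrow>
        execution_idx \<sigma> \<le> k \<or> (\<exists>t. ew k (pcs t))"
   and B5: "num_active_tasks \<sigma> = card {t. t < m \<and> holds (pcs t)}"
    using B unfolding invB_def ew_def by blast+
  have c1: "\<exists>t. exk ((pcs(u := p')) t) = Some (k, i)" if k: "k < n" and e: "txn_status \<sigma>' k = (i, EXECUTING)" for k i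
  proof (cases "txn_status \<sigma>' k = txn_status \<sigma> k")
    case True
    hence "txn_status \<sigma> k = (i, EXECUTING)" using e by simp
    then obtain t where t: "exk (pcs t) = Some (k, i)" using B1[OF k] by blast
    show ?thesis
    proof (cases "t = u")
      case True thus ?thesis using b1_self t \<open>txn_status \<sigma>' k = txn_status \<sigma> k\<close> nd
        by (metis fun_upd_same)
    next
      case False thus ?thesis using t by (metis fun_upd_other)
    qed
  next
    case False
    have "legal (txn_status \<sigma> k) (txn_status \<sigma>' k)" using status_legal False by blast
    hence "snd (txn_status \<sigma> k) = READY_TO_EXECUTE" using e by (auto simp: legal_def)
    hence "p' = PLoop (Some (ExecTask k i))"
      using status_other[OF False] e st ex_u[of u k] pf2_u[of u] vab_u[of u]
      by (auto simp: upd_status_def split: if_splits)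
    thus ?thesis by (metis exk.simps(1) fun_upd_same)
  qed
  have c2: "\<exists>x. owns \<sigma>' (pcs(u := p')) k x" if k: "k < n" and e: "snd (txn_status \<sigma>' k) = ABORTING" for k
  proof (cases "txn_status \<sigma>' k = txn_status \<sigma> k")
    case same: True
    then obtain x where x: "owns \<sigma> pcs k x" using B2 k e by auto
    show ?thesis
    proof (cases x)
      case (TDep b)
      show ?thesis
      proof (cases "txn_dependency \<sigma>' b = txn_dependency \<sigma> b")
        case True thus ?thesis using x TDep by (metis owns.simps(1))
      next
        case False
        from dep_change[OF False] show ?thesis
        proof
          assume "\<exists>k' i. pcs u = PDep k' i b \<and> snd (txn_status \<sigma> b) \<noteq> EXECUTED \<and>
             txn_dependency \<sigma>' b = insert k' (txn_dependency \<sigma> b)"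
          thus ?thesis using x TDep by (metis insertI2 owns.simps(1))
        next
          assume "\<exists>i w. pcs u = PF1 b i w \<and> txn_dependency \<sigma>' b = {}"
          then obtain i w where pu: "pcs u = PF1 b i w" by blast
          hence "p' = PF2 b i w (sorted_list_of_set (txn_dependency \<sigma> b)) (sorted_list_of_set (txn_dependency \<sigma> b))"
            using st by (auto simp: Let_def)
          hence "owns \<sigma>' (pcs(u := p')) k (TL u)" using x TDep depfin_u[of b] by simp
          thus ?thesis by blast
        qed
      qed
    next
      case (TL t)
      show ?thesis
      proof (cases "t = u")
        case False thus ?thesis using x TL by (metis owns.simps(2) fun_upd_other)
      next
        case True
        then obtain b i w L Ds where pu: "pcs u = PF2 b i w L Ds" and kL: "k \<in> set L"
          using x TL by (cases "pcs u") auto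
        show ?thesis
        proof (cases L)
          case Nil thus ?thesis using kL by simp
        next
          case (Cons d L1)
          show ?thesis
          proof (cases "d = k")
            case True
            hence "txn_status \<sigma>' k = (fst (txn_status \<sigma> k) + 1, READY_TO_EXECUTE)"
              using st pu Cons by (auto simp: upd_status_def)
            thus ?thesis using e by simp
          next
            case False
            hence "p' = PF2 b i w L1 Ds" "k \<in> set L1" using st pu Cons kL by auto
            hence "owns \<sigma>' (pcs(u := p')) k (TL u)" by simp
            thus ?thesis by blast
          qed
        qed
      qed
    next
      case (TV t)
      then obtain i where vi: "vab (pcs t) = Some (k, i)" using x by auto
      show ?thesis
      proof (cases "t = u")
        case False thus ?thesis using vi by (metis owns.simps(3) fun_upd_other)
      next
        case True
        have "vab p' = Some (k, i)"
          using st vi True same vab_u[of u k i]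
          by (cases "pcs u") (auto simp: upd_status_def upd_data_def split: SPL)
        hence "owns \<sigma>' (pcs(u := p')) k (TV u)" by simp
        thus ?thesis by blast
      qed
    qed
  next
    case False
    from status_other[OF False] show ?thesis
    proof (elim disjE exE conjE)
      assume "pcs u = PTI k" thus ?thesis using st e False by (auto simp: upd_status_def split: if_splits)
    next
      assume "pcs u = PVT k" thus ?thesis using st e False by (auto simp: upd_status_def split: if_splits)
    next
      fix b i' w L Ds assume "pcs u = PF2 b i' w (k # L) Ds"
      thus ?thesis using st e by (auto simp: upd_status_def)
    next
      fix i' assume "pcs u = PS k i'"
      thus ?thesis using st e by (auto simp: upd_status_def)
    next
      fix i' assume pu: "pcs u = PVA k i'" "txn_status \<sigma> k = (i', EXECUTED)"
      hence "p' = PC0 k i'" using st by auto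
      hence "owns \<sigma>' (pcs(u := p')) k (TV u)" by simp
      thus ?thesis by blast
    next
      fix i' assume pu: "exk (pcs u) = Some (k, i')"
      show ?thesis
      proof (cases "pcs u")
        case (PDep k0 i0 b)
        hence "k0 = k" using pu by simp
        hence "k \<in> txn_dependency \<sigma>' b"
          using st PDep False by (auto simp: upd_status_def split: if_splits)
        hence "owns \<sigma>' (pcs(u := p')) k (TDep b)" by simp
        thus ?thesis by blast
      qed (use pu st e False in \<open>auto simp: upd_status_def upd_data_def Let_def split: SPL\<close>)
    qed
  qed
  have c3: "\<exists>t i w. (pcs(u := p')) t = PF1 b i w"
    if k: "k \<in> txn_dependency \<sigma>' b" and e: "snd (txn_status \<sigma>' b) = EXECUTED" for b k
  proof (cases "txn_dependency \<sigma>' b = txn_dependency \<sigma> b")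
    case False
    from dep_change[OF False] show ?thesis
    proof
      assume "\<exists>k' i. pcs u = PDep k' i b \<and> snd (txn_status \<sigma> b) \<noteq> EXECUTED \<and>
             txn_dependency \<sigma>' b = insert k' (txn_dependency \<sigma> b)"
      then obtain k' i where pu: "pcs u = PDep k' i b" and nb: "snd (txn_status \<sigma> b) \<noteq> EXECUTED" by blast
      have "b < k'" using dep_u[OF pu] .
      hence "txn_status \<sigma>' b = txn_status \<sigma> b" using st pu nb by (auto simp: upd_status_def)
      thus ?thesis using e nb by simp
    next
      assume "\<exists>i w. pcs u = PF1 b i w \<and> txn_dependency \<sigma>' b = {}"
      thus ?thesis using k by auto
    qed
  next
    case True
    hence k0: "k \<in> txn_dependency \<sigma> b" using k by simp
    show ?thesis
    proof (cases "snd (txn_status \<sigma> b) = EXECUTED")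
      case True
      then obtain t i w where t: "pcs t = PF1 b i w" using B3 k0 by blast
      show ?thesis
      proof (cases "t = u")
        case False thus ?thesis using t by (metis fun_upd_other)
      next
        case True
        hence "txn_dependency \<sigma>' b = {}" using st t by (auto simp: Let_def)
        thus ?thesis using k by simp
      qed
    next
      case False
      hence ch: "txn_status \<sigma>' b \<noteq> txn_status \<sigma> b" using e by auto
      have lg: "legal (txn_status \<sigma> b) (txn_status \<sigma>' b)" using status_legal ch by blast
      from status_other[OF ch] show ?thesis
      proof (elim disjE exE conjE)
        fix i' assume pu: "exk (pcs u) = Some (b, i')"
        show ?thesis
        proof (cases "pcs u")
          case (PF0 b0 i0 w0)
          hence "p' = PF1 b i0 w0" using st pu by auto
          thus ?thesis by (metis fun_upd_same)
        qed (use pu st e ch in \<open>auto simp: upd_status_def upd_data_def Let_def split: SPL\<close>)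
      qed (use st e ch lg in \<open>auto simp: upd_status_def legal_def split: if_splits\<close>)
    qed
  qed
  have c4: "execution_idx \<sigma>' \<le> k \<or> (\<exists>t. ew k ((pcs(u := p')) t))"
    if k: "k < n" and e: "snd (txn_status \<sigma>' k) = READY_TO_EXECUTE" for k
  proof (cases "txn_status \<sigma>' k = txn_status \<sigma> k")
    case same: True
    hence e0: "snd (txn_status \<sigma> k) = READY_TO_EXECUTE" using e by simp
    have exs: "execution_idx \<sigma>' \<le> k \<or> p' = PTI k" if "execution_idx \<sigma> \<le> k"
    proof (cases "execution_idx \<sigma>' = execution_idx \<sigma>")
      case False
      from exec_change[OF False] show ?thesis using that by auto
    qed (use that in simp)
    from B4[OF k e0] show ?thesis
    proof
      assume "execution_idx \<sigma> \<le> k"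
      from exs[OF this] show ?thesis unfolding ew_def by (metis fun_upd_same)
    next
      assume "\<exists>t. ew k (pcs t)"
      then obtain t where t: "ew k (pcs t)" by blast
      show ?thesis
      proof (cases "t = u")
        case False thus ?thesis using t by (metis fun_upd_other)
      next
        case True
        have tu: "ew k (pcs u)" using t True by simp
        have "execution_idx \<sigma>' \<le> k \<or> ew k p'"
          using tu[unfolded ew_def]
        proof (elim disjE exE conjE)
          assume pu: "pcs u = PTI k"
          show ?thesis using st pu same e0 k by (auto simp: ew_def upd_status_def prod_eq_iff split: if_splits)
        next
          assume pu: "pcs u = PVT k"
          show ?thesis using st pu same e0 k by (auto simp: ew_def upd_status_def prod_eq_iff split: if_splits)
        next
          assume pu: "pcs u = PVE k"
          show ?thesis using st pu by (auto simp: ew_def split: if_splits)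
        next
          assume pu: "pcs u = PDV k"
          show ?thesis using st pu by (auto simp: ew_def)
        next
          assume pu: "pcs u = PDV2 k"
          show ?thesis using st pu by (auto simp: ew_def)
        next
          fix b i w L Ds assume pu: "pcs u = PF2 b i w L Ds" and ne: "Ds \<noteq> []" and hk: "hd Ds \<le> k"
          show ?thesis
          proof (cases L)
            case Nil
            hence "p' = PF3 b i w (hd Ds)" using st pu ne by auto
            thus ?thesis using hk by (auto simp: ew_def)
          next
            case (Cons d L1)
            hence "p' = PF2 b i w L1 Ds" using st pu by (auto simp: ew_def)
            thus ?thesis using hk ne by (auto simp: ew_def)
          qed
        next
          fix b i w m' assume pu: "pcs u = PF3 b i w m'" and hk: "m' \<le> k"
          show ?thesis using st pu hk by (auto simp: ew_def)
        qed
        thus ?thesis by (metis fun_upd_same)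
      qed
    qed
  next
    case False
    from status_other[OF False] show ?thesis
    proof (elim disjE exE conjE)
      fix i' assume "pcs u = PS k i'"
      hence "p' = PDV k" using st by auto
      thus ?thesis unfolding ew_def by (metis fun_upd_same)
    next
      fix b i' w L Ds assume pu: "pcs u = PF2 b i' w (k # L) Ds"
      hence "p' = PF2 b i' w L Ds" using st by auto
      moreover have "Ds \<noteq> [] \<and> hd Ds \<le> k" using pf2_u[OF pu] sorted_hd_le by fastforce
      ultimately show ?thesis unfolding ew_def by (metis fun_upd_same)
    next
      fix i' assume pu: "exk (pcs u) = Some (k, i')"
      have "txn_status \<sigma> k = (i', EXECUTING)" using ex_u pu by blast
      thus ?thesis using status_legal[OF False] e by (auto simp: legal_def)
    next
      fix i' assume "pcs u = PVA k i'" "txn_status \<sigma> k = (i', EXECUTED)"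
      thus ?thesis using status_legal[OF False] e by (auto simp: legal_def)
    next
      assume "pcs u = PTI k" "snd (txn_status \<sigma> k) = READY_TO_EXECUTE"
      thus ?thesis using status_legal[OF False] e by (auto simp: legal_def)
    next
      assume "pcs u = PVT k" "snd (txn_status \<sigma> k) = READY_TO_EXECUTE"
      thus ?thesis using status_legal[OF False] e by (auto simp: legal_def)
    qed
  qed
  have c5: "num_active_tasks \<sigma>' = card {t. t < m \<and> holds ((pcs(u := p')) t)}"
  proof -
    let ?S = "{t. t < m \<and> holds (pcs t)}" and ?S' = "{t. t < m \<and> holds ((pcs(u := p')) t)}"
    have cu: "(holds p' = holds (pcs u) \<longrightarrow> card ?S' = card ?S)
    \<and> (\<not> holds (pcs u) \<longrightarrow> holds p' \<longrightarrow> card ?S' = card ?S + 1)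
    \<and> (holds (pcs u) \<longrightarrow> \<not> holds p' \<longrightarrow> card ?S' = card ?S - 1)"
      by (rule card_upd)
    from holds_change nd consider
        (a) "holds p' = holds (pcs u)" "num_active_tasks \<sigma>' = num_active_tasks \<sigma>"
      | (b) "\<not> holds (pcs u)" "holds p'" "num_active_tasks \<sigma>' = num_active_tasks \<sigma> + 1"
      | (c) "holds (pcs u)" "\<not> holds p'" "num_active_tasks \<sigma>' = num_active_tasks \<sigma> - 1"
      by blast
    thus ?thesis
    proof cases
      case a
      hence "card ?S' = card ?S" using cu by blast
      thus ?thesis using a B5 by simp
    next
      case b
      hence "card ?S' = card ?S + 1" using cu by blast
      thus ?thesis using b B5 by simp
    next
      case c
      hence "card ?S' = card ?S - 1" using cu by blast
      thus ?thesis using c B5 by simp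
    qed
  qed
  show ?thesis unfolding invB_def using c1 c2 c3 c4 c5 unfolding ew_def by blast
qed

lemma p_inv: "inv n m vstep \<sigma> pcs \<Longrightarrow> inv n m vstep \<sigma>' (pcs(u := p'))"
  unfolding inv_def using p_invA p_invB done_mono by blast

end


locale brun =
  fixes n m :: nat and vstep :: "'s \<Rightarrow> ('l, 'v, 's) instr" and txn :: "nat \<Rightarrow> 's"
    and init :: "'l \<Rightarrow> 'v" and \<rho> :: "nat \<Rightarrow> ('l, 'v, 's) gstate" and sched :: "nat \<Rightarrow> nat"
  assumes run: "is_run n vstep txn init m \<rho> sched"
    and fair: "fair m \<rho> sched"
    and wft: "\<forall>j<n. wait_free vstep (txn j)"
begin

abbreviation S :: "nat \<Rightarrow> ('l, 'v) shared" where "S s \<equiv> fst (\<rho> s)"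
abbreviation pc :: "nat \<Rightarrow> nat \<Rightarrow> ('l, 'v, 's) pc" where "pc s t \<equiv> snd (\<rho> s) t"
abbreviation stat :: "nat \<Rightarrow> nat \<Rightarrow> nat \<times> st" where "stat s k \<equiv> txn_status (S s) k"

lemma sched_lt: "sched s < m"
  using run unfolding is_run_def by blast

lemma step_eq: "tstep n vstep txn init (S s) (pc s (sched s)) = (S (Suc s), pc (Suc s) (sched s))"
  and other_eq: "t \<noteq> sched s \<Longrightarrow> pc (Suc s) t = pc s t"
proof -
  have r: "\<rho> (Suc s) = gstep n vstep txn init (sched s) (\<rho> s)" using run unfolding is_run_def by blast
  obtain a b where ab: "tstep n vstep txn init (S s) (pc s (sched s)) = (a, b)" by fastforce
  have "\<rho> (Suc s) = (a, (snd (\<rho> s))(sched s := b))" using r ab unfolding gstep_def by simp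
  thus "tstep n vstep txn init (S s) (pc s (sched s)) = (S (Suc s), pc (Suc s) (sched s))"
    and "t \<noteq> sched s \<Longrightarrow> pc (Suc s) t = pc s t" using ab by auto
qed

lemma pc_suc: "snd (\<rho> (Suc s)) = (snd (\<rho> s))(sched s := pc (Suc s) (sched s))"
  using other_eq by (auto simp: fun_eq_iff)

lemma stp_at: "inv n m vstep (S s) (snd (\<rho> s)) \<Longrightarrow>
  stp n m vstep txn init (S s) (snd (\<rho> s)) (sched s) (S (Suc s)) (pc (Suc s) (sched s))"
  unfolding stp_def inv_def using sched_lt step_eq wft by blast

lemma inv_all: "inv n m vstep (S s) (snd (\<rho> s))"
proof (induction s)
  case 0
  have "\<rho> 0 = init_gstate" using run unfolding is_run_def by blast
  thus ?case using inv_init unfolding init_gstate_def by simp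
next
  case (Suc s)
  have "inv n m vstep (S (Suc s)) ((snd (\<rho> s))(sched s := pc (Suc s) (sched s)))"
    using stp.p_inv[OF stp_at[OF Suc.IH] Suc.IH] .
  thus ?case using pc_suc by simp
qed

lemma stp_s: "stp n m vstep txn init (S s) (snd (\<rho> s)) (sched s) (S (Suc s)) (pc (Suc s) (sched s))"
  using stp_at inv_all by blast

lemma invA_s: "invA n m vstep (S s) (snd (\<rho> s))"
  using inv_all unfolding inv_def by blast

lemma invB_s: "\<not> done_marker (S s) \<Longrightarrow> invB n m (S s) (snd (\<rho> s))"
  using inv_all unfolding inv_def by blast

lemma next_step:
  assumes "t < m" "pc s t \<noteq> PJoined"
  shows "\<exists>s1\<ge>s. sched s1 = t \<and> (\<forall>s'. s \<le> s' \<longrightarrow> s' \<le> s1 \<longrightarrow> pc s' t = pc s t)"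
proof -
  have "\<not> joined (\<rho> s) t" using assms unfolding joined_def by simp
  then obtain s2 where s2: "s2 \<ge> s" "sched s2 = t" using fair assms unfolding fair_def by blast
  define s1 where "s1 = (LEAST x. x \<ge> s \<and> sched x = t)"
  have s1: "s1 \<ge> s \<and> sched s1 = t" unfolding s1_def by (rule LeastI[of _ s2]) (use s2 in auto)
  have mn: "\<And>x. x \<ge> s \<Longrightarrow> x < s1 \<Longrightarrow> sched x \<noteq> t" unfolding s1_def using not_less_Least by blast
  have "\<forall>s'. s \<le> s' \<longrightarrow> s' \<le> s1 \<longrightarrow> pc s' t = pc s t"
  proof (intro allI impI)
    fix s' assume "s \<le> s'" "s' \<le> s1"
    thus "pc s' t = pc s t"
    proof (induction s')
      case 0 thus ?case by simp
    next
      case (Suc x)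
      show ?case
      proof (cases "s \<le> x")
        case True
        hence "sched x \<noteq> t" using mn Suc by simp
        thus ?thesis using other_eq[of t x] Suc True by simp
      next
        case False thus ?thesis using Suc by (metis le_SucE)
      qed
    qed
  qed
  thus ?thesis using s1 by blast
qed

lemma next_pc:
  assumes "t < m" "pc s t = p" "p \<noteq> PJoined"
  shows "\<exists>s1\<ge>s. sched s1 = t \<and> pc s1 t = p \<and> tstep n vstep txn init (S s1) p = (S (Suc s1), pc (Suc s1) t)
     \<and> (\<forall>s'. s \<le> s' \<longrightarrow> s' \<le> s1 \<longrightarrow> pc s' t = p)"
proof -
  obtain s1 where s1: "s1 \<ge> s" "sched s1 = t" "\<forall>s'. s \<le> s' \<longrightarrow> s' \<le> s1 \<longrightarrow> pc s' t = pc s t"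
    using next_step assms by blast
  have "pc s1 t = p" using s1 assms by auto
  thus ?thesis using s1 step_eq[of s1] assms by auto
qed

lemma done_mono_s: "s \<le> s' \<Longrightarrow> done_marker (S s) \<Longrightarrow> done_marker (S s')"
proof (induction s' rule: dec_induct)
  case (step x) thus ?case using stp.done_mono[OF stp_s[of x]] by simp
qed

lemma code_mono1: "code (stat s k) \<le> code (stat (Suc s) k)"
  using stp.status_mono[OF stp_s[of s]] .

lemma code_mono: "s \<le> s' \<Longrightarrow> code (stat s k) \<le> code (stat s' k)"
proof (induction s' rule: dec_induct)
  case (step x) thus ?case using code_mono1[of x k] by simp
qed simp

lemma code_inj0: "code (a, b) = code (c, d) \<Longrightarrow> a = c \<and> b = d"
  by (cases b; cases d; simp add: code_def; presburger)

lemma code_inj: "code x = code y \<Longrightarrow> x = y"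
  using code_inj0[of "fst x" "snd x" "fst y" "snd y"] by (simp add: prod_eq_iff)

lemma stat_between: "s1 \<le> s \<Longrightarrow> s \<le> s2 \<Longrightarrow> stat s1 k = stat s2 k \<Longrightarrow> stat s k = stat s1 k"
  using code_mono[of s1 s k] code_mono[of s s2 k] code_inj by (metis le_antisym)

lemma wfp:
  fixes f :: "('l, 'v, 's) pc \<Rightarrow> 'a" and r :: "('a \<times> 'a) set"
  assumes wf: "wf r" and R0: "R (pc s0 u)"
    and prog: "\<And>s. s \<ge> s0 \<Longrightarrow> \<not> G s \<Longrightarrow> R (pc s u) \<Longrightarrow>
        \<exists>s'>s. G s' \<or> (R (pc s' u) \<and> (f (pc s' u), f (pc s u)) \<in> r)"
  shows "\<exists>s\<ge>s0. G s"
proof -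
  have "\<forall>s. f (pc s u) = x \<longrightarrow> s \<ge> s0 \<longrightarrow> R (pc s u) \<longrightarrow> (\<exists>s'\<ge>s0. G s')" for x
  proof (induction x rule: wf_induct[OF wf])
    case (1 x)
    show ?case
    proof (intro allI impI)
      fix s assume fx: "f (pc s u) = x" and ss: "s \<ge> s0" and rs: "R (pc s u)"
      show "\<exists>s'\<ge>s0. G s'"
      proof (cases "G s")
        case True thus ?thesis using ss by blast
      next
        case False
        then obtain s' where s': "s' > s" "G s' \<or> (R (pc s' u) \<and> (f (pc s' u), f (pc s u)) \<in> r)"
          using prog ss rs by blast
        show ?thesis
        proof (cases "G s'")
          case True thus ?thesis using s' ss by (intro exI[of _ s']) auto
        next
          case False
          hence "R (pc s' u)" "(f (pc s' u), x) \<in> r" using s' fx by auto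
          thus ?thesis using 1 s' ss by auto
        qed
      qed
    qed
  qed
  thus ?thesis using R0 by blast
qed

end


fun rank :: "('l, 'v, 's) pc \<Rightarrow> nat \<times> nat" where
  "rank (PLoop None) = (0,0)" | "rank PJoined = (0,0)" | "rank PDec = (1,0)" | "rank (PVT _) = (2,0)"
| "rank (PVE _) = (3,0)" | "rank (PDV2 _) = (4,0)" | "rank (PDV _) = (5,0)" | "rank (PS _ _) = (6,0)"
| "rank (PC1 _ _ L) = (7, length L)" | "rank (PC0 _ _) = (8,0)" | "rank (PVA _ _) = (9,0)"
| "rank (PV1 _ _ RS) = (10, length RS)" | "rank (PV0 _ _) = (11,0)"
| "rank (PLoop (Some (ValTask _ _))) = (12,0)" | "rank PF7 = (2,0)" | "rank (PF6 _) = (3,0)"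
| "rank (PF5 _ _ _) = (13,0)" | "rank (PF4 _ _ _) = (14,0)" | "rank (PF3 _ _ _ _) = (15,0)"
| "rank (PF2 _ _ _ L _) = (16, length L)" | "rank (PF1 _ _ _) = (17,0)" | "rank (PF0 _ _ _) = (18,0)"
| "rank (PRR _ _ _ _) = (19,0)" | "rank (PRL _ _ _ _ _) = (20,0)"
| "rank (PRD _ _ _ _ _ todo) = (21, length todo)" | "rank (PRW _ _ _ _ _ todo) = (22, length todo)"
| "rank (PExec _ _ _ _ _ _) = (23,0)" | "rank (PDep _ _ _) = (23,0)"
| "rank (PLoop (Some (ExecTask _ _))) = (24,0)" | "rank PCD5 = (1,0)" | "rank (PCD4 _) = (2,0)"
| "rank (PCD3 _) = (3,0)" | "rank (PCD2 _ _) = (4,0)" | "rank (PCD1 _) = (5,0)" | "rank PCD0 = (6,0)"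
| "rank (PTI _) = (2,0)" | "rank (PVB3 _) = (25,0)" | "rank PVB2 = (26,0)" | "rank PEB2 = (3,0)"
| "rank PVB1 = (27,0)" | "rank PEB1 = (4,0)" | "rank PVB0 = (28,0)" | "rank PEB0 = (7,0)"
| "rank (PNT1 _) = (29,0)" | "rank PNT0 = (30,0)"

definition rlex :: "((nat \<times> nat) \<times> (nat \<times> nat)) set" where
  "rlex = less_than <*lex*> less_than"

lemma wf_rlex: "wf rlex" unfolding rlex_def by auto

fun isex :: "('l, 'v, 's) pc \<Rightarrow> bool" where
  "isex (PExec _ _ _ _ _ _) = True" | "isex (PDep _ _ _) = True" | "isex _ = False"

lemma rank_dec:
  assumes "tstep n vstep txn init \<sigma> p = (\<sigma>', p')" "txn_status \<sigma>' = txn_status \<sigma>" "\<not> isex p"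
    "p \<noteq> PLoop None" "p \<noteq> PJoined"
  shows "p' = PLoop None \<or> p' = PJoined \<or> (rank p', rank p) \<in> rlex"
  using assms
proof (cases p)
  case (PTI k)
  show ?thesis
  proof (cases "k < n \<and> snd (txn_status \<sigma> k) = READY_TO_EXECUTE")
    case True
    hence "snd (txn_status \<sigma>' k) = EXECUTING"
      using assms(1) PTI by (auto simp: upd_status_def)
    thus ?thesis using assms(2) True by simp
  next
    case False thus ?thesis using assms(1) PTI by (auto simp: rlex_def)
  qed
next
  case (PVT k)
  show ?thesis
  proof (cases "k < n \<and> snd (txn_status \<sigma> k) = READY_TO_EXECUTE")
    case True
    hence "snd (txn_status \<sigma>' k) = EXECUTING"
      using assms(1) PVT by (auto simp: upd_status_def)
    thus ?thesis using assms(2) True by simp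
  next
    case False thus ?thesis using assms(1) PVT by (auto simp: rlex_def)
  qed
qed (use assms(1,3,4,5) in \<open>auto simp: rlex_def Let_def
      split: option.splits task.splits list.splits instr.splits rres.splits if_splits prod.splits\<close>)

context brun
begin

lemma exec_prog:
  assumes u: "u < m" and wf: "wait_free vstep st" and p0: "pc s u = PExec k i st wb wl rs"
    and H: "\<forall>s'\<ge>s. \<forall>l b. mv_read (S s') l k = READ_ERROR b \<longrightarrow> (\<forall>s''\<ge>s'. snd (stat s'' b) \<noteq> EXECUTED)"
  shows "\<exists>s'>s. (\<exists>W rs' prev. pc s' u = PRW k i W rs' prev W) \<or> (pc s' u = PDec \<and> stat s' k = (i, ABORTING))"
  using wf p0 H
proof (induction st arbitrary: s wb wl rs rule: wait_free.induct)
  case (wf_done st)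
  obtain s1 where s1: "s1 \<ge> s" "tstep n vstep txn init (S s1) (PExec k i st wb wl rs) = (S (Suc s1), pc (Suc s1) u)"
    using next_pc[OF u wf_done.prems(1)] by blast
  have tt: "tstep n vstep txn init (S s1) (PExec k i st wb wl rs) = (S s1, PRW k i (map (\<lambda>l. (l, the (wb l))) wl) rs (last_written (S s1) k) (map (\<lambda>l. (l, the (wb l))) wl))"
    using wf_done.hyps by (simp add: Let_def)
  have "pc (Suc s1) u = PRW k i (map (\<lambda>l. (l, the (wb l))) wl) rs (last_written (S s1) k) (map (\<lambda>l. (l, the (wb l))) wl)"
    using trans[OF s1(2)[symmetric] tt] by (simp only: prod.inject)
  moreover have "Suc s1 > s" using s1 by simp
  ultimately show ?case by blast
next
  case (wf_write st l v st')
  obtain s1 where s1: "s1 \<ge> s" "tstep n vstep txn init (S s1) (PExec k i st wb wl rs) = (S (Suc s1), pc (Suc s1) u)"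
    using next_pc[OF u wf_write.prems(1)] by blast
  have tt: "tstep n vstep txn init (S s1) (PExec k i st wb wl rs) = (S s1, PExec k i st' (wb(l \<mapsto> v)) (if l \<in> set wl then wl else wl @ [l]) rs)"
    using wf_write.hyps by simp
  have pc1: "pc (Suc s1) u = PExec k i st' (wb(l \<mapsto> v)) (if l \<in> set wl then wl else wl @ [l]) rs"
    using trans[OF s1(2)[symmetric] tt] by (simp only: prod.inject)
  have H1: "\<forall>s'\<ge>Suc s1. \<forall>l b. mv_read (S s') l k = READ_ERROR b \<longrightarrow> (\<forall>s''\<ge>s'. snd (stat s'' b) \<noteq> EXECUTED)"
  proof (intro allI impI)
    fix s' l b s'' assume a: "Suc s1 \<le> s'" "mv_read (S s') l k = READ_ERROR b" "s' \<le> s''"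
    have "s \<le> s'" using s1(1) a(1) by simp
    thus "snd (stat s'' b) \<noteq> EXECUTED" using wf_write.prems(2) a(2,3) by blast
  qed
  obtain s' where s': "s' > Suc s1" "(\<exists>W rs' prev. pc s' u = PRW k i W rs' prev W) \<or> (pc s' u = PDec \<and> stat s' k = (i, ABORTING))"
    using wf_write.IH[OF pc1 H1] by blast
  have "s' > s" using s'(1) s1(1) by simp
  thus ?case using s'(2) by blast
next
  case (wf_read st l f)
  obtain s1 where s1: "s1 \<ge> s" "tstep n vstep txn init (S s1) (PExec k i st wb wl rs) = (S (Suc s1), pc (Suc s1) u)"
    using next_pc[OF u wf_read.prems(1)] by blast
  have H1: "\<forall>s'\<ge>Suc s1. \<forall>l b. mv_read (S s') l k = READ_ERROR b \<longrightarrow> (\<forall>s''\<ge>s'. snd (stat s'' b) \<noteq> EXECUTED)"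
  proof (intro allI impI)
    fix s' l b s'' assume a: "Suc s1 \<le> s'" "mv_read (S s') l k = READ_ERROR b" "s' \<le> s''"
    have "s \<le> s'" using s1(1) a(1) by simp
    thus "snd (stat s'' b) \<noteq> EXECUTED" using wf_read.prems(2) a(2,3) by blast
  qed
  have cont: "\<exists>s'>s. (\<exists>W rs' prev. pc s' u = PRW k i W rs' prev W) \<or> (pc s' u = PDec \<and> stat s' k = (i, ABORTING))"
    if tt: "tstep n vstep txn init (S s1) (PExec k i st wb wl rs) = (S s1, PExec k i (f x) wb' wl' rs')" for x wb' wl' rs'
  proof -
    have pc1: "pc (Suc s1) u = PExec k i (f x) wb' wl' rs'"
      using trans[OF s1(2)[symmetric] tt] by (simp only: prod.inject)
    note ih = conjunct2[OF spec[OF wf_read.IH, of x]]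
    obtain s' where s': "s' > Suc s1" "(\<exists>W rs' prev. pc s' u = PRW k i W rs' prev W) \<or> (pc s' u = PDec \<and> stat s' k = (i, ABORTING))"
      using ih pc1 H1 by blast
    have "s' > s" using s'(1) s1(1) by simp
    thus ?thesis using s'(2) by blast
  qed
  show ?case
  proof (cases "wb l")
    case (Some v)
    show ?thesis by (rule cont) (use wf_read.hyps Some in simp)
  next
    case None
    show ?thesis
    proof (cases "mv_read (S s1) l k")
      case NOT_FOUND show ?thesis by (rule cont) (use wf_read.hyps None NOT_FOUND in simp)
    next
      case (OK ver v) show ?thesis by (rule cont) (use wf_read.hyps None OK in simp)
    next
      case (READ_ERROR b)
      have tt: "tstep n vstep txn init (S s1) (PExec k i st wb wl rs) = (S s1, PDep k i b)"
        using wf_read.hyps None READ_ERROR by simp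
      have pd: "pc (Suc s1) u = PDep k i b"
        using trans[OF s1(2)[symmetric] tt] by (simp only: prod.inject)
      obtain s2 where s2: "s2 \<ge> Suc s1" "pc s2 u = PDep k i b"
          "tstep n vstep txn init (S s2) (PDep k i b) = (S (Suc s2), pc (Suc s2) u)"
        using next_pc[OF u pd] by blast
      have nb: "snd (stat s2 b) \<noteq> EXECUTED"
        using wf_read.prems(2)[rule_format, of s1 l b s2] s1(1) s2(1) READ_ERROR by simp
      have ek: "stat s2 k = (i, EXECUTING)"
        using stp.ex_u[OF stp_s[of s2], of u k i] s2(2) by simp
      have tt2: "tstep n vstep txn init (S s2) (PDep k i b) = ((upd_status k (i, ABORTING) (S s2))
              \<lparr>txn_dependency := (txn_dependency (S s2))(b := insert k (txn_dependency (S s2) b))\<rparr>, PDec)"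
        using nb ek by simp
      have "pc (Suc s2) u = PDec \<and> S (Suc s2) = (upd_status k (i, ABORTING) (S s2))
              \<lparr>txn_dependency := (txn_dependency (S s2))(b := insert k (txn_dependency (S s2) b))\<rparr>"
        using trans[OF s2(3)[symmetric] tt2] by (simp only: prod.inject)
      hence "pc (Suc s2) u = PDec \<and> stat (Suc s2) k = (i, ABORTING)" by (simp add: upd_status_def)
      moreover have "Suc s2 > s" using s1(1) s2(1) by simp
      ultimately show ?thesis by blast
    qed
  qed
qed

lemma wf_s: "pc s t = PExec k i st wb wl rs \<Longrightarrow> wait_free vstep st"
  using invA_s[of s] unfolding invA_def i_wf_def by blast
lemma est_s: "data (S s) p k = Some ESTIMATE \<Longrightarrow> snd (stat s k) \<noteq> EXECUTED"
  using invA_s[of s] unfolding invA_def i_est_def by blast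
lemma ex_s: "exk (pc s t) = Some (k, i) \<Longrightarrow> stat s k = (i, EXECUTING) \<and> k < n"
  using invA_s[of s] unfolding invA_def i_ex_def by blast

lemma dep_prog:
  assumes u: "u < m" and p0: "pc s u = PDep k i b"
    and H: "\<forall>s'\<ge>s. \<forall>l b. mv_read (S s') l k = READ_ERROR b \<longrightarrow> (\<forall>s''\<ge>s'. snd (stat s'' b) \<noteq> EXECUTED)"
  shows "\<exists>s'>s. (\<exists>W rs' prev. pc s' u = PRW k i W rs' prev W) \<or> (pc s' u = PDec \<and> stat s' k = (i, ABORTING))"
proof -
  obtain s1 where s1: "s1 \<ge> s" "pc s1 u = PDep k i b"
      "tstep n vstep txn init (S s1) (PDep k i b) = (S (Suc s1), pc (Suc s1) u)"
    using next_pc[OF u p0] by blast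
  show ?thesis
  proof (cases "snd (stat s1 b) = EXECUTED")
    case True
    have tt: "tstep n vstep txn init (S s1) (PDep k i b) = (S s1, PExec k i (txn k) Map.empty [] [])"
      using True by simp
    have pc1: "pc (Suc s1) u = PExec k i (txn k) Map.empty [] []"
      using trans[OF s1(3)[symmetric] tt] by (simp only: prod.inject)
    have "k < n" using ex_s[of s1 u k i] s1(2) by simp
    hence wf: "wait_free vstep (txn k)" using wft by blast
    have H1: "\<forall>s'\<ge>Suc s1. \<forall>l b. mv_read (S s') l k = READ_ERROR b \<longrightarrow> (\<forall>s''\<ge>s'. snd (stat s'' b) \<noteq> EXECUTED)"
    proof (intro allI impI)
      fix s' l b s'' assume a: "Suc s1 \<le> s'" "mv_read (S s') l k = READ_ERROR b" "s' \<le> s''"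
      have "s \<le> s'" using s1(1) a(1) by simp
      thus "snd (stat s'' b) \<noteq> EXECUTED" using H a(2,3) by blast
    qed
    obtain s' where s': "s' > Suc s1" "(\<exists>W rs' prev. pc s' u = PRW k i W rs' prev W) \<or> (pc s' u = PDec \<and> stat s' k = (i, ABORTING))"
      using exec_prog[OF u wf pc1 H1] by blast
    have "s' > s" using s'(1) s1(1) by simp
    thus ?thesis using s'(2) by blast
  next
    case False
    have tt: "tstep n vstep txn init (S s1) (PDep k i b) = ((upd_status k (fst (stat s1 k), ABORTING) (S s1))
              \<lparr>txn_dependency := (txn_dependency (S s1))(b := insert k (txn_dependency (S s1) b))\<rparr>, PDec)"
      using False by simp
    have e: "pc (Suc s1) u = PDec \<and> S (Suc s1) = (upd_status k (fst (stat s1 k), ABORTING) (S s1))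
              \<lparr>txn_dependency := (txn_dependency (S s1))(b := insert k (txn_dependency (S s1) b))\<rparr>"
      using trans[OF s1(3)[symmetric] tt] by (simp only: prod.inject)
    have "stat s1 k = (i, EXECUTING)" using ex_s[of s1 u k i] s1(2) by simp
    hence "pc (Suc s1) u = PDec \<and> stat (Suc s1) k = (i, ABORTING)" using e by (simp add: upd_status_def)
    moreover have "Suc s1 > s" using s1(1) by simp
    ultimately show ?thesis by blast
  qed
qed

lemma H_const:
  assumes const: "\<forall>s\<ge>T. txn_status (S s) = txn_status (S T)" and s: "s \<ge> T"
  shows "\<forall>s'\<ge>s. \<forall>l b. mv_read (S s') l k = READ_ERROR b \<longrightarrow> (\<forall>s''\<ge>s'. snd (stat s'' b) \<noteq> EXECUTED)"
proof (intro allI impI)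
  fix s' l b s'' assume a: "s \<le> s'" "mv_read (S s') l k = READ_ERROR b" "s' \<le> s''"
  have "data (S s') l b = Some ESTIMATE" using mv_read_err[OF a(2)] by simp
  hence "snd (stat s' b) \<noteq> EXECUTED" by (rule est_s)
  moreover have "stat s'' b = stat s' b"
  proof -
    have t: "s'' \<ge> T" "s' \<ge> T" using a s by auto
    show ?thesis using const[rule_format, OF t(1)] const[rule_format, OF t(2)] by simp
  qed
  ultimately show "snd (stat s'' b) \<noteq> EXECUTED" by simp
qed

lemma prog_const:
  assumes const: "\<forall>s\<ge>T. txn_status (S s) = txn_status (S T)" and u: "u < m" and s0: "s0 \<ge> T"
  shows "\<exists>s\<ge>s0. pc s u = PLoop None \<or> pc s u = PJoined"
proof (rule wfp[where R="\<lambda>_. True" and f=rank and r=rlex, OF wf_rlex])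
  show True ..
next
  fix s assume ss: "s \<ge> s0" and ng: "\<not> (pc s u = PLoop None \<or> pc s u = PJoined)"
  have H: "\<forall>s'\<ge>s. \<forall>l b. mv_read (S s') l k = READ_ERROR b \<longrightarrow> (\<forall>s''\<ge>s'. snd (stat s'' b) \<noteq> EXECUTED)" for k
    using H_const[OF const, of s] ss s0 by simp
  show "\<exists>s'>s. (pc s' u = PLoop None \<or> pc s' u = PJoined) \<or> True \<and> (rank (pc s' u), rank (pc s u)) \<in> rlex"
  proof (cases "isex (pc s u)")
    case True
    show ?thesis
    proof (cases "pc s u")
      case (PExec k i st wb wl rs)
      obtain s' where s': "s' > s" "(\<exists>W rs' prev. pc s' u = PRW k i W rs' prev W) \<or> (pc s' u = PDec \<and> stat s' k = (i, ABORTING))"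
        using exec_prog[OF u wf_s[OF PExec] PExec H] by blast
      hence "(rank (pc s' u), rank (pc s u)) \<in> rlex" using PExec by (auto simp: rlex_def)
      thus ?thesis using s' by blast
    next
      case (PDep k i b)
      obtain s' where s': "s' > s" "(\<exists>W rs' prev. pc s' u = PRW k i W rs' prev W) \<or> (pc s' u = PDec \<and> stat s' k = (i, ABORTING))"
        using dep_prog[OF u PDep H] by blast
      hence "(rank (pc s' u), rank (pc s u)) \<in> rlex" using PDep by (auto simp: rlex_def)
      thus ?thesis using s' by blast
    qed (use True in auto)
  next
    case False
    have nj: "pc s u \<noteq> PJoined" using ng by simp
    obtain s1 where s1: "s1 \<ge> s" "pc s1 u = pc s u"
        "tstep n vstep txn init (S s1) (pc s u) = (S (Suc s1), pc (Suc s1) u)"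
      using next_pc[OF u refl nj] by blast
    have "txn_status (S (Suc s1)) = txn_status (S s1)"
    proof -
      have t: "Suc s1 \<ge> T" "s1 \<ge> T" using s1(1) ss s0 by auto
      show ?thesis using const[rule_format, OF t(1)] const[rule_format, OF t(2)] by simp
    qed
    from rank_dec[OF s1(3) this False] ng
    have "pc (Suc s1) u = PLoop None \<or> pc (Suc s1) u = PJoined \<or> (rank (pc (Suc s1) u), rank (pc s u)) \<in> rlex"
      by simp
    moreover have "Suc s1 > s" using s1(1) by simp
    ultimately show ?thesis by blast
  qed
qed

end


fun seg :: "('l, 'v, 's) pc \<Rightarrow> bool" where
  "seg (PF1 _ _ _) = True" | "seg (PF2 _ _ _ _ _) = True" | "seg (PF3 _ _ _ _) = True"
| "seg (PF4 _ _ _) = True" | "seg (PF5 _ _ _) = True" | "seg (PF6 _) = True" | "seg PF7 = True"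
| "seg (PC0 _ _) = True" | "seg (PC1 _ _ _) = True" | "seg (PS _ _) = True" | "seg (PDV _) = True"
| "seg (PDV2 _) = True" | "seg _ = False"

lemmas SPL2 = option.splits task.splits list.splits instr.splits rres.splits if_splits prod.splits

lemma seg_entry:
  assumes "tstep n vstep txn init \<sigma> p = (\<sigma>', p')" "\<not> seg p" "seg p'"
  shows "(\<exists>k i w. p = PF0 k i w \<and> txn_status \<sigma>' k = (i, EXECUTED))
    \<or> (\<exists>k i. p = PVA k i \<and> txn_status \<sigma> k = (i, EXECUTED) \<and> txn_status \<sigma>' k = (i, ABORTING))"
  using assms by (cases p) (auto simp: upd_status_def Let_def split: SPL2)

lemma val_change:
  assumes "tstep n vstep txn init \<sigma> p = (\<sigma>', p')" "validation_idx \<sigma>' \<noteq> validation_idx \<sigma>"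
  shows "(p = PVB2 \<and> validation_idx \<sigma>' = validation_idx \<sigma> + 1) \<or> seg p"
  using assms by (cases p) (auto simp: upd_status_def upd_data_def Let_def split: SPL2)

lemma exec_change2:
  assumes "tstep n vstep txn init \<sigma> p = (\<sigma>', p')" "execution_idx \<sigma>' \<noteq> execution_idx \<sigma>"
  shows "(p = PEB2 \<and> execution_idx \<sigma>' = execution_idx \<sigma> + 1) \<or> seg p"
  using assms by (cases p) (auto simp: upd_status_def upd_data_def Let_def split: SPL2)

lemma dcnt_change:
  assumes "tstep n vstep txn init \<sigma> p = (\<sigma>', p')" "decrease_cnt \<sigma>' \<noteq> decrease_cnt \<sigma>"
  shows "seg p"
  using assms by (cases p) (auto simp: upd_status_def upd_data_def Let_def split: SPL2)

lemma hold_entry: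
  assumes "tstep n vstep txn init \<sigma> p = (\<sigma>', p')" "\<not> holds p" "holds p'"
  shows "p = PVB1 \<or> p = PEB1"
  using assms by (cases p) (auto simp: Let_def split: SPL2)

lemma peb_entry:
  assumes "tstep n vstep txn init \<sigma> p = (\<sigma>', p')" "p \<noteq> PEB1" "p \<noteq> PEB2" "p' = PEB1 \<or> p' = PEB2"
  shows "p = PEB0 \<and> execution_idx \<sigma> < n"
  using assms by (cases p) (auto simp: upd_status_def Let_def split: SPL2)

lemma pvb_entry:
  assumes "tstep n vstep txn init \<sigma> p = (\<sigma>', p')" "p \<noteq> PVB1" "p \<noteq> PVB2" "p' = PVB1 \<or> p' = PVB2"
  shows "p = PVB0 \<and> validation_idx \<sigma> < n"
  using assms by (cases p) (auto simp: upd_status_def Let_def split: SPL2)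

lemma mono_bounded_const:
  fixes f :: "nat \<Rightarrow> nat"
  assumes mono: "\<And>s. s \<ge> T \<Longrightarrow> f s \<le> f (Suc s)" and bd: "\<And>s. s \<ge> T \<Longrightarrow> f s \<le> B"
  shows "\<exists>T'\<ge>T. \<forall>s\<ge>T'. f s = f T'"
proof -
  have m2: "s \<le> s' \<Longrightarrow> T \<le> s \<Longrightarrow> f s \<le> f s'" for s s'
  proof (induction s' rule: dec_induct)
    case (step x) thus ?case using mono[of x] by simp
  qed simp
  let ?A = "f ` {T..}"
  have fin: "finite ?A" by (rule finite_subset[of _ "{..B}"]) (use bd in auto)
  have ne: "?A \<noteq> {}" by auto
  obtain T' where T': "T' \<ge> T" "f T' = Max ?A" using Max_in[OF fin ne] by auto
  have "\<forall>s\<ge>T'. f s = f T'"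
  proof (intro allI impI)
    fix s assume "s \<ge> T'"
    hence "f T' \<le> f s" using m2[of T' s] T'(1) by simp
    moreover have "f s \<le> Max ?A" using fin \<open>s \<ge> T'\<close> T' by (intro Max_ge) auto
    ultimately show "f s = f T'" using T' by simp
  qed
  thus ?thesis using T' by blast
qed

context brun
begin

lemma join_s: "pc s t = PJoined \<Longrightarrow> done_marker (S s)"
  using invA_s[of s] unfolding invA_def i_join_def by blast

lemma free_s: "m \<le> t \<Longrightarrow> pc s t = PLoop None"
  using invA_s[of s] unfolding invA_def i_free_def by blast

lemma drain:
  fixes T :: nat and P :: "nat \<Rightarrow> nat \<Rightarrow> bool"
  assumes "\<forall>t<m. \<exists>st\<ge>T. \<forall>s\<ge>st. \<not> P s t"
  shows "\<exists>T'\<ge>T. \<forall>s\<ge>T'. \<forall>t<m. \<not> P s t"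
proof -
  obtain f where f: "\<forall>t<m. f t \<ge> T \<and> (\<forall>s\<ge>f t. \<not> P s t)" using assms by metis
  let ?T' = "T + (\<Sum>t<m. f t)"
  have "\<forall>t<m. f t \<le> ?T'"
  proof (intro allI impI)
    fix t assume "t < m"
    hence "f t \<le> (\<Sum>t<m. f t)" by (intro member_le_sum) auto
    thus "f t \<le> ?T'" by simp
  qed
  hence "\<forall>s\<ge>?T'. \<forall>t<m. \<not> P s t" using f by (meson le_trans)
  thus ?thesis by (intro exI[of _ ?T']) auto
qed

lemma no_reentry:
  fixes P :: "nat \<Rightarrow> bool"
  assumes step: "\<And>s. s \<ge> s0 \<Longrightarrow> \<not> P s \<Longrightarrow> \<not> P (Suc s)" and p0: "\<not> P s0"
  shows "\<forall>s\<ge>s0. \<not> P s"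
proof (intro allI impI)
  fix s assume "s \<ge> s0"
  thus "\<not> P s"
  proof (induction s rule: dec_induct)
    case base thus ?case using p0 .
  next
    case (step x) thus ?case using assms(1) by blast
  qed
qed

lemma adv:
  assumes "u < m" "pc s u = p" "p \<noteq> PJoined"
  shows "\<exists>a\<ge>s. pc (Suc a) u = snd (tstep n vstep txn init (S a) p) \<and> S (Suc a) = fst (tstep n vstep txn init (S a) p)"
proof -
  obtain a where a: "a \<ge> s" "tstep n vstep txn init (S a) p = (S (Suc a), pc (Suc a) u)"
    using next_pc[OF assms] by blast
  thus ?thesis by (intro exI[of _ a]) simp
qed

lemma nostall:
  assumes nd: "\<forall>s. \<not> done_marker (S s)" and m0: "0 < m"
    and c1: "\<And>s. s \<ge> T \<Longrightarrow> txn_status (S s) = txn_status (S T)"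
    and c2: "\<And>s. s \<ge> T \<Longrightarrow> execution_idx (S s) = execution_idx (S T)"
    and c3: "\<And>s. s \<ge> T \<Longrightarrow> validation_idx (S s) = validation_idx (S T)"
    and c4: "\<And>s. s \<ge> T \<Longrightarrow> decrease_cnt (S s) = decrease_cnt (S T)"
  shows False
proof -
  define E where "E = execution_idx (S T)"
  define V where "V = validation_idx (S T)"
  define C where "C = decrease_cnt (S T)"
  have tl: "pc s t \<noteq> PLoop None \<Longrightarrow> t < m" for s t using free_s by (meson not_le)
  have nj: "pc s t \<noteq> PJoined" for s t using join_s nd by blast
  have a1: "pc s t \<noteq> PVB2 \<and> pc s t \<noteq> PEB2" if "s \<ge> T" for s t
  proof (rule ccontr)
    assume "\<not> (pc s t \<noteq> PVB2 \<and> pc s t \<noteq> PEB2)"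
    hence h: "pc s t = PVB2 \<or> pc s t = PEB2" by simp
    hence t: "t < m" using tl[of s t] by auto
    from h show False
    proof
      assume h2: "pc s t = PVB2"
      obtain a where a: "a \<ge> s" "S (Suc a) = fst (tstep n vstep txn init (S a) PVB2)"
        using adv[OF t h2] by auto
      have "validation_idx (S (Suc a)) = validation_idx (S a) + 1" using a(2) by simp
      moreover have "validation_idx (S (Suc a)) = V" "validation_idx (S a) = V"
        using c3[of a] c3[of "Suc a"] a(1) that unfolding V_def by auto
      ultimately show False by simp
    next
      assume h2: "pc s t = PEB2"
      obtain a where a: "a \<ge> s" "S (Suc a) = fst (tstep n vstep txn init (S a) PEB2)"
        using adv[OF t h2] by auto
      have "execution_idx (S (Suc a)) = execution_idx (S a) + 1" using a(2) by simp
      moreover have "execution_idx (S (Suc a)) = E" "execution_idx (S a) = E"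
        using c2[of a] c2[of "Suc a"] a(1) that unfolding E_def by auto
      ultimately show False by simp
    qed
  qed
  have a2: "pc s t \<noteq> PVB1 \<and> pc s t \<noteq> PEB1" if "s \<ge> T" for s t
  proof (rule ccontr)
    assume "\<not> (pc s t \<noteq> PVB1 \<and> pc s t \<noteq> PEB1)"
    hence h: "pc s t = PVB1 \<or> pc s t = PEB1" by simp
    hence t: "t < m" using tl[of s t] by auto
    from h show False
    proof
      assume h2: "pc s t = PVB1"
      obtain a where a: "a \<ge> s" "pc (Suc a) t = snd (tstep n vstep txn init (S a) PVB1)"
        using adv[OF t h2] by auto
      hence "pc (Suc a) t = PVB2" by simp
      thus False using a1[of "Suc a" t] a(1) that by simp
    next
      assume h2: "pc s t = PEB1"
      obtain a where a: "a \<ge> s" "pc (Suc a) t = snd (tstep n vstep txn init (S a) PEB1)"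
        using adv[OF t h2] by auto
      hence "pc (Suc a) t = PEB2" by simp
      thus False using a1[of "Suc a" t] a(1) that by simp
    qed
  qed
  have cst: "\<forall>s\<ge>T. txn_status (S s) = txn_status (S T)" using c1 by blast
  have fr: "\<exists>st\<ge>T. \<forall>s\<ge>st. \<not> holds (pc s t)" if t: "t < m" for t
  proof -
    obtain s1 where s1: "s1 \<ge> T" "pc s1 t = PLoop None \<or> pc s1 t = PJoined"
      using prog_const[OF cst t order_refl] by blast
    hence h0: "\<not> holds (pc s1 t)" by auto
    have "\<forall>s\<ge>s1. \<not> holds (pc s t)"
    proof (rule no_reentry[where P="\<lambda>s. holds (pc s t)", OF _ h0])
      fix s assume ss: "s \<ge> s1" and nh: "\<not> holds (pc s t)"
      show "\<not> holds (pc (Suc s) t)"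
      proof (cases "sched s = t")
        case False thus ?thesis using other_eq[of t s] nh by simp
      next
        case True
        show ?thesis
        proof
          assume hh: "holds (pc (Suc s) t)"
          have "pc s t = PVB1 \<or> pc s t = PEB1"
            using hold_entry[OF step_eq[of s, unfolded True] nh hh] .
          thus False using a2[of s t] ss s1(1) by simp
        qed
      qed
    qed
    thus ?thesis using s1(1) by blast
  qed
  obtain T' where T': "T' \<ge> T" "\<forall>s\<ge>T'. \<forall>t<m. \<not> holds (pc s t)"
    using drain[of T "\<lambda>s t. holds (pc s t)"] fr by blast
  have na: "num_active_tasks (S s) = 0" if "s \<ge> T'" for s
  proof -
    have "{t. t < m \<and> holds (pc s t)} = {}" using T'(2) that by auto
    thus ?thesis using invB_s[of s] nd unfolding invB_def by simp
  qed
  obtain s1 where s1: "s1 \<ge> T'" "pc s1 0 = PLoop None"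
    using prog_const[OF cst m0, of T'] T'(1) nj by blast
  obtain b1 where b1: "b1 \<ge> s1" "pc (Suc b1) 0 = snd (tstep n vstep txn init (S b1) (PLoop None))"
    using adv[OF m0 s1(2)] by auto
  hence p1: "pc (Suc b1) 0 = PNT0" using nd by simp
  obtain b2 where b2: "b2 \<ge> Suc b1" "pc (Suc b2) 0 = snd (tstep n vstep txn init (S b2) PNT0)"
    using adv[OF m0 p1] by auto
  have vb2: "validation_idx (S b2) = V" using c3[of b2] b2 b1 s1 T' unfolding V_def by simp
  hence p2: "pc (Suc b2) 0 = PNT1 V" using b2 by simp
  obtain b3 where b3: "b3 \<ge> Suc b2" "pc (Suc b3) 0 = snd (tstep n vstep txn init (S b3) (PNT1 V))"
    using adv[OF m0 p2] by auto
  have eb3: "execution_idx (S b3) = E" using c2[of b3] b3 b2 b1 s1 T' unfolding E_def by simp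
  have p3: "pc (Suc b3) 0 = (if V < E then PVB0 else PEB0)" using b3 eb3 by simp
  have "n \<le> E \<and> n \<le> V \<and> (\<exists>b4\<ge>Suc b3. pc (Suc b4) 0 = PCD0)"
  proof (cases "V < E")
    case True
    hence p3': "pc (Suc b3) 0 = PVB0" using p3 by simp
    obtain b4 where b4: "b4 \<ge> Suc b3" "pc (Suc b4) 0 = snd (tstep n vstep txn init (S b4) PVB0)"
      using adv[OF m0 p3'] by auto
    have "validation_idx (S b4) = V" using c3[of b4] b4 b3 b2 b1 s1 T' unfolding V_def by simp
    hence "pc (Suc b4) 0 = (if n \<le> V then PCD0 else PVB1)" using b4 by simp
    moreover have "pc (Suc b4) 0 \<noteq> PVB1" using a2[of "Suc b4" 0] b4 b3 b2 b1 s1 T' by simp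
    ultimately have "n \<le> V" "pc (Suc b4) 0 = PCD0" by (auto split: if_splits)
    thus ?thesis using True b4(1) by auto
  next
    case False
    hence p3': "pc (Suc b3) 0 = PEB0" using p3 by simp
    obtain b4 where b4: "b4 \<ge> Suc b3" "pc (Suc b4) 0 = snd (tstep n vstep txn init (S b4) PEB0)"
      using adv[OF m0 p3'] by auto
    have "execution_idx (S b4) = E" using c2[of b4] b4 b3 b2 b1 s1 T' unfolding E_def by simp
    hence "pc (Suc b4) 0 = (if n \<le> E then PCD0 else PEB1)" using b4 by simp
    moreover have "pc (Suc b4) 0 \<noteq> PEB1" using a2[of "Suc b4" 0] b4 b3 b2 b1 s1 T' by simp
    ultimately have "n \<le> E" "pc (Suc b4) 0 = PCD0" by (auto split: if_splits)
    thus ?thesis using False b4(1) by auto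
  qed
  then obtain b4 where nE: "n \<le> E" and nV: "n \<le> V" and b4: "b4 \<ge> Suc b3" "pc (Suc b4) 0 = PCD0" by blast
  have ge: "x \<ge> b4 \<Longrightarrow> x \<ge> T'" for x using b4 b3 b2 b1 s1 by simp
  obtain b5 where b5: "b5 \<ge> Suc b4" "pc (Suc b5) 0 = snd (tstep n vstep txn init (S b5) PCD0)"
    using adv[OF m0 b4(2)] by auto
  have "decrease_cnt (S b5) = C" using c4[of b5] ge[of b5] b5 T' unfolding C_def by simp
  hence p5: "pc (Suc b5) 0 = PCD1 C" using b5 by simp
  obtain b6 where b6: "b6 \<ge> Suc b5" "pc (Suc b6) 0 = snd (tstep n vstep txn init (S b6) (PCD1 C))"
    using adv[OF m0 p5] by auto
  have "execution_idx (S b6) = E" using c2[of b6] ge[of b6] b6 b5 T' unfolding E_def by simp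
  hence p6: "pc (Suc b6) 0 = PCD2 C E" using b6 by simp
  obtain b7 where b7: "b7 \<ge> Suc b6" "pc (Suc b7) 0 = snd (tstep n vstep txn init (S b7) (PCD2 C E))"
    using adv[OF m0 p6] by auto
  have "validation_idx (S b7) = V" using c3[of b7] ge[of b7] b7 b6 b5 T' unfolding V_def by simp
  hence p7: "pc (Suc b7) 0 = PCD3 C" using b7 nE nV by simp
  obtain b8 where b8: "b8 \<ge> Suc b7" "pc (Suc b8) 0 = snd (tstep n vstep txn init (S b8) (PCD3 C))"
    using adv[OF m0 p7] by auto
  have "num_active_tasks (S b8) = 0" using na ge[of b8] b8 b7 b6 b5 by simp
  hence p8: "pc (Suc b8) 0 = PCD4 C" using b8 by simp
  obtain b9 where b9: "b9 \<ge> Suc b8" "pc (Suc b9) 0 = snd (tstep n vstep txn init (S b9) (PCD4 C))"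
    using adv[OF m0 p8] by auto
  have "decrease_cnt (S b9) = C" using c4[of b9] ge[of b9] b9 b8 b7 b6 b5 T' unfolding C_def by simp
  hence p9: "pc (Suc b9) 0 = PCD5" using b9 by simp
  obtain b10 where b10: "b10 \<ge> Suc b9" "S (Suc b10) = fst (tstep n vstep txn init (S b10) PCD5)"
    using adv[OF m0 p9] by auto
  hence "done_marker (S (Suc b10))" by simp
  thus False using nd by blast
qed

lemma cst_shift:
  fixes f :: "nat \<Rightarrow> 'a"
  assumes "\<forall>s\<ge>T. f s = f T" "T \<le> T'"
  shows "\<forall>s\<ge>T'. f s = f T'"
proof (intro allI impI)
  fix s assume a: "T' \<le> s"
  have "T \<le> s" using assms(2) a by simp
  hence e1: "f s = f T" using assms(1) by blast
  have e2: "f T' = f T" using assms by blast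
  show "f s = f T'" using e1 e2 by simp
qed

lemma const_from:
  fixes f :: "nat \<Rightarrow> 'a"
  assumes "\<And>s. s \<ge> T \<Longrightarrow> f (Suc s) = f s"
  shows "s \<ge> T \<Longrightarrow> f s = f T"
proof (induction s rule: dec_induct)
  case (step x) thus ?case using assms[of x] by simp
qed simp

lemma idx_ev_const:
  fixes g :: "('l, 'v) shared \<Rightarrow> nat" and Qa Qb :: "('l, 'v, 's) pc"
  assumes cst: "\<forall>s\<ge>T. txn_status (S s) = txn_status (S T)"
    and chg: "\<And>s. s \<ge> T \<Longrightarrow> g (S (Suc s)) \<noteq> g (S s) \<Longrightarrow> pc s (sched s) = Qb \<and> g (S (Suc s)) = g (S s) + 1"
    and ent: "\<And>s t. s \<ge> T \<Longrightarrow> pc s t \<noteq> Qa \<Longrightarrow> pc s t \<noteq> Qb \<Longrightarrow> sched s = t \<Longrightarrow>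
        pc (Suc s) t = Qa \<or> pc (Suc s) t = Qb \<Longrightarrow> g (S s) < n"
    and q: "Qa \<noteq> PLoop None" "Qa \<noteq> PJoined" "Qb \<noteq> PLoop None" "Qb \<noteq> PJoined"
  shows "\<exists>T'\<ge>T. \<forall>s\<ge>T'. g (S s) = g (S T')"
proof -
  have mono: "g (S s) \<le> g (S (Suc s))" if "s \<ge> T" for s
    using chg[OF that] by (cases "g (S (Suc s)) = g (S s)") auto
  show ?thesis
  proof (cases "\<exists>s2\<ge>T. n \<le> g (S s2)")
    case False
    hence "\<And>s. s \<ge> T \<Longrightarrow> g (S s) \<le> n" by auto
    from mono_bounded_const[of T "\<lambda>s. g (S s)", OF mono this] show ?thesis by blast
  next
    case True
    then obtain s2 where s2: "s2 \<ge> T" "n \<le> g (S s2)" by blast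
    have m2: "s2 \<le> s \<Longrightarrow> g (S s2) \<le> g (S s)" for s
    proof (induction s rule: dec_induct)
      case (step x) thus ?case using mono[of x] s2(1) by simp
    qed simp
    have fr: "\<exists>st\<ge>s2. \<forall>s\<ge>st. \<not> (pc s t = Qa \<or> pc s t = Qb)" if t: "t < m" for t
    proof -
      have c2: "\<forall>s\<ge>s2. txn_status (S s) = txn_status (S s2)"
        using cst_shift[where f="\<lambda>s. txn_status (S s)", OF cst s2(1)] .
      obtain s1 where s1: "s1 \<ge> s2" "pc s1 t = PLoop None \<or> pc s1 t = PJoined"
        using prog_const[OF c2 t order_refl] by blast
      hence h0: "\<not> (pc s1 t = Qa \<or> pc s1 t = Qb)" using q by auto
      have "\<forall>s\<ge>s1. \<not> (pc s t = Qa \<or> pc s t = Qb)"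
      proof (rule no_reentry[where P="\<lambda>s. pc s t = Qa \<or> pc s t = Qb", OF _ h0])
        fix s assume ss: "s \<ge> s1" and nh: "\<not> (pc s t = Qa \<or> pc s t = Qb)"
        show "\<not> (pc (Suc s) t = Qa \<or> pc (Suc s) t = Qb)"
        proof (cases "sched s = t")
          case False thus ?thesis using other_eq[of t s] nh by simp
        next
          case True
          show ?thesis
          proof
            assume "pc (Suc s) t = Qa \<or> pc (Suc s) t = Qb"
            hence "g (S s) < n" using ent[of s t] nh True ss s1(1) s2(1) by simp
            moreover have "n \<le> g (S s)" using m2[of s] s2(2) ss s1(1) by simp
            ultimately show False by simp
          qed
        qed
      qed
      thus ?thesis using s1(1) by blast
    qed
    obtain T5 where T5: "T5 \<ge> s2" "\<forall>s\<ge>T5. \<forall>t<m. \<not> (pc s t = Qa \<or> pc s t = Qb)"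
      using drain[of s2 "\<lambda>s t. pc s t = Qa \<or> pc s t = Qb"] fr by blast
    have "g (S (Suc s)) = g (S s)" if "s \<ge> T5" for s
    proof (rule ccontr)
      assume "g (S (Suc s)) \<noteq> g (S s)"
      hence "pc s (sched s) = Qb" using chg[of s] that T5(1) s2(1) by simp
      thus False using T5(2) that sched_lt[of s] by blast
    qed
    hence "\<forall>s\<ge>T5. g (S s) = g (S T5)" using const_from[where f="\<lambda>s. g (S s)"] by blast
    moreover have "T5 \<ge> T" using T5(1) s2(1) by simp
    ultimately show ?thesis by blast
  qed
qed

lemma stall:
  assumes nd: "\<forall>s. \<not> done_marker (S s)" and m0: "0 < m"
    and cst: "\<forall>s\<ge>T. txn_status (S s) = txn_status (S T)"
  shows False
proof -
  have nj: "pc s t \<noteq> PJoined" for s t using join_s nd by blast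
  have cs: "s \<ge> T \<Longrightarrow> txn_status (S s) = txn_status (S T)" for s using cst by blast
  have fr: "\<exists>st\<ge>T. \<forall>s\<ge>st. \<not> seg (pc s t)" if t: "t < m" for t
  proof -
    obtain s1 where s1: "s1 \<ge> T" "pc s1 t = PLoop None \<or> pc s1 t = PJoined"
      using prog_const[OF cst t order_refl] by blast
    hence h0: "\<not> seg (pc s1 t)" by auto
    have "\<forall>s\<ge>s1. \<not> seg (pc s t)"
    proof (rule no_reentry[where P="\<lambda>s. seg (pc s t)", OF _ h0])
      fix s assume ss: "s \<ge> s1" and nh: "\<not> seg (pc s t)"
      show "\<not> seg (pc (Suc s) t)"
      proof (cases "sched s = t")
        case False thus ?thesis using other_eq[of t s] nh by simp
      next
        case True
        show ?thesis
        proof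
          assume hh: "seg (pc (Suc s) t)"
          have eqs: "txn_status (S (Suc s)) = txn_status (S s)" using cs[of s] cs[of "Suc s"] ss s1 by simp
          from seg_entry[OF step_eq[of s, unfolded True] nh hh] show False
          proof (elim disjE exE conjE)
            fix k i w assume a: "pc s t = PF0 k i w" "txn_status (S (Suc s)) k = (i, EXECUTED)"
            have "stat s k = (i, EXECUTING)" using ex_s[of s t k i] a(1) by simp
            thus False using a(2) eqs by simp
          next
            fix k i assume a: "pc s t = PVA k i" "txn_status (S s) k = (i, EXECUTED)"
                "txn_status (S (Suc s)) k = (i, ABORTING)"
            thus False using eqs by simp
          qed
        qed
      qed
    qed
    thus ?thesis using s1(1) by blast
  qed
  obtain T4 where T4: "T4 \<ge> T" "\<forall>s\<ge>T4. \<forall>t<m. \<not> seg (pc s t)"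
    using drain[of T "\<lambda>s t. seg (pc s t)"] fr by blast
  have nseg: "s \<ge> T4 \<Longrightarrow> \<not> seg (pc s (sched s))" for s using T4 sched_lt by blast
  have cst4: "\<forall>s\<ge>T4. txn_status (S s) = txn_status (S T4)"
    using cst_shift[where f="\<lambda>s. txn_status (S s)", OF cst T4(1)] .
  obtain T5 where T5: "T5 \<ge> T4" "\<forall>s\<ge>T5. execution_idx (S s) = execution_idx (S T5)"
  proof -
    have "\<exists>T'\<ge>T4. \<forall>s\<ge>T'. execution_idx (S s) = execution_idx (S T')"
    proof (rule idx_ev_const[where Qa=PEB1 and Qb=PEB2, OF cst4])
      fix s assume "s \<ge> T4" "execution_idx (S (Suc s)) \<noteq> execution_idx (S s)"
      thus "pc s (sched s) = PEB2 \<and> execution_idx (S (Suc s)) = execution_idx (S s) + 1"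
        using exec_change2[OF step_eq[of s]] nseg by blast
    next
      fix s t assume a: "s \<ge> T4" "pc s t \<noteq> PEB1" "pc s t \<noteq> PEB2" "sched s = t"
        "pc (Suc s) t = PEB1 \<or> pc (Suc s) t = PEB2"
      thus "execution_idx (S s) < n" using peb_entry[OF step_eq[of s, unfolded a(4)]] by blast
    qed auto
    thus ?thesis using that by blast
  qed
  have cst5: "\<forall>s\<ge>T5. txn_status (S s) = txn_status (S T5)"
    using cst_shift[where f="\<lambda>s. txn_status (S s)", OF cst4 T5(1)] .
  obtain T6 where T6: "T6 \<ge> T5" "\<forall>s\<ge>T6. validation_idx (S s) = validation_idx (S T6)"
  proof -
    have "\<exists>T'\<ge>T5. \<forall>s\<ge>T'. validation_idx (S s) = validation_idx (S T')"
    proof (rule idx_ev_const[where Qa=PVB1 and Qb=PVB2, OF cst5])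
      fix s assume "s \<ge> T5" "validation_idx (S (Suc s)) \<noteq> validation_idx (S s)"
      thus "pc s (sched s) = PVB2 \<and> validation_idx (S (Suc s)) = validation_idx (S s) + 1"
      proof -
        have "s \<ge> T4" using \<open>s \<ge> T5\<close> T5(1) by simp
        thus ?thesis using val_change[OF step_eq[of s]] nseg[of s] \<open>validation_idx (S (Suc s)) \<noteq> validation_idx (S s)\<close> by blast
      qed
    next
      fix s t assume a: "s \<ge> T5" "pc s t \<noteq> PVB1" "pc s t \<noteq> PVB2" "sched s = t"
        "pc (Suc s) t = PVB1 \<or> pc (Suc s) t = PVB2"
      thus "validation_idx (S s) < n" using pvb_entry[OF step_eq[of s, unfolded a(4)]] by blast
    qed auto
    thus ?thesis using that by blast
  qed
  have d: "decrease_cnt (S (Suc s)) = decrease_cnt (S s)" if "s \<ge> T6" for s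
  proof (rule ccontr)
    assume "decrease_cnt (S (Suc s)) \<noteq> decrease_cnt (S s)"
    from dcnt_change[OF step_eq[of s] this] show False using nseg[of s] that T6(1) T5(1) by simp
  qed
  have d6: "s \<ge> T6 \<Longrightarrow> decrease_cnt (S s) = decrease_cnt (S T6)" for s
    using const_from[where f="\<lambda>s. decrease_cnt (S s)", OF d] by blast
  show False
  proof (rule nostall[OF nd m0, of T6])
    fix s assume s: "s \<ge> T6"
    show "txn_status (S s) = txn_status (S T6)"
      using cst_shift[where f="\<lambda>s. txn_status (S s)", OF cst5 T6(1)] s by blast
    show "execution_idx (S s) = execution_idx (S T6)"
      using cst_shift[where f="\<lambda>s. execution_idx (S s)", OF T5(2) T6(1)] s by blast
    show "validation_idx (S s) = validation_idx (S T6)" using T6(2) s by blast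
    show "decrease_cnt (S s) = decrease_cnt (S T6)" using d6 s .
  qed
qed

end


context stp
begin

lemma inc_step:
  assumes "snd (txn_status \<sigma> k) = READY_TO_EXECUTE" "snd (txn_status \<sigma>' k) \<noteq> READY_TO_EXECUTE"
  shows "\<exists>i. p' = PLoop (Some (ExecTask k i))"
proof -
  have c: "txn_status \<sigma>' k \<noteq> txn_status \<sigma> k" using assms by auto
  from status_other[OF c] show ?thesis
  proof (elim disjE exE conjE)
    assume "pcs u = PTI k" thus ?thesis using st assms by (auto split: if_splits)
  next
    assume "pcs u = PVT k" thus ?thesis using st assms by (auto split: if_splits)
  next
    fix i assume "exk (pcs u) = Some (k, i)" thus ?thesis using ex_u assms by fastforce
  next
    fix b i w L Ds assume "pcs u = PF2 b i w (k # L) Ds" thus ?thesis using pf2_u assms by fastforce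
  next
    fix i assume "pcs u = PVA k i" "txn_status \<sigma> k = (i, EXECUTED)" thus ?thesis using assms by simp
  next
    fix i assume "pcs u = PS k i" thus ?thesis using vab_u[of u k i] assms by simp
  qed
qed

end

context brun
begin

lemma hi_s: "n \<le> k \<Longrightarrow> stat s k = (0, READY_TO_EXECUTE)"
  using invA_s[of s] unfolding invA_def i_hi_def by blast

lemma phi_const:
  assumes noinc: "\<And>s k. s \<ge> T \<Longrightarrow> snd (stat s k) = READY_TO_EXECUTE \<Longrightarrow> snd (stat (Suc s) k) = READY_TO_EXECUTE"
  shows "\<exists>T'\<ge>T. \<forall>s\<ge>T'. txn_status (S s) = txn_status (S T')"
proof -
  define Phi where "Phi s = (\<Sum>k<n. phi (snd (stat s k)))" for s
  have pk: "phi (snd (stat (Suc s) k)) \<le> phi (snd (stat s k)) \<and>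
      (stat (Suc s) k \<noteq> stat s k \<longrightarrow> phi (snd (stat (Suc s) k)) < phi (snd (stat s k)))"
    if "s \<ge> T" for s k
  proof (cases "stat (Suc s) k = stat s k")
    case False
    have lg: "legal (stat s k) (stat (Suc s) k)"
      using stp.status_legal[OF stp_s[of s] False] .
    have "snd (stat s k) \<noteq> READY_TO_EXECUTE"
    proof
      assume r: "snd (stat s k) = READY_TO_EXECUTE"
      hence "snd (stat (Suc s) k) = READY_TO_EXECUTE" using noinc that by blast
      thus False using lg r by (auto simp: legal_def)
    qed
    thus ?thesis using legal_phi[OF lg] False by simp
  qed simp
  have pm: "Phi (Suc s) \<le> Phi s" if "s \<ge> T" for s
    unfolding Phi_def by (rule sum_mono) (use pk that in blast)
  have ps: "Phi (Suc s) < Phi s" if "s \<ge> T" "k < n" "stat (Suc s) k \<noteq> stat s k" for s k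
    unfolding Phi_def by (rule sum_strict_mono_ex1) (use pk that in auto)
  define f where "f s = Phi T - Phi s" for s
  have pT: "Phi s \<le> Phi T" if "s \<ge> T" for s
    using that
  proof (induction s rule: dec_induct)
    case (step x) thus ?case using pm[of x] by simp
  qed simp
  have fm: "f s \<le> f (Suc s)" if "s \<ge> T" for s unfolding f_def using pm[OF that] pT[OF that] by simp
  have fb: "f s \<le> Phi T" if "s \<ge> T" for s unfolding f_def by simp
  obtain T' where T': "T' \<ge> T" "\<forall>s\<ge>T'. f s = f T'" using mono_bounded_const[of T f, OF fm fb] by blast
  have same: "txn_status (S (Suc s)) = txn_status (S s)" if "s \<ge> T'" for s
  proof (rule ext)
    fix k
    show "stat (Suc s) k = stat s k"
    proof (cases "k < n")
      case True
      show ?thesis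
      proof (rule ccontr)
        assume "stat (Suc s) k \<noteq> stat s k"
        hence "Phi (Suc s) < Phi s" using ps[of s k] that T' True by simp
        moreover have "f (Suc s) = f T'" "f s = f T'"
          using T'(2)[rule_format, of s] T'(2)[rule_format, of "Suc s"] that by auto
        moreover have "Phi s \<le> Phi T" "Phi (Suc s) \<le> Phi T" using pT[of s] pT[of "Suc s"] T'(1) that by auto
        ultimately show False unfolding f_def by simp
      qed
    next
      case False thus ?thesis using hi_s by simp
    qed
  qed
  have "\<forall>s\<ge>T'. txn_status (S s) = txn_status (S T')"
    using const_from[where f="\<lambda>s. txn_status (S s)", OF same] by blast
  thus ?thesis using T'(1) by blast
qed

lemma loop_done:
  assumes "pc s t = PLoop x" "done_marker (S s)"
  shows "s' \<ge> s \<Longrightarrow> pc s' t = PLoop x \<or> pc s' t = PJoined"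
proof (induction s' rule: dec_induct)
  case base thus ?case using assms by simp
next
  case (step y)
  have dy: "done_marker (S y)" using done_mono_s[OF step.hyps(1) assms(2)] .
  show ?case
  proof (cases "sched y = t")
    case False thus ?thesis using other_eq[of t y] step.IH by simp
  next
    case True
    have "tstep n vstep txn init (S y) (pc y t) = (S (Suc y), pc (Suc y) t)" using step_eq[of y] True by simp
    thus ?thesis using step.IH dy by auto
  qed
qed

lemma part2:
  assumes d: "done_marker (S sd)" and t: "t < m"
  shows "\<exists>s. joined (\<rho> s) t"
proof -
  have fr: "\<exists>st\<ge>sd. \<forall>s\<ge>st. \<not> (sched s = u \<and> (\<exists>k. snd (stat s k) = READY_TO_EXECUTE \<and> snd (stat (Suc s) k) \<noteq> READY_TO_EXECUTE))"
    if u: "u < m" for u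
  proof (cases "\<exists>s\<ge>sd. sched s = u \<and> (\<exists>k. snd (stat s k) = READY_TO_EXECUTE \<and> snd (stat (Suc s) k) \<noteq> READY_TO_EXECUTE)")
    case False thus ?thesis by blast
  next
    case True
    then obtain s k where s: "s \<ge> sd" "sched s = u" "snd (stat s k) = READY_TO_EXECUTE" "snd (stat (Suc s) k) \<noteq> READY_TO_EXECUTE"
      by blast
    obtain i where pi: "pc (Suc s) u = PLoop (Some (ExecTask k i))"
      using stp.inc_step[OF stp_s[of s] s(3,4)] s(2) by auto
    have ds: "done_marker (S (Suc s))" using done_mono_s[OF _ d] s(1) by simp
    have "\<forall>s'\<ge>Suc s. \<not> (sched s' = u \<and> (\<exists>k. snd (stat s' k) = READY_TO_EXECUTE \<and> snd (stat (Suc s') k) \<noteq> READY_TO_EXECUTE))"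
    proof (intro allI impI notI)
      fix s' assume a: "Suc s \<le> s'" "sched s' = u \<and> (\<exists>k. snd (stat s' k) = READY_TO_EXECUTE \<and> snd (stat (Suc s') k) \<noteq> READY_TO_EXECUTE)"
      then obtain k' where k': "snd (stat s' k') = READY_TO_EXECUTE" "snd (stat (Suc s') k') \<noteq> READY_TO_EXECUTE" by blast
      obtain i' where "pc (Suc s') u = PLoop (Some (ExecTask k' i'))"
        using stp.inc_step[OF stp_s[of s'] k'] a by auto
      moreover have "pc s' u = PLoop (Some (ExecTask k i)) \<or> pc s' u = PJoined"
        using loop_done[OF pi ds a(1)] .
      moreover have "tstep n vstep txn init (S s') (pc s' u) = (S (Suc s'), pc (Suc s') u)"
        using step_eq[of s'] a by simp
      moreover have "done_marker (S s')" using done_mono_s[OF _ ds] a(1) by simp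
      ultimately show False by auto
    qed
    thus ?thesis using s(1) by (intro exI[of _ "Suc s"]) auto
  qed
  obtain T where T: "T \<ge> sd" "\<forall>s\<ge>T. \<forall>u<m. \<not> (sched s = u \<and> (\<exists>k. snd (stat s k) = READY_TO_EXECUTE \<and> snd (stat (Suc s) k) \<noteq> READY_TO_EXECUTE))"
    using drain[of sd "\<lambda>s u. sched s = u \<and> (\<exists>k. snd (stat s k) = READY_TO_EXECUTE \<and> snd (stat (Suc s) k) \<noteq> READY_TO_EXECUTE)"] fr
    by blast
  have noinc: "snd (stat (Suc s) k) = READY_TO_EXECUTE" if "s \<ge> T" "snd (stat s k) = READY_TO_EXECUTE" for s k
    using T(2) that sched_lt[of s] by blast
  obtain T' where T': "T' \<ge> T" "\<forall>s\<ge>T'. txn_status (S s) = txn_status (S T')"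
    using phi_const[OF noinc] by blast
  obtain s1 where s1: "s1 \<ge> T'" "pc s1 t = PLoop None \<or> pc s1 t = PJoined"
    using prog_const[OF T'(2) t order_refl] by blast
  show ?thesis
  proof (cases "pc s1 t = PJoined")
    case True thus ?thesis unfolding joined_def by blast
  next
    case False
    hence p: "pc s1 t = PLoop None" using s1 by simp
    have ds: "done_marker (S s1)" using done_mono_s[OF _ d] s1(1) T'(1) T(1) by simp
    obtain a where a: "a \<ge> s1" "pc (Suc a) t = snd (tstep n vstep txn init (S a) (PLoop None))"
      using adv[OF t p] by auto
    have "done_marker (S a)" using done_mono_s[OF a(1) ds] .
    hence "pc (Suc a) t = PJoined" using a by simp
    thus ?thesis unfolding joined_def by blast
  qed
qed

end


fun rsof :: "('l, 'v, 's) pc \<Rightarrow> (nat \<times> nat \<times> 'l rset) option" where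
  "rsof (PExec k i _ _ _ rs) = Some (k, i, rs)"
| "rsof (PRW k i _ rs _ _) = Some (k, i, rs)"
| "rsof (PRD k i _ rs _ _) = Some (k, i, rs)"
| "rsof (PRL k i _ rs _) = Some (k, i, rs)"
| "rsof (PRR k i rs _) = Some (k, i, rs)"
| "rsof _ = None"

definition Jst :: "nat \<Rightarrow> nat \<Rightarrow> ('l \<times> version option \<Rightarrow> bool) \<Rightarrow> ('l, 'v) shared
    \<Rightarrow> ('l, 'v, 's) pcs \<Rightarrow> bool" where
  "Jst j iT Rok \<sigma> pcs \<longleftrightarrow>
    (\<forall>t i b. pcs t = PDep j i b \<longrightarrow> i \<le> iT)
  \<and> (\<forall>t i rs. rsof (pcs t) = Some (j, i, rs) \<longrightarrow> iT < i \<longrightarrow> (\<forall>e\<in>set rs. Rok e))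
  \<and> (\<forall>i. txn_status \<sigma> j = (i, EXECUTED) \<longrightarrow> iT < i \<longrightarrow> (\<forall>e\<in>set (last_read_set \<sigma> j). Rok e))
  \<and> (\<forall>t i w. pcs t = PF0 j i w \<longrightarrow> iT < i \<longrightarrow> (\<forall>e\<in>set (last_read_set \<sigma> j). Rok e))
  \<and> (\<forall>t i RS. pcs t = PV1 j i RS \<longrightarrow> txn_status \<sigma> j = (i, EXECUTED) \<longrightarrow> iT < i \<longrightarrow> (\<forall>e\<in>set RS. Rok e))
  \<and> (\<forall>t i. pcs t = PVA j i \<longrightarrow> txn_status \<sigma> j = (i, EXECUTED) \<longrightarrow> i \<le> iT)
  \<and> fst (txn_status \<sigma> j) \<le> iT + 1 \<and> (\<forall>i. txn_status \<sigma> j = (i, ABORTING) \<longrightarrow> i \<le> iT)"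

context stp
begin

lemma vph_status_same:
  assumes "vph (pcs t) = Some (j, i)" "txn_status \<sigma>' j = (i, EXECUTED)"
  shows "txn_status \<sigma> j = (i, EXECUTED)"
proof (rule ccontr)
  assume c: "txn_status \<sigma> j \<noteq> (i, EXECUTED)"
  hence ch: "txn_status \<sigma>' j \<noteq> txn_status \<sigma> j" using assms(2) by simp
  have lg: "legal (txn_status \<sigma> j) (i, EXECUTED)" using status_legal[OF ch] assms(2) by simp
  hence "txn_status \<sigma> j = (i, EXECUTING)" by (cases "txn_status \<sigma> j") (auto simp: legal_def)
  moreover have "code (i, EXECUTED) \<le> code (txn_status \<sigma> j)" using vph_u[OF assms(1)] by simp
  ultimately show False by (simp add: code_def)
qed

lemma J_pres:
  assumes J: "Jst j iT Rok \<sigma> pcs" and H: "\<forall>e. read_ok \<sigma> j e = Rok e"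
    and HE: "\<forall>l b. mv_read \<sigma> l j \<noteq> READ_ERROR b"
  shows "Jst j iT Rok \<sigma>' (pcs(u := p'))"
proof -
  have J1: "\<And>t i b. pcs t = PDep j i b \<Longrightarrow> i \<le> iT"
   and J2: "\<And>t i rs. rsof (pcs t) = Some (j, i, rs) \<Longrightarrow> iT < i \<Longrightarrow> (\<forall>e\<in>set rs. Rok e)"
   and J3: "\<And>i. txn_status \<sigma> j = (i, EXECUTED) \<Longrightarrow> iT < i \<Longrightarrow> (\<forall>e\<in>set (last_read_set \<sigma> j). Rok e)"
   and J4: "\<And>t i w. pcs t = PF0 j i w \<Longrightarrow> iT < i \<Longrightarrow> (\<forall>e\<in>set (last_read_set \<sigma> j). Rok e)"
   and J5: "\<And>t i RS. pcs t = PV1 j i RS \<Longrightarrow> txn_status \<sigma> j = (i, EXECUTED) \<Longrightarrow> iT < i \<Longrightarrow> (\<forall>e\<in>set RS. Rok e)"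
   and J6: "\<And>t i. pcs t = PVA j i \<Longrightarrow> txn_status \<sigma> j = (i, EXECUTED) \<Longrightarrow> i \<le> iT"
   and J7: "fst (txn_status \<sigma> j) \<le> iT + 1"
   and J8: "\<And>i. txn_status \<sigma> j = (i, ABORTING) \<Longrightarrow> i \<le> iT"
    using J unfolding Jst_def by blast+
  have rok_ok: "mv_read \<sigma> l j = OK ver v \<Longrightarrow> Rok (l, Some ver)" for l ver v
    using H[rule_format, of "(l, Some ver)"] by (simp add: read_ok_def)
  have rok_nf: "mv_read \<sigma> l j = NOT_FOUND \<Longrightarrow> Rok (l, None)" for l
    using H[rule_format, of "(l, None)"] by (simp add: read_ok_def)
  have c1: "i \<le> iT" if h: "(pcs(u := p')) t = PDep j i b" for t i b
  proof (cases "t = u")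
    case True
    hence "p' = PDep j i b" using h by simp
    thus ?thesis using st HE J1[of u]
      by (cases "pcs u") (auto simp: upd_status_def upd_data_def Let_def split: SPL)
  qed (use h J1 in simp)
  have c2: "\<forall>e\<in>set rs. Rok e" if h: "rsof ((pcs(u := p')) t) = Some (j, i, rs)" "iT < i" for t i rs
  proof (cases "t = u")
    case True
    hence h': "rsof p' = Some (j, i, rs)" using h by simp
    show ?thesis using st h' h(2) J2[of u] rok_ok rok_nf
      by (cases "pcs u") (auto simp: upd_status_def upd_data_def Let_def split: SPL)
  qed (use h J2 in simp)
  have lrs: "last_read_set \<sigma>' j = last_read_set \<sigma> j \<or> (\<exists>i rs w. pcs u = PRR j i rs w)"
    using lrs_change by blast
  have c3: "\<forall>e\<in>set (last_read_set \<sigma>' j). Rok e" if h: "txn_status \<sigma>' j = (i, EXECUTED)" "iT < i" for i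
  proof (cases "txn_status \<sigma>' j = txn_status \<sigma> j")
    case True
    have "last_read_set \<sigma>' j = last_read_set \<sigma> j"
    proof (rule ccontr)
      assume "last_read_set \<sigma>' j \<noteq> last_read_set \<sigma> j"
      then obtain i' rs w where "pcs u = PRR j i' rs w" using lrs by blast
      hence "txn_status \<sigma> j = (i', EXECUTING)" using ex_u[of u j i'] by simp
      thus False using True h by simp
    qed
    thus ?thesis using J3[of i] True h by simp
  next
    case False
    have lg: "legal (txn_status \<sigma> j) (i, EXECUTED)" using status_legal[OF False] h by simp
    hence old: "txn_status \<sigma> j = (i, EXECUTING)" by (cases "txn_status \<sigma> j") (auto simp: legal_def)
    from status_other[OF False] obtain w where pu: "pcs u = PF0 j i w"
    proof (elim disjE exE conjE)
      fix i' assume e: "exk (pcs u) = Some (j, i')"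
      hence "i' = i" using ex_u old by fastforce
      show thesis using e st h that False \<open>i' = i\<close>
        by (cases "pcs u") (auto simp: upd_status_def upd_data_def Let_def split: SPL)
    qed (use old st h False in \<open>auto simp: upd_status_def split: if_splits\<close>)
    have "last_read_set \<sigma>' j = last_read_set \<sigma> j" using st pu by (auto simp: upd_status_def)
    thus ?thesis using J4[OF pu h(2)] by simp
  qed
  have c4: "\<forall>e\<in>set (last_read_set \<sigma>' j). Rok e" if h: "(pcs(u := p')) t = PF0 j i w" "iT < i" for t i w
  proof (cases "t = u")
    case True
    hence h': "p' = PF0 j i w" using h by simp
    show ?thesis
    proof (cases "pcs u")
      case (PRR k0 i0 rs0 w0)
      hence "k0 = j \<and> i0 = i \<and> last_read_set \<sigma>' j = rs0" using st h' by auto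
      thus ?thesis using J2[of u i rs0] PRR h(2) by simp
    qed (use st h' in \<open>auto simp: upd_status_def upd_data_def Let_def split: SPL\<close>)
  next
    case False
    hence pt: "pcs t = PF0 j i w" using h by simp
    have "last_read_set \<sigma>' j = last_read_set \<sigma> j"
    proof (rule ccontr)
      assume "last_read_set \<sigma>' j \<noteq> last_read_set \<sigma> j"
      then obtain i' rs w' where "pcs u = PRR j i' rs w'" using lrs by blast
      hence "exk (pcs u) = Some (j, i')" by simp
      moreover have "exk (pcs t) = Some (j, i)" using pt by simp
      ultimately show False using exu_u False by blast
    qed
    thus ?thesis using J4[OF pt h(2)] by simp
  qed
  have c5: "\<forall>e\<in>set RS. Rok e" if h: "(pcs(u := p')) t = PV1 j i RS" "txn_status \<sigma>' j = (i, EXECUTED)" "iT < i" for t i RS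
  proof (cases "t = u")
    case True
    hence h': "p' = PV1 j i RS" using h by simp
    show ?thesis
    proof (cases "pcs u")
      case (PV0 k0 i0)
      hence "k0 = j \<and> i0 = i \<and> RS = last_read_set \<sigma> j \<and> \<sigma>' = \<sigma>" using st h' by auto
      thus ?thesis using J3[of i] h by simp
    next
      case (PV1 k0 i0 RS0)
      hence e: "k0 = j \<and> i0 = i \<and> \<sigma>' = \<sigma> \<and> (\<exists>e. RS0 = e # RS)" using st h' by (cases RS0) (auto split: if_splits)
      thus ?thesis using J5[of u i RS0] PV1 h by auto
    qed (use st h' in \<open>auto simp: upd_status_def upd_data_def Let_def split: SPL\<close>)
  next
    case False
    hence pt: "pcs t = PV1 j i RS" using h by simp
    have "txn_status \<sigma> j = (i, EXECUTED)" using vph_status_same[of t j i] pt h by simp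
    thus ?thesis using J5[OF pt] h by simp
  qed
  have c6: "i \<le> iT" if h: "(pcs(u := p')) t = PVA j i" "txn_status \<sigma>' j = (i, EXECUTED)" for t i
  proof (cases "t = u")
    case True
    hence h': "p' = PVA j i" using h by simp
    show ?thesis
    proof (cases "pcs u")
      case (PV1 k0 i0 RS0)
      then obtain e RS1 where e: "RS0 = e # RS1" "k0 = j" "i0 = i" "\<sigma>' = \<sigma>" "\<not> read_ok \<sigma> j e"
        using st h' by (cases RS0) (auto split: if_splits)
      show ?thesis
      proof (rule ccontr)
        assume "\<not> i \<le> iT"
        hence "Rok e" using J5[of u i RS0] PV1 e h by simp
        thus False using H[rule_format, of e] e by simp
      qed
    qed (use st h' in \<open>auto simp: upd_status_def upd_data_def Let_def split: SPL\<close>)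
  next
    case False
    hence pt: "pcs t = PVA j i" using h by simp
    have "txn_status \<sigma> j = (i, EXECUTED)" using vph_status_same[of t j i] pt h by simp
    thus ?thesis using J6[OF pt] by simp
  qed
  have c7: "fst (txn_status \<sigma>' j) \<le> iT + 1 \<and> (\<forall>i. txn_status \<sigma>' j = (i, ABORTING) \<longrightarrow> i \<le> iT)"
  proof (cases "txn_status \<sigma>' j = txn_status \<sigma> j")
    case True thus ?thesis using J7 J8 by simp
  next
    case False
    have lg: "legal (txn_status \<sigma> j) (txn_status \<sigma>' j)" using status_legal[OF False] .
    show ?thesis
    proof (cases "snd (txn_status \<sigma> j) = ABORTING")
      case True
      hence "txn_status \<sigma>' j = (fst (txn_status \<sigma> j) + 1, READY_TO_EXECUTE)" using lg by (auto simp: legal_def)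
      moreover have "fst (txn_status \<sigma> j) \<le> iT" using J8[of "fst (txn_status \<sigma> j)"] True by (metis prod.collapse)
      ultimately show ?thesis by simp
    next
      case nA: False
      hence fs: "fst (txn_status \<sigma>' j) = fst (txn_status \<sigma> j)" using lg by (auto simp: legal_def)
      have "i \<le> iT" if ab: "txn_status \<sigma>' j = (i, ABORTING)" for i
      proof -
        have fi: "fst (txn_status \<sigma> j) = i" using fs ab by simp
        from status_other[OF False] show ?thesis
        proof (elim disjE exE conjE)
          fix i' assume e: "exk (pcs u) = Some (j, i')"
          have old: "txn_status \<sigma> j = (i', EXECUTING)" using ex_u e by blast
          hence ii: "i' = i" using fi by simp
          show ?thesis
          proof (cases "pcs u")
            case (PDep k0 i0 b) thus ?thesis using e ii J1[of u i' b] by simp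
          qed (use e st ab old in \<open>auto simp: upd_status_def upd_data_def Let_def split: SPL\<close>)
        next
          fix i' assume "pcs u = PVA j i'" "txn_status \<sigma> j = (i', EXECUTED)"
          thus ?thesis using J6[of u i'] fi by simp
        qed (use st ab False nA in \<open>auto simp: upd_status_def split: if_splits\<close>)
      qed
      thus ?thesis using fs J7 by simp
    qed
  qed
  show ?thesis unfolding Jst_def
    using c1 c2 c3 c4 c5 c6 c7 by blast
qed

end


lemma mv_read_below:
  assumes h: "\<And>p k. k < j \<Longrightarrow> data \<sigma> p k = data \<sigma>' p k"
  shows "mv_read \<sigma> p j = mv_read \<sigma>' p j"
proof -
  define K where "K = {k. k < j \<and> data \<sigma> p k \<noteq> None}"
  have K': "{k. k < j \<and> data \<sigma>' p k \<noteq> None} = K" unfolding K_def using h by auto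
  show ?thesis
  proof (cases "K = {}")
    case True
    have T1: "{k. k < j \<and> data \<sigma> p k \<noteq> None} = {}" using True unfolding K_def .
    have T2: "{k. k < j \<and> data \<sigma>' p k \<noteq> None} = {}" using True unfolding K' .
    show ?thesis using mv_read_none[OF T1] mv_read_none[OF T2] by simp
  next
    case False
    have ne1: "{k. k < j \<and> data \<sigma> p k \<noteq> None} \<noteq> {}" using False unfolding K_def .
    have ne2: "{k. k < j \<and> data \<sigma>' p k \<noteq> None} \<noteq> {}" using False unfolding K' .
    have e1: "mv_read \<sigma> p j = (case the (data \<sigma> p (Max K)) of ESTIMATE \<Rightarrow> READ_ERROR (Max K)
                 | EVal i v \<Rightarrow> OK (Max K, i) v)" "Max K \<in> K"
      using mv_read_eq[of j \<sigma> p, OF ne1] unfolding K_def by blast+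
    have e2: "mv_read \<sigma>' p j = (case the (data \<sigma>' p (Max K)) of ESTIMATE \<Rightarrow> READ_ERROR (Max K)
                 | EVal i v \<Rightarrow> OK (Max K, i) v)"
      using mv_read_eq[of j \<sigma>' p, OF ne2] unfolding K' by blast
    have "Max K < j" using e1(2) unfolding K_def by simp
    hence d: "data \<sigma> p (Max K) = data \<sigma>' p (Max K)" using h by blast
    show ?thesis by (simp only: e1(1) e2 d)
  qed
qed

lemma rsof_exk: "rsof p = Some (k, i, rs) \<Longrightarrow> exk p = Some (k, i)"
  by (cases p) auto


lemmas SPL3 = option.splits task.splits list.splits instr.splits rres.splits if_splits prod.splits

lemma exec_adv:
  assumes "tstep n vstep txn init \<sigma> p = (\<sigma>', p')" "exk p = Some (j, i)" "\<not> isex p" "\<not> done_marker \<sigma>"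
  shows "(exk p' = Some (j, i) \<and> (rank p', rank p) \<in> rlex) \<or> txn_status \<sigma>' j \<noteq> (i, EXECUTING)"
  using assms by (cases p) (auto simp: rlex_def upd_status_def upd_data_def Let_def split: SPL3)

lemma vab_adv:
  assumes "tstep n vstep txn init \<sigma> p = (\<sigma>', p')" "vab p = Some (j, i)"
  shows "(vab p' = Some (j, i) \<and> (rank p', rank p) \<in> rlex) \<or> snd (txn_status \<sigma>' j) = READY_TO_EXECUTE"
  using assms by (cases p) (auto simp: rlex_def upd_status_def upd_data_def Let_def split: SPL3)

lemma lst_adv:
  assumes "tstep n vstep txn init \<sigma> p = (\<sigma>', p')" "p = PF2 b i w L Ds" "j \<in> set L"
  shows "((\<exists>b i w L Ds. p' = PF2 b i w L Ds \<and> j \<in> set L) \<and> (rank p', rank p) \<in> rlex)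
     \<or> snd (txn_status \<sigma>' j) = READY_TO_EXECUTE"
  using assms by (cases L) (auto simp: rlex_def upd_status_def)

definition ewit :: "nat \<Rightarrow> ('l, 'v, 's) pc \<Rightarrow> bool" where
  "ewit k p \<longleftrightarrow> p = PTI k \<or> p = PVT k \<or> p = PVE k \<or> p = PDV k \<or> p = PDV2 k
           \<or> (\<exists>b i w L Ds. p = PF2 b i w L Ds \<and> Ds \<noteq> [] \<and> hd Ds \<le> k)
           \<or> (\<exists>b i w m'. p = PF3 b i w m' \<and> m' \<le> k)"

lemma ew_adv:
  assumes "tstep n vstep txn init \<sigma> p = (\<sigma>', p')" "ewit j p" "txn_status \<sigma>' j = txn_status \<sigma> j"
    "snd (txn_status \<sigma> j) = READY_TO_EXECUTE" "j < n"
  shows "execution_idx \<sigma>' \<le> j \<or> (ewit j p' \<and> (rank p', rank p) \<in> rlex)"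
  using assms(2)[unfolded ewit_def]
proof (elim disjE exE conjE)
  assume a: "p = PTI j"
  have "snd (txn_status \<sigma>' j) = EXECUTING" using assms(1,4,5) a by (auto simp: upd_status_def)
  thus ?thesis using assms(3,4) by simp
next
  assume a: "p = PVT j"
  have "snd (txn_status \<sigma>' j) = EXECUTING" using assms(1,4,5) a by (auto simp: upd_status_def)
  thus ?thesis using assms(3,4) by simp
next
  assume "p = PVE j" thus ?thesis using assms by (auto simp: ewit_def rlex_def split: if_splits)
next
  assume "p = PDV j" thus ?thesis using assms by (auto simp: ewit_def rlex_def)
next
  assume "p = PDV2 j" thus ?thesis using assms by (auto simp: ewit_def rlex_def)
next
  fix b i w L Ds assume pu: "p = PF2 b i w L Ds" "Ds \<noteq> []" "hd Ds \<le> j"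
  thus ?thesis using assms(1) by (cases L) (auto simp: ewit_def rlex_def upd_status_def)
next
  fix b i w m' assume "p = PF3 b i w m'" "m' \<le> j"
  thus ?thesis using assms(1) by auto
qed

lemma pti_entry:
  assumes "tstep n vstep txn init \<sigma> p = (\<sigma>', p')"
  shows "(p' = PTI k \<longrightarrow> p = PEB2 \<and> k = execution_idx \<sigma> \<and> execution_idx \<sigma>' = execution_idx \<sigma> + 1)
    \<and> (p' = PVT k \<longrightarrow> p = PVE k \<and> k < execution_idx \<sigma>)"
  using assms by (cases p) (auto simp: upd_status_def upd_data_def Let_def split: SPL3)

context brun
begin

definition stable :: "nat \<Rightarrow> nat \<Rightarrow> bool" where
  "stable j T \<longleftrightarrow> (\<forall>s\<ge>T. \<forall>k<j. stat s k = stat T k \<and> snd (stat T k) = EXECUTED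
      \<and> (\<forall>p. data (S s) p k = data (S T) p k))"

lemma stable_at:
  assumes "stable j T" "s \<ge> T" "k < j"
  shows "stat s k = stat T k \<and> snd (stat T k) = EXECUTED \<and> data (S s) p k = data (S T) p k"
  using assms unfolding stable_def by blast

lemma stable_mv:
  assumes "stable j T" "s \<ge> T"
  shows "mv_read (S s) l j = mv_read (S T) l j"
proof (rule mv_read_below)
  fix p k assume "k < j"
  thus "data (S s) p k = data (S T) p k" using stable_at[OF assms] by blast
qed

lemma stable_rok:
  assumes "stable j T" "s \<ge> T"
  shows "read_ok (S s) j e = read_ok (S T) j e"
  unfolding read_ok_def using stable_mv[OF assms] by simp

lemma stable_noerr:
  assumes st: "stable j T" and s: "s \<ge> T"
  shows "mv_read (S s) l j \<noteq> READ_ERROR b"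
proof
  assume "mv_read (S s) l j = READ_ERROR b"
  from mv_read_err[OF this] have b: "b < j" "data (S s) l b = Some ESTIMATE" by auto
  have "snd (stat s b) \<noteq> EXECUTED" using est_s[OF b(2)] .
  moreover have "stat s b = stat T b" "snd (stat T b) = EXECUTED" using stable_at[OF st s b(1)] by auto
  ultimately show False by simp
qed

lemma J_all:
  assumes st: "stable j T"
  shows "s \<ge> T \<Longrightarrow> Jst j (fst (stat T j)) (read_ok (S T) j) (S s) (snd (\<rho> s))"
proof (induction s rule: dec_induct)
  case base
  let ?iT = "fst (stat T j)"
  have exT: "exk (pc T t) = Some (j, i) \<Longrightarrow> i = ?iT" for t i using ex_s[of T t j i] by simp
  show ?case unfolding Jst_def
  proof (intro conjI allI impI)
    fix t i b assume "pc T t = PDep j i b" thus "i \<le> ?iT" using exT[of t i] by simp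
  next
    fix t i rs assume "rsof (pc T t) = Some (j, i, rs)" "?iT < i"
    thus "\<forall>e\<in>set rs. read_ok (S T) j e" using exT[of t i] rsof_exk by fastforce
  next
    fix i assume "stat T j = (i, EXECUTED)" "?iT < i" thus "\<forall>e\<in>set (last_read_set (S T) j). read_ok (S T) j e" by simp
  next
    fix t i w assume "pc T t = PF0 j i w" "?iT < i" thus "\<forall>e\<in>set (last_read_set (S T) j). read_ok (S T) j e"
      using exT[of t i] by simp
  next
    fix t i RS assume "pc T t = PV1 j i RS" "stat T j = (i, EXECUTED)" "?iT < i"
    thus "\<forall>e\<in>set RS. read_ok (S T) j e" by simp
  next
    fix t i assume "pc T t = PVA j i" "stat T j = (i, EXECUTED)" thus "i \<le> ?iT" by simp
  next
    show "fst (stat T j) \<le> ?iT + 1" by simp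
  next
    fix i assume "stat T j = (i, ABORTING)" thus "i \<le> ?iT" by simp
  qed
next
  case (step x)
  have H: "\<forall>e. read_ok (S x) j e = read_ok (S T) j e" using stable_rok[OF st step.hyps(1)] by blast
  have HE: "\<forall>l b. mv_read (S x) l j \<noteq> READ_ERROR b" using stable_noerr[OF st step.hyps(1)] by blast
  have "Jst j (fst (stat T j)) (read_ok (S T) j) (S (Suc x)) ((snd (\<rho> x))(sched x := pc (Suc x) (sched x)))"
    using stp.J_pres[OF stp_s[of x] step.IH H HE] .
  thus ?case using pc_suc[of x] by simp
qed

lemma stepA:
  assumes st: "stable j T"
  shows "\<exists>TA\<ge>T. \<forall>s\<ge>TA. stat s j = stat TA j"
proof -
  let ?iT = "fst (stat T j)"
  have bd: "code (stat s j) \<le> 4 * (?iT + 1) + 2" if "s \<ge> T" for s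
  proof -
    have J: "fst (stat s j) \<le> ?iT + 1" "\<And>i. stat s j = (i, ABORTING) \<Longrightarrow> i \<le> ?iT"
      using J_all[OF st that] unfolding Jst_def by blast+
    obtain a b where ab: "stat s j = (a, b)" by fastforce
    show ?thesis
    proof (cases "a = ?iT + 1")
      case True
      hence "b \<noteq> ABORTING" using J(2)[of a] ab by auto
      hence "rk b \<le> 2" by (cases b) auto
      thus ?thesis using ab True by (simp add: code_def)
    next
      case False
      hence "a \<le> ?iT" using J(1) ab by simp
      moreover have "rk b \<le> 3" by (cases b) auto
      ultimately show ?thesis using ab by (simp add: code_def)
    qed
  qed
  obtain TA where TA: "TA \<ge> T" "\<forall>s\<ge>TA. code (stat s j) = code (stat TA j)"
    using mono_bounded_const[of T "\<lambda>s. code (stat s j)", OF code_mono1 bd] by blast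
  thus ?thesis using code_inj by blast
qed


lemma tlt: "pc s t \<noteq> PLoop None \<Longrightarrow> t < m"
  using free_s by (meson not_le)

lemma b1_s: "\<not> done_marker (S s) \<Longrightarrow> k < n \<Longrightarrow> stat s k = (i, EXECUTING) \<Longrightarrow> \<exists>t. exk (pc s t) = Some (k, i)"
  using invB_s[of s] unfolding invB_def by blast
lemma b2_s: "\<not> done_marker (S s) \<Longrightarrow> k < n \<Longrightarrow> snd (stat s k) = ABORTING \<Longrightarrow> \<exists>x. owns (S s) (snd (\<rho> s)) k x"
  using invB_s[of s] unfolding invB_def by blast
lemma b3_s: "\<not> done_marker (S s) \<Longrightarrow> k \<in> txn_dependency (S s) b \<Longrightarrow> snd (stat s b) = EXECUTED \<Longrightarrow>
    \<exists>t i w. pc s t = PF1 b i w"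
  using invB_s[of s] unfolding invB_def by blast
lemma b4_s: "\<not> done_marker (S s) \<Longrightarrow> k < n \<Longrightarrow> snd (stat s k) = READY_TO_EXECUTE \<Longrightarrow>
    execution_idx (S s) \<le> k \<or> (\<exists>t. ewit k (pc s t))"
  using invB_s[of s] unfolding invB_def ewit_def by blast
lemma vab_s: "vab (pc s t) = Some (k, i) \<Longrightarrow> stat s k = (i, ABORTING) \<and> k < n"
  using invA_s[of s] unfolding invA_def i_vab_def by blast
lemma depset_s: "k \<in> txn_dependency (S s) b \<Longrightarrow> b < k \<and> k < n \<and> snd (stat s k) = ABORTING"
  using invA_s[of s] unfolding invA_def i_depset_def by blast
lemma depfin_s: "finite (txn_dependency (S s) b)"
  using invA_s[of s] unfolding invA_def i_depset_def by blast
lemma own_s: "owns (S s) (snd (\<rho> s)) k x \<Longrightarrow> owns (S s) (snd (\<rho> s)) k y \<Longrightarrow> x = y"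
  using invA_s[of s] unfolding invA_def i_own_def by blast

lemma H_stable:
  assumes "stable j T" "s \<ge> T"
  shows "\<forall>s'\<ge>s. \<forall>l b. mv_read (S s') l j = READ_ERROR b \<longrightarrow> (\<forall>s''\<ge>s'. snd (stat s'' b) \<noteq> EXECUTED)"
proof (intro allI impI)
  fix s' l b s'' assume "s \<le> s'" "mv_read (S s') l j = READ_ERROR b"
  moreover have "s' \<ge> T" using assms(2) calculation(1) by simp
  ultimately show "snd (stat s'' b) \<noteq> EXECUTED" using stable_noerr[OF assms(1)] by blast
qed

lemma exec_case:
  assumes nd: "\<forall>s. \<not> done_marker (S s)" and st: "stable j T" and TA: "TA \<ge> T" "\<forall>s\<ge>TA. stat s j = stat TA j"
    and ex: "stat TA j = (i, EXECUTING)" and jn: "j < n"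
  shows False
proof -
  obtain t where t: "exk (pc TA t) = Some (j, i)" using b1_s[of TA j i] nd ex jn by blast
  have tm: "t < m" using tlt[of TA t] t by (cases "pc TA t = PLoop None") auto
  have "\<exists>s\<ge>TA. stat s j \<noteq> (i, EXECUTING)"
  proof (rule wfp[where R="\<lambda>p. exk p = Some (j, i)" and f=rank and r=rlex, OF wf_rlex t])
    fix s assume ss: "s \<ge> TA" and ng: "\<not> stat s j \<noteq> (i, EXECUTING)" and r: "exk (pc s t) = Some (j, i)"
    have H: "\<forall>s'\<ge>s. \<forall>l b. mv_read (S s') l j = READ_ERROR b \<longrightarrow> (\<forall>s''\<ge>s'. snd (stat s'' b) \<noteq> EXECUTED)"
      using H_stable[OF st, of s] ss TA(1) by simp
    show "\<exists>s'>s. stat s' j \<noteq> (i, EXECUTING) \<or> exk (pc s' t) = Some (j, i) \<and> (rank (pc s' t), rank (pc s t)) \<in> rlex"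
    proof (cases "isex (pc s t)")
      case True
      show ?thesis
      proof (cases "pc s t")
        case (PExec k0 i0 st0 wb wl rs)
        hence e: "k0 = j" "i0 = i" using r by auto
        obtain s' where s': "s' > s" "(\<exists>W rs' prev. pc s' t = PRW j i W rs' prev W) \<or> (pc s' t = PDec \<and> stat s' j = (i, ABORTING))"
          using exec_prog[OF tm wf_s[OF PExec] PExec[unfolded e] H] by blast
        thus ?thesis using PExec by (auto simp: rlex_def)
      next
        case (PDep k0 i0 b)
        hence e: "k0 = j" "i0 = i" using r by auto
        obtain s' where s': "s' > s" "(\<exists>W rs' prev. pc s' t = PRW j i W rs' prev W) \<or> (pc s' t = PDec \<and> stat s' j = (i, ABORTING))"
          using dep_prog[OF tm PDep[unfolded e] H] by blast
        thus ?thesis using PDep by (auto simp: rlex_def)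
      qed (use True in auto)
    next
      case False
      have nj: "pc s t \<noteq> PJoined" using r by auto
      obtain s1 where s1: "s1 \<ge> s" "tstep n vstep txn init (S s1) (pc s t) = (S (Suc s1), pc (Suc s1) t)"
        using next_pc[OF tm refl nj] by blast
      have "(exk (pc (Suc s1) t) = Some (j, i) \<and> (rank (pc (Suc s1) t), rank (pc s t)) \<in> rlex) \<or> stat (Suc s1) j \<noteq> (i, EXECUTING)"
        using exec_adv[OF s1(2) r False] nd by blast
      moreover have "Suc s1 > s" using s1 by simp
      ultimately show ?thesis by blast
    qed
  qed
  then obtain s where "s \<ge> TA" "stat s j \<noteq> (i, EXECUTING)" by blast
  moreover have "stat s j = stat TA j" using TA(2) \<open>s \<ge> TA\<close> by blast
  ultimately show False using ex by simp
qed

lemma vab_prog: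
  assumes tm: "t < m" and r0: "vab (pc s0 t) = Some (j, i)"
  shows "\<exists>s\<ge>s0. snd (stat s j) = READY_TO_EXECUTE"
proof (rule wfp[where R="\<lambda>p. vab p = Some (j, i)" and f=rank and r=rlex, OF wf_rlex r0])
  fix s assume r: "vab (pc s t) = Some (j, i)"
  have nj: "pc s t \<noteq> PJoined" using r by auto
  obtain s1 where s1: "s1 \<ge> s" "tstep n vstep txn init (S s1) (pc s t) = (S (Suc s1), pc (Suc s1) t)"
    using next_pc[OF tm refl nj] by blast
  have "(vab (pc (Suc s1) t) = Some (j, i) \<and> (rank (pc (Suc s1) t), rank (pc s t)) \<in> rlex)
      \<or> snd (stat (Suc s1) j) = READY_TO_EXECUTE" using vab_adv[OF s1(2) r] .
  moreover have "Suc s1 > s" using s1 by simp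
  ultimately show "\<exists>s'>s. snd (stat s' j) = READY_TO_EXECUTE \<or> vab (pc s' t) = Some (j, i) \<and> (rank (pc s' t), rank (pc s t)) \<in> rlex"
    by blast
qed

lemma lst_prog:
  assumes tm: "t < m" and r0: "pc s0 t = PF2 b0 i0 w0 L0 Ds0" "j \<in> set L0"
  shows "\<exists>s\<ge>s0. snd (stat s j) = READY_TO_EXECUTE"
proof (rule wfp[where R="\<lambda>p. \<exists>b i w L Ds. p = PF2 b i w L Ds \<and> j \<in> set L" and f=rank and r=rlex, OF wf_rlex])
  show "\<exists>b i w L Ds. pc s0 t = PF2 b i w L Ds \<and> j \<in> set L" using r0 by blast
next
  fix s assume "\<exists>b i w L Ds. pc s t = PF2 b i w L Ds \<and> j \<in> set L"
  then obtain b i w L Ds where r: "pc s t = PF2 b i w L Ds" "j \<in> set L" by blast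
  have nj: "pc s t \<noteq> PJoined" using r by auto
  obtain s1 where s1: "s1 \<ge> s" "tstep n vstep txn init (S s1) (pc s t) = (S (Suc s1), pc (Suc s1) t)"
    using next_pc[OF tm refl nj] by blast
  have "((\<exists>b i w L Ds. pc (Suc s1) t = PF2 b i w L Ds \<and> j \<in> set L) \<and> (rank (pc (Suc s1) t), rank (pc s t)) \<in> rlex)
      \<or> snd (stat (Suc s1) j) = READY_TO_EXECUTE" using lst_adv[OF s1(2) r] .
  moreover have "Suc s1 > s" using s1 by simp
  ultimately show "\<exists>s'>s. snd (stat s' j) = READY_TO_EXECUTE \<or> (\<exists>b i w L Ds. pc s' t = PF2 b i w L Ds \<and> j \<in> set L) \<and> (rank (pc s' t), rank (pc s t)) \<in> rlex"
    by blast
qed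


lemma abort_case:
  assumes nd: "\<forall>s. \<not> done_marker (S s)" and st: "stable j T" and TA: "TA \<ge> T" "\<forall>s\<ge>TA. stat s j = stat TA j"
    and ab: "stat TA j = (i, ABORTING)" and jn: "j < n"
  shows False
proof -
  have cj: "stat s j = (i, ABORTING)" if "s \<ge> TA" for s
  proof -
    have "stat s j = stat TA j" using TA(2) that by blast
    thus ?thesis using ab by simp
  qed
  have noready: "\<not> (\<exists>s\<ge>s0. snd (stat s j) = READY_TO_EXECUTE)" if "s0 \<ge> TA" for s0
    using cj that by fastforce
  have own_nodep: False if s0: "s0 \<ge> TA" and o: "owns (S s0) (snd (\<rho> s0)) j x" and nd0: "\<forall>b. x \<noteq> TDep b" for s0 x
  proof (cases x)
    case (TDep b) thus ?thesis using nd0 by simp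
  next
    case (TL t)
    hence jl: "j \<in> lown (pc s0 t)" using o by simp
    then obtain b i' w L Ds where p: "pc s0 t = PF2 b i' w L Ds" "j \<in> set L" by (cases "pc s0 t") auto
    have "t < m" using tlt[of s0 t] p by auto
    thus False using lst_prog[OF _ p] noready[OF s0] by blast
  next
    case (TV t)
    then obtain i' where v: "vab (pc s0 t) = Some (j, i')" using o by auto
    have "t < m" using tlt[of s0 t] v by (cases "pc s0 t = PLoop None") auto
    thus False using vab_prog[OF _ v] noready[OF s0] by blast
  qed
  obtain x where x: "owns (S TA) (snd (\<rho> TA)) j x" using b2_s[of TA j] nd ab jn by auto
  show False
  proof (cases "\<exists>b. x = TDep b")
    case False thus ?thesis using own_nodep[OF order_refl x] by blast
  next
    case True
    then obtain b where xb: "x = TDep b" by blast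
    have jb: "j \<in> txn_dependency (S TA) b" using x xb by simp
    have blj: "b < j" using depset_s[OF jb] by simp
    have bex: "snd (stat TA b) = EXECUTED" using stable_at[OF st TA(1) blj] by simp
    obtain t i' w where pt: "pc TA t = PF1 b i' w" using b3_s[OF _ jb bex] nd by blast
    have tm: "t < m" using tlt[of TA t] pt by auto
    obtain s1 where s1: "s1 \<ge> TA" "pc s1 t = PF1 b i' w"
        "tstep n vstep txn init (S s1) (PF1 b i' w) = (S (Suc s1), pc (Suc s1) t)"
      using next_pc[OF tm pt] by blast
    have dempty: "txn_dependency (S (Suc s1)) b = {}" using s1(3)[symmetric] by (auto simp: Let_def)
    have no_other: "s \<ge> TA \<Longrightarrow> \<forall>b'. b' \<noteq> b \<longrightarrow> j \<notin> txn_dependency (S s) b'" for s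
    proof (induction s rule: dec_induct)
      case base
      show ?case
      proof (intro allI impI notI)
        fix b' assume "b' \<noteq> b" "j \<in> txn_dependency (S TA) b'"
        hence o2: "owns (S TA) (snd (\<rho> TA)) j (TDep b')" by simp
        have "x = TDep b'" using own_s[OF x o2] .
        thus False using xb \<open>b' \<noteq> b\<close> by simp
      qed
    next
      case (step y)
      show ?case
      proof (intro allI impI notI)
        fix b' assume bb: "b' \<noteq> b" and jin: "j \<in> txn_dependency (S (Suc y)) b'"
        have jn0: "j \<notin> txn_dependency (S y) b'" using step.IH bb by blast
        hence ch: "txn_dependency (S (Suc y)) b' \<noteq> txn_dependency (S y) b'" using jin by auto
        from stp.dep_change[OF stp_s[of y] ch] jin jn0
        obtain i0 where "pc y (sched y) = PDep j i0 b'" by auto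
        hence "stat y j = (i0, EXECUTING)" using ex_s[of y "sched y" j i0] by simp
        thus False using cj[of y] step.hyps(1) by simp
      qed
    qed
    have ab1: "snd (stat (Suc s1) j) = ABORTING" using cj[of "Suc s1"] s1(1) by simp
    obtain x' where x': "owns (S (Suc s1)) (snd (\<rho> (Suc s1))) j x'" using b2_s[OF _ jn ab1] nd by blast
    have "\<forall>b'. x' \<noteq> TDep b'"
    proof (intro allI notI)
      fix b' assume "x' = TDep b'"
      hence jin: "j \<in> txn_dependency (S (Suc s1)) b'" using x' by simp
      show False
      proof (cases "b' = b")
        case True thus False using jin dempty by simp
      next
        case False thus False using no_other[of "Suc s1"] s1(1) jin by simp
      qed
    qed
    thus False using own_nodep[of "Suc s1" x'] x' s1(1) by simp
  qed
qed

lemma ready_case: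
  assumes nd: "\<forall>s. \<not> done_marker (S s)" and st: "stable j T" and TA: "TA \<ge> T" "\<forall>s\<ge>TA. stat s j = stat TA j"
    and rd: "snd (stat TA j) = READY_TO_EXECUTE" and jn: "j < n" and m0: "0 < m"
  shows False
proof -
  have cj: "s \<ge> TA \<Longrightarrow> stat s j = stat TA j" for s using TA(2) by blast
  have nochg: False if "s \<ge> TA" "snd (stat s j) \<noteq> READY_TO_EXECUTE" for s using cj[OF that(1)] that rd by simp
  obtain T1 where T1: "T1 \<ge> TA" "execution_idx (S T1) \<le> j"
  proof -
    have "\<exists>s\<ge>TA. execution_idx (S s) \<le> j"
    proof (cases "execution_idx (S TA) \<le> j")
      case True thus ?thesis by blast
    next
      case False
      then obtain t where t: "ewit j (pc TA t)" using b4_s[OF _ jn rd] nd by blast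
      have tm: "t < m" using tlt[of TA t] t by (cases "pc TA t = PLoop None") (auto simp: ewit_def)
      show ?thesis
      proof (rule wfp[where R="ewit j" and f=rank and r=rlex, OF wf_rlex t])
        fix s assume ss: "s \<ge> TA" and r: "ewit j (pc s t)"
        have nj: "pc s t \<noteq> PJoined" using r by (auto simp: ewit_def)
        obtain s1 where s1: "s1 \<ge> s" "tstep n vstep txn init (S s1) (pc s t) = (S (Suc s1), pc (Suc s1) t)"
          using next_pc[OF tm refl nj] by blast
        have e1: "txn_status (S (Suc s1)) j = txn_status (S s1) j" using cj[of s1] cj[of "Suc s1"] s1(1) ss by simp
        have e2: "snd (txn_status (S s1) j) = READY_TO_EXECUTE" using cj[of s1] s1(1) ss rd by simp
        have "execution_idx (S (Suc s1)) \<le> j \<or> (ewit j (pc (Suc s1) t) \<and> (rank (pc (Suc s1) t), rank (pc s t)) \<in> rlex)"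
          using ew_adv[OF s1(2) r e1 e2 jn] .
        moreover have "Suc s1 > s" using s1 by simp
        ultimately show "\<exists>s'>s. execution_idx (S s') \<le> j \<or> ewit j (pc s' t) \<and> (rank (pc s' t), rank (pc s t)) \<in> rlex"
          by blast
      qed
    qed
    thus ?thesis using that by blast
  qed
  have exlj: "s \<ge> T1 \<Longrightarrow> execution_idx (S s) \<le> j" for s
  proof (induction s rule: dec_induct)
    case base thus ?case using T1 by simp
  next
    case (step x)
    show ?case
    proof (rule ccontr)
      assume c: "\<not> execution_idx (S (Suc x)) \<le> j"
      hence ch: "execution_idx (S (Suc x)) \<noteq> execution_idx (S x)" using step.IH by auto
      from stp.exec_change[OF stp_s[of x] ch] show False
      proof
        assume a: "pc x (sched x) = PEB2 \<and> execution_idx (S (Suc x)) = execution_idx (S x) + 1 \<and>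
            pc (Suc x) (sched x) = PTI (execution_idx (S x))"
        hence ej: "execution_idx (S x) = j" using c step.IH by simp
        hence p1: "pc (Suc x) (sched x) = PTI j" using a by simp
        obtain s2 where s2: "s2 \<ge> Suc x" "tstep n vstep txn init (S s2) (PTI j) = (S (Suc s2), pc (Suc s2) (sched x))"
          using next_pc[OF sched_lt p1] by blast
        have r2: "snd (stat s2 j) = READY_TO_EXECUTE" using cj[of s2] s2(1) step.hyps(1) T1(1) rd by simp
        have "snd (stat (Suc s2) j) = EXECUTING" using s2(2)[symmetric] r2 jn by (auto simp: upd_status_def)
        thus False using nochg[of "Suc s2"] s2(1) step.hyps(1) T1(1) by simp
      next
        assume "\<exists>b i w m'. pc x (sched x) = PF3 b i w m' \<and> execution_idx (S (Suc x)) = min (execution_idx (S x)) m'"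
        thus False using c step.IH by auto
      qed
    qed
  qed
  define P where "P s t \<longleftrightarrow> (\<exists>k\<ge>j. pc s t = PTI k \<or> pc s t = PVT k)" for s t
  have fr: "\<exists>st\<ge>T1. \<forall>s\<ge>st. \<not> P s t" if tm: "t < m" for t
  proof -
    obtain s0 where s0: "s0 \<ge> T1" "\<not> P s0 t"
    proof (cases "P T1 t")
      case False thus ?thesis using that by blast
    next
      case True
      then obtain k where k: "pc T1 t = PTI k \<or> pc T1 t = PVT k" unfolding P_def by blast
      have nj: "pc T1 t \<noteq> PJoined" using k by auto
      obtain s1 where s1: "s1 \<ge> T1" "pc s1 t = pc T1 t" "tstep n vstep txn init (S s1) (pc T1 t) = (S (Suc s1), pc (Suc s1) t)"
        using next_pc[OF tm refl nj] by blast
      have "\<not> P (Suc s1) t" using s1(3) k unfolding P_def by (auto split: if_splits)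
      thus ?thesis using that[of "Suc s1"] s1(1) by simp
    qed
    have "\<forall>s\<ge>s0. \<not> P s t"
    proof (rule no_reentry[where P="\<lambda>s. P s t", OF _ s0(2)])
      fix s assume ss: "s \<ge> s0" and np: "\<not> P s t"
      show "\<not> P (Suc s) t"
      proof (cases "sched s = t")
        case False thus ?thesis using other_eq[of t s] np unfolding P_def by simp
      next
        case True
        show ?thesis
        proof
          assume "P (Suc s) t"
          then obtain k where k: "k \<ge> j" "pc (Suc s) t = PTI k \<or> pc (Suc s) t = PVT k" unfolding P_def by blast
          have e: "execution_idx (S s) \<le> j" "execution_idx (S (Suc s)) \<le> j" using exlj[of s] exlj[of "Suc s"] ss s0(1) by auto
          note pe = pti_entry[OF step_eq[of s, unfolded True], of k]
          from k(2) show False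
          proof
            assume "pc (Suc s) t = PTI k" thus False using pe e k(1) by simp
          next
            assume "pc (Suc s) t = PVT k" thus False using pe e k(1) by simp
          qed
        qed
      qed
    qed
    thus ?thesis using s0(1) by blast
  qed
  obtain T2 where T2: "T2 \<ge> T1" "\<forall>s\<ge>T2. \<forall>t<m. \<not> P s t"
    using drain[of T1 P] fr by blast
  have noinc: "snd (stat (Suc s) k) = READY_TO_EXECUTE" if ss: "s \<ge> T2" and r: "snd (stat s k) = READY_TO_EXECUTE" for s k
  proof (rule ccontr)
    assume c: "snd (stat (Suc s) k) \<noteq> READY_TO_EXECUTE"
    hence ch: "stat (Suc s) k \<noteq> stat s k" using r by auto
    let ?u = "sched s"
    have pk: "pc s ?u = PTI k \<or> pc s ?u = PVT k"
      using stp.status_other[OF stp_s[of s] ch]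
    proof (elim disjE exE conjE)
      fix i assume "exk (pc s ?u) = Some (k, i)" thus ?thesis using ex_s r by fastforce
    next
      fix b i w L Ds assume "pc s ?u = PF2 b i w (k # L) Ds"
      thus ?thesis using stp.pf2_u[OF stp_s[of s], of ?u] r by fastforce
    next
      fix i assume "pc s ?u = PVA k i" "stat s k = (i, EXECUTED)" thus ?thesis using r by simp
    next
      fix i assume "pc s ?u = PS k i" thus ?thesis using vab_s[of s ?u k i] r by simp
    qed auto
    show False
    proof (cases "k \<ge> j")
      case True
      hence "P s ?u" using pk unfolding P_def by blast
      thus False using T2 ss sched_lt[of s] by blast
    next
      case False
      hence "snd (stat s k) = EXECUTED" using stable_at[OF st, of s k] ss T2(1) T1(1) TA(1) by simp
      thus False using r by simp
    qed
  qed
  obtain T3 where T3: "T3 \<ge> T2" "\<forall>s\<ge>T3. txn_status (S s) = txn_status (S T3)"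
    using phi_const[OF noinc] by blast
  show False using stall[OF nd m0 T3(2)] .
qed

lemma exec_done:
  assumes st: "stable j T" and TA: "TA \<ge> T" "\<forall>s\<ge>TA. stat s j = stat TA j"
    and ed: "snd (stat TA j) = EXECUTED"
  shows "stable (Suc j) TA"
proof -
  have dj: "s \<ge> TA \<Longrightarrow> \<forall>p. data (S s) p j = data (S TA) p j" for s
  proof (induction s rule: dec_induct)
    case (step x)
    show ?case
    proof
      fix p
      have "data (S (Suc x)) p j = data (S x) p j"
      proof (rule ccontr)
        assume c: "data (S (Suc x)) p j \<noteq> data (S x) p j"
        have sx: "stat x j = stat TA j" using TA(2) step.hyps(1) by blast
        from stp.data_change[OF stp_s[of x] c] show False
        proof
          assume "rck (pc x (sched x)) = Some j"
          then obtain i where "exk (pc x (sched x)) = Some (j, i)" by (cases "pc x (sched x)") auto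
          hence "stat x j = (i, EXECUTING)" using ex_s by blast
          thus False using sx ed by simp
        next
          assume "\<exists>i L. pc x (sched x) = PC1 j i (p # L)"
          then obtain i L where "pc x (sched x) = PC1 j i (p # L)" by blast
          hence "stat x j = (i, ABORTING)" using vab_s[of x "sched x" j i] by simp
          thus False using sx ed by simp
        qed
      qed
      thus "data (S (Suc x)) p j = data (S TA) p j" using step.IH by simp
    qed
  qed simp
  show ?thesis unfolding stable_def
  proof (intro allI impI)
    fix s k assume s: "s \<ge> TA" and k: "k < Suc j"
    show "stat s k = stat TA k \<and> snd (stat TA k) = EXECUTED \<and> (\<forall>p. data (S s) p k = data (S TA) p k)"
    proof (cases "k = j")
      case True
      have "stat s j = stat TA j" using TA(2) s by blast
      thus ?thesis using True ed dj[OF s] by simp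
    next
      case False
      hence kj: "k < j" using k by simp
      have sT: "s \<ge> T" using s TA(1) by simp
      have a: "stat s k = stat T k \<and> snd (stat T k) = EXECUTED" "stat TA k = stat T k"
        using stable_at[OF st sT kj] stable_at[OF st TA(1) kj] by auto
      have b: "data (S s) p k = data (S TA) p k" for p
        using stable_at[OF st sT kj, of p] stable_at[OF st TA(1) kj, of p] by auto
      show ?thesis using a b by simp
    qed
  qed
qed

lemma Q_step:
  assumes nd: "\<forall>s. \<not> done_marker (S s)" and m0: "0 < m" and st: "stable j T" and jn: "j < n"
  shows "\<exists>T'. stable (Suc j) T'"
proof -
  obtain TA where TA: "TA \<ge> T" "\<forall>s\<ge>TA. stat s j = stat TA j" using stepA[OF st] by blast
  obtain i c where ic: "stat TA j = (i, c)" by fastforce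
  show ?thesis
  proof (cases c)
    case READY_TO_EXECUTE thus ?thesis using ready_case[OF nd st TA _ jn m0] ic by simp
  next
    case EXECUTING thus ?thesis using exec_case[OF nd st TA _ jn] ic by simp
  next
    case ABORTING thus ?thesis using abort_case[OF nd st TA _ jn] ic by simp
  next
    case EXECUTED thus ?thesis using exec_done[OF st TA] ic by auto
  qed
qed

lemma part1:
  assumes m0: "0 < m"
  shows "\<exists>s. done_marker (S s)"
proof (rule ccontr)
  assume "\<not> (\<exists>s. done_marker (S s))"
  hence nd: "\<forall>s. \<not> done_marker (S s)" by blast
  have "j \<le> n \<Longrightarrow> \<exists>T. stable j T" for j
  proof (induction j)
    case 0 show ?case unfolding stable_def by blast
  next
    case (Suc j)
    then obtain T where "stable j T" by auto
    thus ?case using Q_step[OF nd m0] Suc.prems by simp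
  qed
  then obtain T where st: "stable n T" by blast
  have "\<forall>s\<ge>T. txn_status (S s) = txn_status (S T)"
  proof (intro allI impI ext)
    fix s k assume s: "s \<ge> T"
    show "stat s k = stat T k"
    proof (cases "k < n")
      case True thus ?thesis using stable_at[OF st s True] by simp
    next
      case False thus ?thesis using hi_s by simp
    qed
  qed
  thus False using stall[OF nd m0] by blast
qed

lemma all_join: "\<forall>t<m. \<exists>s. joined (\<rho> s) t"
proof (intro allI impI)
  fix t assume t: "t < m"
  obtain sd where "done_marker (S sd)" using part1 t by (metis gr_implies_not0 neq0_conv)
  thus "\<exists>s. joined (\<rho> s) t" using part2 t by blast
qed

end


theorem mainTheorem5:
  fixes n m :: nat
    and vstep :: "'s \<Rightarrow> ('l, 'v, 's) instr"
    and txn :: "nat \<Rightarrow> 's"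
    and init :: "'l \<Rightarrow> 'v"
    and \<rho> :: "nat \<Rightarrow> ('l, 'v, 's) gstate"
    and sched :: "nat \<Rightarrow> nat"
  assumes "is_run n vstep txn init m \<rho> sched"
    and "fair m \<rho> sched"
    and "\<forall>j < n. wait_free vstep (txn j)"
  shows "\<forall>t < m. \<exists>s. joined (\<rho> s) t"
proof -
  interpret brun n m vstep txn init \<rho> sched
    by (rule brun.intro) (rule assms)+
  show ?thesis by (rule all_join)
qed

end
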